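(* In iTML, suppose $T :: \sigma,\nu,M \Rightarrow \nu',S$ and $(\mu,R), (\mu',R') \sqsubseteq (\nu',S)$. Then $\mathsf{bwd}_T(\mu \sqcup \mu', R \sqcup R') = \mathsf{bwd}_T(\mu,R) \sqcup \mathsf{bwd}_T(\mu',R')$, where $\mathsf{bwd}_T : \mathrm{Prefix}(\nu',S) \to \mathrm{Prefix}(\sigma,\nu,M,T)$ sends $(\mu_1,R_1)$ to the unique $(\rho,\mu_0,N,U)$ with $\mu_1,R_1,T \searrow \rho,\mu_0,N,U$.
   Context: Partial syntax of iTML ($\Box$ a hole). Expressions $e ::= x \mid () \mid \mathsf{inl}\,e \mid \mathsf{inr}\,e \mid (e_1,e_2) \mid \mathsf{fst}\,e \mid \mathsf{snd}\,e \mid \mathsf{fun}\,f(x).M \mid \Box$. Computations $M ::= \mathsf{return}\,e \mid \mathsf{let}\,x = M_1\,\mathsf{in}\,M_2 \mid e_1\,e_2 \mid \mathsf{case}\,e\,\mathsf{of}\,\{\mathsf{inl}\,x \to M_1; \mathsf{inr}\,y \to M_2\} \mid \mathsf{raise}\,e \mid \mathsf{try}\,M_1\,\mathsf{with}\,x \to M_2 \mid \mathsf{ref}\,e \mid e_1 := e_2 \mid !e \mid \Box$. Values $v ::= () \mid \mathsf{inl}\,v \mid \mathsf{inr}\,v \mid (v_1,v_2) \mid \langle\rho,\mathsf{fun}\,f(x).M\rangle \mid \ell \mid \Box$. Environments $\rho$ / stores $\mu$: finitely supported maps from variables / locations to values, regarded as total with value $\Box$ off their domain; $\rho[x\mapsto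 v]$ extends, $\mu[\ell\mapsto v]$ updates; $\Box$ also denotes the everywhere-$\Box$ environment, $\Box[x\mapsto v]$ the environment that is $\Box$ except at $x$, and $[\ell\mapsto v]$ the store that is $\Box$ except at $\ell$. Outcomes $k ::= \mathsf{val}\mid\mathsf{exn}$; results $R ::= k\,v$. Traces $T ::= \mathsf{return}\,e \mid \mathsf{let_F}(T) \mid \mathsf{let_S}(T_1,x.T_2) \mid \mathsf{app}(e_1,e_2,f.x.T) \mid \mathsf{caseL}(e,x.T,y) \mid \mathsf{caseR}(e,x,y.T) \mid \mathsf{raise}\,e \mid \mathsf{try_S}(T) \mid \mathsf{try_F}(T_1,x.T_2) \mid \mathsf{ref}_\ell\,e \mid e_1:=_\ell e_2 \mid !_\ell\,e \mid \Box^k_{\mathcal{L}}$ ($\mathcal{L}$ a finite set of locations). $\mathsf{writes}(T)$: $\mathcal{L}$ for $\Box^k_{\mathcal{L}}$; $\emptyset$ for $\mathsf{return}\,e,\mathsf{raise}\,e,!_\ell e$; $\{\ell\}$ for $\mathsf{ref}_\ell e$, $e_1:=_\ell e_2$; union of both subtraces for $\mathsf{let_S}$, $\mathsf{try_F}$; that of the unique subtrace for $\mathsf{let_F},\mathsf{try_S},\mathsf{app},\mathsf{caseL},\mathsf{caseR}$. $\mathsf{outcome}(T)$: $k$ for $\Box^k_{\mathcal{L}}$; $\mathsf{val}$ for $\mathsf{return},\mathsf{try_S},\mathsf{ref}_\ell,:=_\ell,!_\ell$; $\mathsf{exn}$ for $\mathsf{let_F},\mathsf{raise}$; outcome of $T_2$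 for $\mathsf{let_S}(T_1,x.T_2),\mathsf{try_F}(T_1,x.T_2)$; outcome of the subtrace for $\mathsf{app},\mathsf{caseL},\mathsf{caseR}$. Order $\sqsubseteq$: on expressions, computations, values the least order with $\Box\sqsubseteq t$ closed under constructors componentwise; $k\,v\sqsubseteq k\,v'$ iff $v\sqsubseteq v'$ (same $k$); pointwise on environments and stores; on traces the least order containing $\Box^k_{\mathcal{L}}\sqsubseteq T$ whenever $\mathsf{writes}(T)=\mathcal{L}$ and $\mathsf{outcome}(T)=k$, closed under trace constructors componentwise; componentwise on tuples. $\mathrm{Prefix}(t)=\{t'\mid t'\sqsubseteq t\}$, a lattice with join $\sqcup$. Store erasure: $\mu\triangleleft\mathcal{L}$ is $\mu$ with every $\ell\in\mathcal{L}$ mapped to $\Box$. Evaluation (hole-free): $\rho,x\Rightarrow\rho(x)$; $()\Rightarrow()$; $\mathsf{fun}\,f(x).M\Rightarrow\langle\rho,\mathsf{fun}\,f(x).M\rangle$; $\mathsf{inl},\mathsf{inr}$, pairs componentwise; $\mathsf{fst},\mathsf{snd}$ project. $\mathsf{return}\,e::\rho,\mu,\mathsf{return}\,e\Rightarrow\mu,\mathsf{val}\,v$ if $\rho,e\Rightarrow v$; $\mathsf{app}(e_1,e_2,f.x.T)::\rho,\mu,e_1\,e_2\Rightarrow\mu',R$ if $\rho,e_1\Rightarrow v_1=\langle\rho',\mathsf{fun}\,f(x).M\rangle$, $\rho,e_2\Rightarrow v_2$, $T::\rho'[f\mapsto v_1][x\mapsto v_2],\mu,M\Rightarrow\mu',R$;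 $\mathsf{raise}\,e::\rho,\mu,\mathsf{raise}\,e\Rightarrow\mu,\mathsf{exn}\,v$ if $\rho,e\Rightarrow v$; $\mathsf{ref}_\ell\,e::\rho,\mu,\mathsf{ref}\,e\Rightarrow\mu[\ell\mapsto v],\mathsf{val}\,\ell$ if $\rho,e\Rightarrow v$, $\ell\notin\mathrm{dom}\,\mu$; $e_1:=_\ell e_2::\rho,\mu,e_1:=e_2\Rightarrow\mu[\ell\mapsto v],\mathsf{val}\,()$ if $\rho,e_1\Rightarrow\ell$, $\rho,e_2\Rightarrow v$; $!_\ell e::\rho,\mu,!e\Rightarrow\mu,\mathsf{val}\,\mu(\ell)$ if $\rho,e\Rightarrow\ell\in\mathrm{dom}\,\mu$; $\mathsf{let_S}(T_1,x.T_2)::\rho,\mu,\mathsf{let}\,x=M_1\,\mathsf{in}\,M_2\Rightarrow\mu'',R$ if $T_1::\rho,\mu,M_1\Rightarrow\mu',\mathsf{val}\,v$ and $T_2::\rho[x\mapsto v],\mu',M_2\Rightarrow\mu'',R$; $\mathsf{let_F}(T)::\ldots\Rightarrow\mu',\mathsf{exn}\,v$ if $T::\rho,\mu,M_1\Rightarrow\mu',\mathsf{exn}\,v$; $\mathsf{try_F}(T_1,x.T_2)::\rho,\mu,\mathsf{try}\,M_1\,\mathsf{with}\,x\to M_2\Rightarrow\mu'',R$ if $T_1::\rho,\mu,M_1\Rightarrow\mu',\mathsf{exn}\,v$, $T_2::\rho[x\mapsto v],\mu',M_2\Rightarrow\mu'',R$; $\mathsf{try_S}(T_1)::\ldots\Rightarrow\mu',\mathsf{val}\,v$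 if $T_1::\rho,\mu,M_1\Rightarrow\mu',\mathsf{val}\,v$; $\mathsf{caseL}(e,x.T,y)::\rho,\mu,\mathsf{case}\,e\,\mathsf{of}\{\mathsf{inl}\,x\to M_1;\mathsf{inr}\,y\to M_2\}\Rightarrow\mu',R$ if $\rho,e\Rightarrow\mathsf{inl}\,v$, $T::\rho[x\mapsto v],\mu,M_1\Rightarrow\mu',R$; symmetrically $\mathsf{caseR}(e,x,y.T)$. Expression backward slicing $v,e\searrow\rho,e'$ (first rule used whenever it applies): $\Box,e\searrow\Box,\Box$; for $v\neq\Box$, $v,x\searrow\Box[x\mapsto v],x$; $\langle\rho,\mathsf{fun}\,f(x).M\rangle,\mathsf{fun}\,f(x).M'\searrow\rho,\mathsf{fun}\,f(x).M$; $(),()\searrow\Box,()$; $\mathsf{inl}\,v,\mathsf{inl}\,e\searrow\rho,\mathsf{inl}\,e'$ and $\mathsf{inr}\,v,\mathsf{inr}\,e\searrow\rho,\mathsf{inr}\,e'$ if $v,e\searrow\rho,e'$; $(v_1,v_2),(e_1,e_2)\searrow\rho_1\sqcup\rho_2,(e_1',e_2')$ if $v_i,e_i\searrow\rho_i,e_i'$; $v,\mathsf{fst}\,e\searrow\rho,\mathsf{fst}\,e'$ if $(v,\Box),e\searrow\rho,e'$; $v,\mathsf{snd}\,e\searrow\rho,\mathsf{snd}\,e'$ if $(\Box,v),e\searrow\rho,e'$. Computation backward slicing $\mu,R,T\searrow\rho,\mu',M,U$ (B-Slice$\Box$ is applied whenever it applies): (B-Slice$\Box$) if $\mu\triangleleft\mathsf{writes}(T)=\mu$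 then $\mu,k\,\Box,T\searrow\Box,\mu,\Box,\Box^k_{\mathsf{writes}(T)}$. (B-Ret) $v,e\searrow\rho,e'$ ⟹ $\mu,\mathsf{val}\,v,\mathsf{return}\,e\searrow\rho,\mu,\mathsf{return}\,e',\mathsf{return}\,e'$. (B-Let) $\mu,R,T_2\searrow\rho_2[x\mapsto v],\mu',M_2,U_2$, $\mu',\mathsf{val}\,v,T_1\searrow\rho_1,\mu'',M_1,U_1$ ⟹ $\mu,R,\mathsf{let_S}(T_1,x.T_2)\searrow\rho_1\sqcup\rho_2,\mu'',\mathsf{let}\,x=M_1\,\mathsf{in}\,M_2,\mathsf{let_S}(U_1,x.U_2)$. (B-LetFail) $\mu,\mathsf{exn}\,v,T_1\searrow\rho,\mu',M_1,U_1$ ⟹ $\mu,\mathsf{exn}\,v,\mathsf{let_F}(T_1)\searrow\rho,\mu',\mathsf{let}\,x=M_1\,\mathsf{in}\,\Box,\mathsf{let_F}(U_1)$. (B-CaseL) $\mu,R,T\searrow\rho[x\mapsto v],\mu',M_1,U$, $\mathsf{inl}\,v,e\searrow\rho',e'$ ⟹ $\mu,R,\mathsf{caseL}(e,x.T,y)\searrow\rho\sqcup\rho',\mu',\mathsf{case}\,e'\,\mathsf{of}\{\mathsf{inl}\,x\to M_1;\mathsf{inr}\,y\to\Box\},\mathsf{caseL}(e',x.U,y)$. (B-CaseR) $\mu,R,T\searrow\rho[y\mapsto v],\mu',M_2,U$, $\mathsf{inr}\,v,e\searrow\rho',e'$ ⟹ $\mu,R,\mathsf{caseR}(e,x,y.T)\searrow\rho\sqcup\rho',\mu',\mathsf{case}\,e'\,\mathsf{of}\{\mathsf{inl}\,x\to\Box;\mathsf{inr}\,y\to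 M_2\},\mathsf{caseR}(e',x,y.U)$. (B-App) $\mu,R,T\searrow\rho[f\mapsto v_1][x\mapsto v_2],\mu',M,U$, $v_2,e_2\searrow\rho_2,e_2'$, $v_1\sqcup\langle\rho,\mathsf{fun}\,f(x).M\rangle,e_1\searrow\rho_1,e_1'$ ⟹ $\mu,R,\mathsf{app}(e_1,e_2,f.x.T)\searrow\rho_1\sqcup\rho_2,\mu',e_1'\,e_2',\mathsf{app}(e_1',e_2',f.x.U)$. (B-Raise) $v,e\searrow\rho,e'$ ⟹ $\mu,\mathsf{exn}\,v,\mathsf{raise}\,e\searrow\rho,\mu,\mathsf{raise}\,e',\mathsf{raise}\,e'$. (B-TryFail) $\mu,R,T_2\searrow\rho_1[x\mapsto v],\mu',M_2,U_2$, $\mu',\mathsf{exn}\,v,T_1\searrow\rho_2,\mu'',M_1,U_1$ ⟹ $\mu,R,\mathsf{try_F}(T_1,x.T_2)\searrow\rho_1\sqcup\rho_2,\mu'',\mathsf{try}\,M_1\,\mathsf{with}\,x\to M_2,\mathsf{try_F}(U_1,x.U_2)$. (B-Try) $\mu,\mathsf{val}\,v,T_1\searrow\rho,\mu',M_1,U_1$ ⟹ $\mu,\mathsf{val}\,v,\mathsf{try_S}(T_1)\searrow\rho,\mu',\mathsf{try}\,M_1\,\mathsf{with}\,x\to\Box,\mathsf{try_S}(U_1)$. (B-Ref) $\mu(\ell),e\searrow\rho,e'$ ⟹ $\mu,\mathsf{val}\,v,\mathsf{ref}_\ell\,e\searrow\rho,\mu[\ell\mapsto\Box],\mathsf{ref}\,e',\mathsf{ref}_\ell\,e'$.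 (B-Assign) $\mu(\ell),e_2\searrow\rho_2,e_2'$, $\ell,e_1\searrow\rho_1,e_1'$ ⟹ $\mu,\mathsf{val}\,v,e_1:=_\ell e_2\searrow\rho_1\sqcup\rho_2,\mu[\ell\mapsto\Box],e_1':=e_2',e_1':=_\ell e_2'$. (B-Deref) $\ell,e\searrow\rho,e'$ ⟹ $\mu,\mathsf{val}\,v,!_\ell e\searrow\rho,\mu\sqcup[\ell\mapsto v],!e',!_\ell e'$. For $T::\sigma,\nu,M\Rightarrow\nu',S$, backward slicing along $T$ is a total deterministic function from $\mathrm{Prefix}(\nu',S)$ into $\mathrm{Prefix}(\sigma,\nu,M,T)$, so $\mathsf{bwd}_T$ is well defined. *)

theory Defs
  imports Main
begin

section \<open>iTML syntax with holes\<close>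

type_synonym var = string
type_synonym loc = nat

datatype exp =
    EVar var | EUnit | EInl exp | EInr exp | EPair exp exp | EFst exp | ESnd exp
  | EFun var var comp   (* fun f(x). M *)
  | EHole
and comp =
    Return exp
  | Let var comp comp
  | App exp exp
  | Case exp var comp var comp   (* case e of {inl x -> M1; inr y -> M2} *)
  | Raise exp
  | Try comp var comp            (* try M1 with x -> M2 *)
  | Ref exp
  | Assign exp exp
  | Deref exp
  | CHole

datatype val =
    VUnit | VInl val | VInr val | VPair val val
  | VClo "var \<Rightarrow> val" var var comp   (* <rho, fun f(x). M> *)
  | VLoc loc
  | VHole

type_synonym env = "var \<Rightarrow> val"
type_synonym store = "loc \<Rightarrow> val"

datatype outc = OVal | OExn

datatype result = Res outc val

fun res_val :: "result \<Rightarrow> val" where "res_val (Res k v) = v"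

datatype trace =
    TReturn exp
  | TLetF trace
  | TLetS trace var trace                 (* let_S(T1, x.T2) *)
  | TApp exp exp var var trace            (* app(e1, e2, f.x.T) *)
  | TCaseL exp var trace var              (* caseL(e, x.T, y) *)
  | TCaseR exp var var trace              (* caseR(e, x, y.T) *)
  | TRaise exp
  | TTryS trace
  | TTryF trace var trace                 (* try_F(T1, x.T2) *)
  | TRef loc exp
  | TAssign exp loc exp
  | TDeref loc exp
  | THole outc "loc set"

definition hole_env :: env where "hole_env = (\<lambda>_. VHole)"
definition hole_store :: store where "hole_store = (\<lambda>_. VHole)"

definition sdom :: "store \<Rightarrow> loc set" where "sdom \<mu> = {l. \<mu> l \<noteq> VHole}"

primrec writes :: "trace \<Rightarrow> loc set" where
  "writes (TReturn e) = {}"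
| "writes (TLetF T) = writes T"
| "writes (TLetS T1 x T2) = writes T1 \<union> writes T2"
| "writes (TApp e1 e2 f x T) = writes T"
| "writes (TCaseL e x T y) = writes T"
| "writes (TCaseR e x y T) = writes T"
| "writes (TRaise e) = {}"
| "writes (TTryS T) = writes T"
| "writes (TTryF T1 x T2) = writes T1 \<union> writes T2"
| "writes (TRef l e) = {l}"
| "writes (TAssign e1 l e2) = {l}"
| "writes (TDeref l e) = {}"
| "writes (THole k L) = L"

primrec outcome :: "trace \<Rightarrow> outc" where
  "outcome (TReturn e) = OVal"
| "outcome (TLetF T) = OExn"
| "outcome (TLetS T1 x T2) = outcome T2"
| "outcome (TApp e1 e2 f x T) = outcome T"
| "outcome (TCaseL e x T y) = outcome T"
| "outcome (TCaseR e x y T) = outcome T"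
| "outcome (TRaise e) = OExn"
| "outcome (TTryS T) = OVal"
| "outcome (TTryF T1 x T2) = outcome T2"
| "outcome (TRef l e) = OVal"
| "outcome (TAssign e1 l e2) = OVal"
| "outcome (TDeref l e) = OVal"
| "outcome (THole k L) = k"

section \<open>Prefix order\<close>

inductive le_exp :: "exp \<Rightarrow> exp \<Rightarrow> bool"
  and le_comp :: "comp \<Rightarrow> comp \<Rightarrow> bool" where
  "le_exp EHole e"
| "le_exp (EVar x) (EVar x)"
| "le_exp EUnit EUnit"
| "le_exp a b \<Longrightarrow> le_exp (EInl a) (EInl b)"
| "le_exp a b \<Longrightarrow> le_exp (EInr a) (EInr b)"
| "le_exp a1 b1 \<Longrightarrow> le_exp a2 b2 \<Longrightarrow> le_exp (EPair a1 a2) (EPair b1 b2)"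
| "le_exp a b \<Longrightarrow> le_exp (EFst a) (EFst b)"
| "le_exp a b \<Longrightarrow> le_exp (ESnd a) (ESnd b)"
| "le_comp M M' \<Longrightarrow> le_exp (EFun f x M) (EFun f x M')"
| "le_comp CHole M"
| "le_exp a b \<Longrightarrow> le_comp (Return a) (Return b)"
| "le_comp M1 N1 \<Longrightarrow> le_comp M2 N2 \<Longrightarrow> le_comp (Let x M1 M2) (Let x N1 N2)"
| "le_exp a1 b1 \<Longrightarrow> le_exp a2 b2 \<Longrightarrow> le_comp (App a1 a2) (App b1 b2)"
| "le_exp a b \<Longrightarrow> le_comp M1 N1 \<Longrightarrow> le_comp M2 N2 \<Longrightarrow>
     le_comp (Case a x M1 y M2) (Case b x N1 y N2)"
| "le_exp a b \<Longrightarrow> le_comp (Raise a) (Raise b)"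
| "le_comp M1 N1 \<Longrightarrow> le_comp M2 N2 \<Longrightarrow> le_comp (Try M1 x M2) (Try N1 x N2)"
| "le_exp a b \<Longrightarrow> le_comp (Ref a) (Ref b)"
| "le_exp a1 b1 \<Longrightarrow> le_exp a2 b2 \<Longrightarrow> le_comp (Assign a1 a2) (Assign b1 b2)"
| "le_exp a b \<Longrightarrow> le_comp (Deref a) (Deref b)"

inductive le_val :: "val \<Rightarrow> val \<Rightarrow> bool" where
  "le_val VHole v"
| "le_val VUnit VUnit"
| "le_val a b \<Longrightarrow> le_val (VInl a) (VInl b)"
| "le_val a b \<Longrightarrow> le_val (VInr a) (VInr b)"
| "le_val a1 b1 \<Longrightarrow> le_val a2 b2 \<Longrightarrow> le_val (VPair a1 a2) (VPair b1 b2)"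
| "(\<forall>z. le_val (\<rho> z) (\<rho>' z)) \<Longrightarrow> le_comp M M' \<Longrightarrow> le_val (VClo \<rho> f x M) (VClo \<rho>' f x M')"
| "le_val (VLoc l) (VLoc l)"

definition le_env :: "env \<Rightarrow> env \<Rightarrow> bool" where
  "le_env \<rho> \<rho>' \<longleftrightarrow> (\<forall>z. le_val (\<rho> z) (\<rho>' z))"

definition le_store :: "store \<Rightarrow> store \<Rightarrow> bool" where
  "le_store \<mu> \<mu>' \<longleftrightarrow> (\<forall>l. le_val (\<mu> l) (\<mu>' l))"

fun le_res :: "result \<Rightarrow> result \<Rightarrow> bool" where
  "le_res (Res k v) (Res k' v') \<longleftrightarrow> k = k' \<and> le_val v v'"

inductive le_trace :: "trace \<Rightarrow> trace \<Rightarrow> bool" where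
  "writes T = L \<Longrightarrow> outcome T = k \<Longrightarrow> le_trace (THole k L) T"
| "le_exp a b \<Longrightarrow> le_trace (TReturn a) (TReturn b)"
| "le_trace T T' \<Longrightarrow> le_trace (TLetF T) (TLetF T')"
| "le_trace T1 T1' \<Longrightarrow> le_trace T2 T2' \<Longrightarrow> le_trace (TLetS T1 x T2) (TLetS T1' x T2')"
| "le_exp a1 b1 \<Longrightarrow> le_exp a2 b2 \<Longrightarrow> le_trace T T' \<Longrightarrow>
     le_trace (TApp a1 a2 f x T) (TApp b1 b2 f x T')"
| "le_exp a b \<Longrightarrow> le_trace T T' \<Longrightarrow> le_trace (TCaseL a x T y) (TCaseL b x T' y)"
| "le_exp a b \<Longrightarrow> le_trace T T' \<Longrightarrow> le_trace (TCaseR a x y T) (TCaseR b x y T')"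
| "le_exp a b \<Longrightarrow> le_trace (TRaise a) (TRaise b)"
| "le_trace T T' \<Longrightarrow> le_trace (TTryS T) (TTryS T')"
| "le_trace T1 T1' \<Longrightarrow> le_trace T2 T2' \<Longrightarrow> le_trace (TTryF T1 x T2) (TTryF T1' x T2')"
| "le_exp a b \<Longrightarrow> le_trace (TRef l a) (TRef l b)"
| "le_exp a1 b1 \<Longrightarrow> le_exp a2 b2 \<Longrightarrow> le_trace (TAssign a1 l a2) (TAssign b1 l b2)"
| "le_exp a b \<Longrightarrow> le_trace (TDeref l a) (TDeref l b)"

definition le_sr :: "store \<times> result \<Rightarrow> store \<times> result \<Rightarrow> bool" where
  "le_sr p q \<longleftrightarrow> le_store (fst p) (fst q) \<and> le_res (snd p) (snd q)"

definition le_cfg :: "env \<times> store \<times> comp \<times> trace \<Rightarrow> env \<times> store \<times> comp \<times> trace \<Rightarrow> bool" where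
  "le_cfg p q \<longleftrightarrow> (case p of (\<rho>, \<mu>, M, T) \<Rightarrow> case q of (\<rho>', \<mu>', M', T') \<Rightarrow>
     le_env \<rho> \<rho>' \<and> le_store \<mu> \<mu>' \<and> le_comp M M' \<and> le_trace T T')"

definition Prefix_sr :: "store \<times> result \<Rightarrow> (store \<times> result) set" where
  "Prefix_sr t = {t'. le_sr t' t}"

definition Prefix_cfg :: "env \<times> store \<times> comp \<times> trace \<Rightarrow> (env \<times> store \<times> comp \<times> trace) set" where
  "Prefix_cfg t = {t'. le_cfg t' t}"

section \<open>Joins (structural; they compute the lattice join on any Prefix(t))\<close>

primrec join_exp :: "exp \<Rightarrow> exp \<Rightarrow> exp"
  and join_comp :: "comp \<Rightarrow> comp \<Rightarrow> comp" where
  "join_exp (EVar x) w = EVar x"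
| "join_exp EUnit w = EUnit"
| "join_exp (EInl a) w = (case w of EInl b \<Rightarrow> EInl (join_exp a b) | _ \<Rightarrow> EInl a)"
| "join_exp (EInr a) w = (case w of EInr b \<Rightarrow> EInr (join_exp a b) | _ \<Rightarrow> EInr a)"
| "join_exp (EPair a1 a2) w = (case w of EPair b1 b2 \<Rightarrow> EPair (join_exp a1 b1) (join_exp a2 b2)
                                   | _ \<Rightarrow> EPair a1 a2)"
| "join_exp (EFst a) w = (case w of EFst b \<Rightarrow> EFst (join_exp a b) | _ \<Rightarrow> EFst a)"
| "join_exp (ESnd a) w = (case w of ESnd b \<Rightarrow> ESnd (join_exp a b) | _ \<Rightarrow> ESnd a)"
| "join_exp (EFun f x M) w = (case w of EFun _ _ N \<Rightarrow> EFun f x (join_comp M N) | _ \<Rightarrow> EFun f x M)"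
| "join_exp EHole w = w"
| "join_comp (Return a) w = (case w of Return b \<Rightarrow> Return (join_exp a b) | _ \<Rightarrow> Return a)"
| "join_comp (Let x M1 M2) w = (case w of Let _ N1 N2 \<Rightarrow> Let x (join_comp M1 N1) (join_comp M2 N2)
                                   | _ \<Rightarrow> Let x M1 M2)"
| "join_comp (App a1 a2) w = (case w of App b1 b2 \<Rightarrow> App (join_exp a1 b1) (join_exp a2 b2)
                                 | _ \<Rightarrow> App a1 a2)"
| "join_comp (Case a x M1 y M2) w = (case w of Case b _ N1 _ N2 \<Rightarrow>
       Case (join_exp a b) x (join_comp M1 N1) y (join_comp M2 N2) | _ \<Rightarrow> Case a x M1 y M2)"
| "join_comp (Raise a) w = (case w of Raise b \<Rightarrow> Raise (join_exp a b) | _ \<Rightarrow> Raise a)"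
| "join_comp (Try M1 x M2) w = (case w of Try N1 _ N2 \<Rightarrow> Try (join_comp M1 N1) x (join_comp M2 N2)
                                   | _ \<Rightarrow> Try M1 x M2)"
| "join_comp (Ref a) w = (case w of Ref b \<Rightarrow> Ref (join_exp a b) | _ \<Rightarrow> Ref a)"
| "join_comp (Assign a1 a2) w = (case w of Assign b1 b2 \<Rightarrow> Assign (join_exp a1 b1) (join_exp a2 b2)
                                    | _ \<Rightarrow> Assign a1 a2)"
| "join_comp (Deref a) w = (case w of Deref b \<Rightarrow> Deref (join_exp a b) | _ \<Rightarrow> Deref a)"
| "join_comp CHole w = w"

primrec join_val :: "val \<Rightarrow> val \<Rightarrow> val" where
  "join_val VUnit w = VUnit"
| "join_val (VInl a) w = (case w of VInl b \<Rightarrow> VInl (join_val a b) | _ \<Rightarrow> VInl a)"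
| "join_val (VInr a) w = (case w of VInr b \<Rightarrow> VInr (join_val a b) | _ \<Rightarrow> VInr a)"
| "join_val (VPair a1 a2) w = (case w of VPair b1 b2 \<Rightarrow> VPair (join_val a1 b1) (join_val a2 b2)
                                   | _ \<Rightarrow> VPair a1 a2)"
| "join_val (VClo \<rho> f x M) w = (case w of VClo \<rho>' _ _ N \<Rightarrow>
       VClo (\<lambda>z. join_val (\<rho> z) (\<rho>' z)) f x (join_comp M N) | _ \<Rightarrow> VClo \<rho> f x M)"
| "join_val (VLoc l) w = VLoc l"
| "join_val VHole w = w"

definition join_env :: "env \<Rightarrow> env \<Rightarrow> env" where
  "join_env \<rho> \<rho>' = (\<lambda>z. join_val (\<rho> z) (\<rho>' z))"

definition join_store :: "store \<Rightarrow> store \<Rightarrow> store" where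
  "join_store \<mu> \<mu>' = (\<lambda>l. join_val (\<mu> l) (\<mu>' l))"

fun join_res :: "result \<Rightarrow> result \<Rightarrow> result" where
  "join_res (Res k v) (Res k' v') = Res k (join_val v v')"

primrec join_trace :: "trace \<Rightarrow> trace \<Rightarrow> trace" where
  "join_trace (TReturn a) U = (case U of TReturn b \<Rightarrow> TReturn (join_exp a b) | _ \<Rightarrow> TReturn a)"
| "join_trace (TLetF T) U = (case U of TLetF T' \<Rightarrow> TLetF (join_trace T T') | _ \<Rightarrow> TLetF T)"
| "join_trace (TLetS T1 x T2) U = (case U of TLetS T1' _ T2' \<Rightarrow>
       TLetS (join_trace T1 T1') x (join_trace T2 T2') | _ \<Rightarrow> TLetS T1 x T2)"
| "join_trace (TApp a1 a2 f x T) U = (case U of TApp b1 b2 _ _ T' \<Rightarrow>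
       TApp (join_exp a1 b1) (join_exp a2 b2) f x (join_trace T T') | _ \<Rightarrow> TApp a1 a2 f x T)"
| "join_trace (TCaseL a x T y) U = (case U of TCaseL b _ T' _ \<Rightarrow>
       TCaseL (join_exp a b) x (join_trace T T') y | _ \<Rightarrow> TCaseL a x T y)"
| "join_trace (TCaseR a x y T) U = (case U of TCaseR b _ _ T' \<Rightarrow>
       TCaseR (join_exp a b) x y (join_trace T T') | _ \<Rightarrow> TCaseR a x y T)"
| "join_trace (TRaise a) U = (case U of TRaise b \<Rightarrow> TRaise (join_exp a b) | _ \<Rightarrow> TRaise a)"
| "join_trace (TTryS T) U = (case U of TTryS T' \<Rightarrow> TTryS (join_trace T T') | _ \<Rightarrow> TTryS T)"
| "join_trace (TTryF T1 x T2) U = (case U of TTryF T1' _ T2' \<Rightarrow>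
       TTryF (join_trace T1 T1') x (join_trace T2 T2') | _ \<Rightarrow> TTryF T1 x T2)"
| "join_trace (TRef l a) U = (case U of TRef _ b \<Rightarrow> TRef l (join_exp a b) | _ \<Rightarrow> TRef l a)"
| "join_trace (TAssign a1 l a2) U = (case U of TAssign b1 _ b2 \<Rightarrow>
       TAssign (join_exp a1 b1) l (join_exp a2 b2) | _ \<Rightarrow> TAssign a1 l a2)"
| "join_trace (TDeref l a) U = (case U of TDeref _ b \<Rightarrow> TDeref l (join_exp a b) | _ \<Rightarrow> TDeref l a)"
| "join_trace (THole k L) U = U"

definition join_sr :: "store \<times> result \<Rightarrow> store \<times> result \<Rightarrow> store \<times> result" where
  "join_sr p q = (join_store (fst p) (fst q), join_res (snd p) (snd q))"

definition join_cfg :: "env \<times> store \<times> comp \<times> trace \<Rightarrow> env \<times> store \<times> comp \<times> trace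
                        \<Rightarrow> env \<times> store \<times> comp \<times> trace" where
  "join_cfg p q = (case p of (\<rho>, \<mu>, M, T) \<Rightarrow> case q of (\<rho>', \<mu>', M', T') \<Rightarrow>
     (join_env \<rho> \<rho>', join_store \<mu> \<mu>', join_comp M M', join_trace T T'))"

section \<open>Evaluation (hole-free)\<close>

inductive eval_exp :: "env \<Rightarrow> exp \<Rightarrow> val \<Rightarrow> bool" where
  "eval_exp \<rho> (EVar x) (\<rho> x)"
| "eval_exp \<rho> EUnit VUnit"
| "eval_exp \<rho> (EFun f x M) (VClo \<rho> f x M)"
| "eval_exp \<rho> e v \<Longrightarrow> eval_exp \<rho> (EInl e) (VInl v)"
| "eval_exp \<rho> e v \<Longrightarrow> eval_exp \<rho> (EInr e) (VInr v)"
| "eval_exp \<rho> e1 v1 \<Longrightarrow> eval_exp \<rho> e2 v2 \<Longrightarrow> eval_exp \<rho> (EPair e1 e2) (VPair v1 v2)"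
| "eval_exp \<rho> e (VPair v1 v2) \<Longrightarrow> eval_exp \<rho> (EFst e) v1"
| "eval_exp \<rho> e (VPair v1 v2) \<Longrightarrow> eval_exp \<rho> (ESnd e) v2"

text \<open>\<open>eval T \<rho> \<mu> M \<mu>' R\<close> means \<open>T :: \<rho>, \<mu>, M \<Rightarrow> \<mu>', R\<close>.\<close>

inductive eval :: "trace \<Rightarrow> env \<Rightarrow> store \<Rightarrow> comp \<Rightarrow> store \<Rightarrow> result \<Rightarrow> bool" where
  ret: "eval_exp \<rho> e v \<Longrightarrow> eval (TReturn e) \<rho> \<mu> (Return e) \<mu> (Res OVal v)"
| app: "eval_exp \<rho> e1 v1 \<Longrightarrow> v1 = VClo \<rho>' f x M \<Longrightarrow> eval_exp \<rho> e2 v2 \<Longrightarrow>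
     eval T ((\<rho>'(f := v1))(x := v2)) \<mu> M \<mu>' R \<Longrightarrow>
     eval (TApp e1 e2 f x T) \<rho> \<mu> (App e1 e2) \<mu>' R"
| raise: "eval_exp \<rho> e v \<Longrightarrow> eval (TRaise e) \<rho> \<mu> (Raise e) \<mu> (Res OExn v)"
| ref: "eval_exp \<rho> e v \<Longrightarrow> l \<notin> sdom \<mu> \<Longrightarrow>
     eval (TRef l e) \<rho> \<mu> (Ref e) (\<mu>(l := v)) (Res OVal (VLoc l))"
| assign: "eval_exp \<rho> e1 (VLoc l) \<Longrightarrow> eval_exp \<rho> e2 v \<Longrightarrow>
     eval (TAssign e1 l e2) \<rho> \<mu> (Assign e1 e2) (\<mu>(l := v)) (Res OVal VUnit)"
| deref: "eval_exp \<rho> e (VLoc l) \<Longrightarrow> l \<in> sdom \<mu> \<Longrightarrow>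
     eval (TDeref l e) \<rho> \<mu> (Deref e) \<mu> (Res OVal (\<mu> l))"
| letS: "eval T1 \<rho> \<mu> M1 \<mu>' (Res OVal v) \<Longrightarrow> eval T2 (\<rho>(x := v)) \<mu>' M2 \<mu>'' R \<Longrightarrow>
     eval (TLetS T1 x T2) \<rho> \<mu> (Let x M1 M2) \<mu>'' R"
| letF: "eval T \<rho> \<mu> M1 \<mu>' (Res OExn v) \<Longrightarrow>
     eval (TLetF T) \<rho> \<mu> (Let x M1 M2) \<mu>' (Res OExn v)"
| tryF: "eval T1 \<rho> \<mu> M1 \<mu>' (Res OExn v) \<Longrightarrow> eval T2 (\<rho>(x := v)) \<mu>' M2 \<mu>'' R \<Longrightarrow>
     eval (TTryF T1 x T2) \<rho> \<mu> (Try M1 x M2) \<mu>'' R"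
| tryS: "eval T1 \<rho> \<mu> M1 \<mu>' (Res OVal v) \<Longrightarrow>
     eval (TTryS T1) \<rho> \<mu> (Try M1 x M2) \<mu>' (Res OVal v)"
| caseL: "eval_exp \<rho> e (VInl v) \<Longrightarrow> eval T (\<rho>(x := v)) \<mu> M1 \<mu>' R \<Longrightarrow>
     eval (TCaseL e x T y) \<rho> \<mu> (Case e x M1 y M2) \<mu>' R"
| caseR: "eval_exp \<rho> e (VInr v) \<Longrightarrow> eval T (\<rho>(y := v)) \<mu> M2 \<mu>' R \<Longrightarrow>
     eval (TCaseR e x y T) \<rho> \<mu> (Case e x M1 y M2) \<mu>' R"

section \<open>Backward slicing\<close>

definition erase :: "store \<Rightarrow> loc set \<Rightarrow> store" where
  "erase \<mu> L = (\<lambda>l. if l \<in> L then VHole else \<mu> l)"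

text \<open>Expression slicing \<open>v, e \<searrow> \<rho>, e'\<close>; the hole rule has priority.\<close>

inductive eslice :: "val \<Rightarrow> exp \<Rightarrow> env \<Rightarrow> exp \<Rightarrow> bool" where
  "eslice VHole e hole_env EHole"
| "v \<noteq> VHole \<Longrightarrow> eslice v (EVar x) (hole_env(x := v)) (EVar x)"
| "eslice (VClo \<rho> f x M) (EFun f x M') \<rho> (EFun f x M)"
| "eslice VUnit EUnit hole_env EUnit"
| "eslice v e \<rho> e' \<Longrightarrow> eslice (VInl v) (EInl e) \<rho> (EInl e')"
| "eslice v e \<rho> e' \<Longrightarrow> eslice (VInr v) (EInr e) \<rho> (EInr e')"
| "eslice v1 e1 \<rho>1 e1' \<Longrightarrow> eslice v2 e2 \<rho>2 e2' \<Longrightarrow>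
     eslice (VPair v1 v2) (EPair e1 e2) (join_env \<rho>1 \<rho>2) (EPair e1' e2')"
| "v \<noteq> VHole \<Longrightarrow> eslice (VPair v VHole) e \<rho> e' \<Longrightarrow> eslice v (EFst e) \<rho> (EFst e')"
| "v \<noteq> VHole \<Longrightarrow> eslice (VPair VHole v) e \<rho> e' \<Longrightarrow> eslice v (ESnd e) \<rho> (ESnd e')"

text \<open>Side condition of B-Slice-Box; all other rules apply only when it does not.\<close>

definition box_applies :: "store \<Rightarrow> result \<Rightarrow> trace \<Rightarrow> bool" where
  "box_applies \<mu> R T \<longleftrightarrow> res_val R = VHole \<and> erase \<mu> (writes T) = \<mu>"

text \<open>\<open>bslice \<mu> R T \<rho> \<mu>' M U\<close> means \<open>\<mu>, R, T \<searrow> \<rho>, \<mu>', M, U\<close>.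
  An output environment written \<open>\<rho>[x \<mapsto> v]\<close> in the paper is decomposed as
  \<open>\<rho> = \<rho>0(x := \<box>)\<close>, \<open>v = \<rho>0 x\<close>.\<close>

inductive bslice :: "store \<Rightarrow> result \<Rightarrow> trace \<Rightarrow> env \<Rightarrow> store \<Rightarrow> comp \<Rightarrow> trace \<Rightarrow> bool" where
  slice_box: "erase \<mu> (writes T) = \<mu> \<Longrightarrow>
     bslice \<mu> (Res k VHole) T hole_env \<mu> CHole (THole k (writes T))"
| ret: "\<not> box_applies \<mu> (Res OVal v) (TReturn e) \<Longrightarrow> eslice v e \<rho> e' \<Longrightarrow>
     bslice \<mu> (Res OVal v) (TReturn e) \<rho> \<mu> (Return e') (TReturn e')"
| lett: "\<not> box_applies \<mu> R (TLetS T1 x T2) \<Longrightarrow>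
     bslice \<mu> R T2 \<rho>0 \<mu>' M2 U2 \<Longrightarrow>
     bslice \<mu>' (Res OVal (\<rho>0 x)) T1 \<rho>1 \<mu>'' M1 U1 \<Longrightarrow>
     bslice \<mu> R (TLetS T1 x T2) (join_env \<rho>1 (\<rho>0(x := VHole))) \<mu>'' (Let x M1 M2) (TLetS U1 x U2)"
| letfail: "\<not> box_applies \<mu> (Res OExn v) (TLetF T1) \<Longrightarrow>
     bslice \<mu> (Res OExn v) T1 \<rho> \<mu>' M1 U1 \<Longrightarrow>
     bslice \<mu> (Res OExn v) (TLetF T1) \<rho> \<mu>' (Let x M1 CHole) (TLetF U1)"
| caseL: "\<not> box_applies \<mu> R (TCaseL e x T y) \<Longrightarrow>
     bslice \<mu> R T \<rho>0 \<mu>' M1 U \<Longrightarrow> eslice (VInl (\<rho>0 x)) e \<rho>' e' \<Longrightarrow>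
     bslice \<mu> R (TCaseL e x T y) (join_env (\<rho>0(x := VHole)) \<rho>') \<mu>'
       (Case e' x M1 y CHole) (TCaseL e' x U y)"
| caseR: "\<not> box_applies \<mu> R (TCaseR e x y T) \<Longrightarrow>
     bslice \<mu> R T \<rho>0 \<mu>' M2 U \<Longrightarrow> eslice (VInr (\<rho>0 y)) e \<rho>' e' \<Longrightarrow>
     bslice \<mu> R (TCaseR e x y T) (join_env (\<rho>0(y := VHole)) \<rho>') \<mu>'
       (Case e' x CHole y M2) (TCaseR e' x y U)"
| app: "\<not> box_applies \<mu> R (TApp e1 e2 f x T) \<Longrightarrow>
     bslice \<mu> R T \<rho>0 \<mu>' M U \<Longrightarrow>
     eslice (\<rho>0 x) e2 \<rho>2 e2' \<Longrightarrow>
     eslice (join_val ((\<rho>0(x := VHole)) f) (VClo ((\<rho>0(x := VHole))(f := VHole)) f x M)) e1 \<rho>1 e1' \<Longrightarrow>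
     bslice \<mu> R (TApp e1 e2 f x T) (join_env \<rho>1 \<rho>2) \<mu>' (App e1' e2') (TApp e1' e2' f x U)"
| raise: "\<not> box_applies \<mu> (Res OExn v) (TRaise e) \<Longrightarrow> eslice v e \<rho> e' \<Longrightarrow>
     bslice \<mu> (Res OExn v) (TRaise e) \<rho> \<mu> (Raise e') (TRaise e')"
| tryfail: "\<not> box_applies \<mu> R (TTryF T1 x T2) \<Longrightarrow>
     bslice \<mu> R T2 \<rho>0 \<mu>' M2 U2 \<Longrightarrow>
     bslice \<mu>' (Res OExn (\<rho>0 x)) T1 \<rho>2 \<mu>'' M1 U1 \<Longrightarrow>
     bslice \<mu> R (TTryF T1 x T2) (join_env (\<rho>0(x := VHole)) \<rho>2) \<mu>'' (Try M1 x M2) (TTryF U1 x U2)"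
| trysucc: "\<not> box_applies \<mu> (Res OVal v) (TTryS T1) \<Longrightarrow>
     bslice \<mu> (Res OVal v) T1 \<rho> \<mu>' M1 U1 \<Longrightarrow>
     bslice \<mu> (Res OVal v) (TTryS T1) \<rho> \<mu>' (Try M1 x CHole) (TTryS U1)"
| ref: "\<not> box_applies \<mu> (Res OVal v) (TRef l e) \<Longrightarrow> eslice (\<mu> l) e \<rho> e' \<Longrightarrow>
     bslice \<mu> (Res OVal v) (TRef l e) \<rho> (\<mu>(l := VHole)) (Ref e') (TRef l e')"
| assign: "\<not> box_applies \<mu> (Res OVal v) (TAssign e1 l e2) \<Longrightarrow>
     eslice (\<mu> l) e2 \<rho>2 e2' \<Longrightarrow> eslice (VLoc l) e1 \<rho>1 e1' \<Longrightarrow>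
     bslice \<mu> (Res OVal v) (TAssign e1 l e2) (join_env \<rho>1 \<rho>2) (\<mu>(l := VHole))
       (Assign e1' e2') (TAssign e1' l e2')"
| deref: "\<not> box_applies \<mu> (Res OVal v) (TDeref l e) \<Longrightarrow> eslice (VLoc l) e \<rho> e' \<Longrightarrow>
     bslice \<mu> (Res OVal v) (TDeref l e) \<rho> (join_store \<mu> (hole_store(l := v))) (Deref e') (TDeref l e')"

definition bwd :: "env \<Rightarrow> store \<Rightarrow> comp \<Rightarrow> trace \<Rightarrow> store \<times> result \<Rightarrow> env \<times> store \<times> comp \<times> trace" where
  "bwd \<sigma> \<nu> M T p = (THE q. q \<in> Prefix_cfg (\<sigma>, \<nu>, M, T) \<and>
     (case p of (\<mu>1, R1) \<Rightarrow> case q of (\<rho>, \<mu>0, N, U) \<Rightarrow> bslice \<mu>1 R1 T \<rho> \<mu>0 N U))"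

end

theory Submission
  imports Defs
begin


inductive_simps le_exp_simps[simp]:
  "le_exp a (EVar x)" "le_exp a EUnit" "le_exp a (EInl b)" "le_exp a (EInr b)"
  "le_exp a (EPair b1 b2)" "le_exp a (EFst b)" "le_exp a (ESnd b)" "le_exp a (EFun f x M)" "le_exp a EHole"
inductive_simps le_comp_simps[simp]:
  "le_comp a (Return b)" "le_comp a (Let x M1 M2)" "le_comp a (App b1 b2)" "le_comp a (Case b x M1 y M2)"
  "le_comp a (Raise b)" "le_comp a (Try M1 x M2)" "le_comp a (Ref b)" "le_comp a (Assign b1 b2)"
  "le_comp a (Deref b)" "le_comp a CHole"
inductive_simps le_val_simps[simp]:
  "le_val a VUnit" "le_val a (VInl b)" "le_val a (VInr b)" "le_val a (VPair b1 b2)"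
  "le_val a (VClo r f x M)" "le_val a (VLoc l)" "le_val a VHole"

lemma join_exp_hole[simp]: "join_exp a EHole = a" by (cases a) auto
lemma join_comp_hole[simp]: "join_comp a CHole = a" by (cases a) auto
lemma join_val_hole[simp]: "join_val a VHole = a" by (cases a) auto

lemma comm_ec:
  "le_exp a c \<Longrightarrow> le_exp b c \<Longrightarrow> join_exp a b = join_exp b a"
  "le_comp M P \<Longrightarrow> le_comp N P \<Longrightarrow> join_comp M N = join_comp N M"
proof (induction a c and M P arbitrary: b and N rule: le_exp_le_comp.inducts)
qed auto

lemma ub_ec:
  "le_exp a c \<Longrightarrow> le_exp b c \<Longrightarrow> le_exp (join_exp a b) c"
  "le_comp M P \<Longrightarrow> le_comp N P \<Longrightarrow> le_comp (join_comp M N) P"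
proof (induction a c and M P arbitrary: b and N rule: le_exp_le_comp.inducts)
qed auto

lemma assoc_ec:
  "le_exp a c \<Longrightarrow> le_exp b c \<Longrightarrow> le_exp d c \<Longrightarrow> join_exp (join_exp a b) d = join_exp a (join_exp b d)"
  "le_comp M P \<Longrightarrow> le_comp N P \<Longrightarrow> le_comp K P \<Longrightarrow> join_comp (join_comp M N) K = join_comp M (join_comp N K)"
proof (induction a c and M P arbitrary: b d and N K rule: le_exp_le_comp.inducts)
qed auto

lemma comm_val: "le_val a c \<Longrightarrow> le_val b c \<Longrightarrow> join_val a b = join_val b a"
proof (induction a c arbitrary: b rule: le_val.induct)
  case (6 \<rho> \<rho>' M M' f x)
  from 6(3) show ?case
  proof (cases "b = VHole")
    case False
    with 6(3) obtain \<rho>2 M2 where b: "b = VClo \<rho>2 f x M2" "\<forall>z. le_val (\<rho>2 z) (\<rho>' z)" "le_comp M2 M'" by auto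
    show ?thesis using 6(1,2) b by (auto simp: comm_ec)
  qed simp
qed auto
lemma ub_val: "le_val a c \<Longrightarrow> le_val b c \<Longrightarrow> le_val (join_val a b) c"
proof (induction a c arbitrary: b rule: le_val.induct)
  case (6 \<rho> \<rho>' M M' f x)
  from 6(3) show ?case
  proof (cases "b = VHole")
    case False
    with 6(3) obtain \<rho>2 M2 where b: "b = VClo \<rho>2 f x M2" "\<forall>z. le_val (\<rho>2 z) (\<rho>' z)" "le_comp M2 M'" by auto
    show ?thesis using 6(1,2) b by (auto simp: ub_ec)
  qed (use 6 in auto)
qed auto

lemma assoc_val: "le_val a c \<Longrightarrow> le_val b c \<Longrightarrow> le_val d c \<Longrightarrow> join_val (join_val a b) d = join_val a (join_val b d)"
proof (induction a c arbitrary: b d rule: le_val.induct)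
  case (6 \<rho> \<rho>' M M' f x)
  consider "b = VHole" | \<rho>2 M2 where "b = VClo \<rho>2 f x M2" "\<forall>z. le_val (\<rho>2 z) (\<rho>' z)" "le_comp M2 M'"
    using 6(3) by auto
  then show ?case
  proof cases
    case 1 then show ?thesis by simp
  next
    case 2
    consider "d = VHole" | \<rho>3 M3 where "d = VClo \<rho>3 f x M3" "\<forall>z. le_val (\<rho>3 z) (\<rho>' z)" "le_comp M3 M'"
      using 6(4) by auto
    then show ?thesis
    proof cases
      case 1 then show ?thesis by simp
    next
      case 3: 2
      show ?thesis using 6(1,2) 2 3 by (auto simp: assoc_ec)
    qed
  qed
qed auto

lemma inter_val: "le_val a e \<Longrightarrow> le_val b e \<Longrightarrow> le_val c e \<Longrightarrow> le_val d e \<Longrightarrow>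
  join_val (join_val a b) (join_val c d) = join_val (join_val a c) (join_val b d)"
proof -
  assume h: "le_val a e" "le_val b e" "le_val c e" "le_val d e"
  have "join_val (join_val a b) (join_val c d) = join_val a (join_val b (join_val c d))"
    using h by (simp add: assoc_val ub_val)
  also have "join_val b (join_val c d) = join_val (join_val b c) d" using h by (simp add: assoc_val)
  also have "join_val b c = join_val c b" using h by (simp add: comm_val)
  also have "join_val (join_val c b) d = join_val c (join_val b d)" using h by (simp add: assoc_val)
  also have "join_val a (join_val c (join_val b d)) = join_val (join_val a c) (join_val b d)"
    using h by (simp add: assoc_val ub_val)
  finally show ?thesis .
qed

lemma join_val_hole_iff[simp]: "join_val a b = VHole \<longleftrightarrow> a = VHole \<and> b = VHole"
  by (cases a) (auto split: val.split)

lemma join_env_app: "join_env r r' z = join_val (r z) (r' z)" by (simp add: join_env_def)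
lemma join_store_app: "join_store r r' z = join_val (r z) (r' z)" by (simp add: join_store_def)
lemma hole_env_app: "hole_env z = VHole" by (simp add: hole_env_def)
lemma hole_store_app: "hole_store z = VHole" by (simp add: hole_store_def)
lemma join_env_hole_l[simp]: "join_env hole_env r = r" by (rule ext) (simp add: join_env_app join_store_app hole_env_app hole_store_app)
lemma join_env_hole_r[simp]: "join_env r hole_env = r" by (rule ext) (simp add: join_env_app join_store_app hole_env_app hole_store_app)
lemma join_store_hole_l[simp]: "join_store hole_store r = r" by (rule ext) (simp add: join_env_app join_store_app hole_env_app hole_store_app)
lemma join_store_hole_r[simp]: "join_store r hole_store = r" by (rule ext) (simp add: join_env_app join_store_app hole_env_app hole_store_app)
lemma join_env_upd: "join_env (r(x:=v)) (r'(x:=v')) = (join_env r r')(x := join_val v v')"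
  by (rule ext) (simp add: join_env_app join_store_app hole_env_app hole_store_app)
lemma join_store_upd: "join_store (r(x:=v)) (r'(x:=v')) = (join_store r r')(x := join_val v v')"
  by (rule ext) (simp add: join_env_app join_store_app hole_env_app hole_store_app)

lemma ub_env: "le_env a c \<Longrightarrow> le_env b c \<Longrightarrow> le_env (join_env a b) c"
  by (simp add: le_env_def ub_val join_env_app)
lemma ub_store: "le_store a c \<Longrightarrow> le_store b c \<Longrightarrow> le_store (join_store a b) c"
  by (simp add: le_store_def ub_val join_store_app)
lemma comm_store: "le_store a c \<Longrightarrow> le_store b c \<Longrightarrow> join_store a b = join_store b a"
  unfolding le_store_def by (rule ext) (simp add: join_store_app, meson comm_val)
lemma assoc_store: "le_store a c \<Longrightarrow> le_store b c \<Longrightarrow> le_store d c \<Longrightarrow>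
   join_store (join_store a b) d = join_store a (join_store b d)"
  unfolding le_store_def by (rule ext) (simp add: join_store_app, meson assoc_val)
lemma inter_store: "le_store a e \<Longrightarrow> le_store b e \<Longrightarrow> le_store c e \<Longrightarrow> le_store d e \<Longrightarrow>
  join_store (join_store a b) (join_store c d) = join_store (join_store a c) (join_store b d)"
  unfolding le_store_def by (rule ext) (simp add: join_store_app, meson inter_val)
lemma inter_env: "le_env a e \<Longrightarrow> le_env b e \<Longrightarrow> le_env c e \<Longrightarrow> le_env d e \<Longrightarrow>
  join_env (join_env a b) (join_env c d) = join_env (join_env a c) (join_env b d)"
  unfolding le_env_def by (rule ext) (simp add: join_env_app, meson inter_val)

inductive_simps le_trace_simps[simp]:
  "le_trace a (TReturn b)" "le_trace a (TLetF T)" "le_trace a (TLetS T1 x T2)"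
  "le_trace a (TApp b1 b2 f x T)" "le_trace a (TCaseL b x T y)" "le_trace a (TCaseR b x y T)"
  "le_trace a (TRaise b)" "le_trace a (TTryS T)" "le_trace a (TTryF T1 x T2)"
  "le_trace a (TRef l b)" "le_trace a (TAssign b1 l b2)" "le_trace a (TDeref l b)" "le_trace a (THole k L)"

lemma ub_trace: "le_trace a c \<Longrightarrow> le_trace b c \<Longrightarrow> le_trace (join_trace a b) c"
proof (induction a c arbitrary: b rule: le_trace.induct)
qed (auto simp: ub_ec)

lemma join_trace_hole_r: "le_trace U T \<Longrightarrow> join_trace U (THole (outcome T) (writes T)) = U"
  by (induction U T rule: le_trace.induct) auto



lemma eval_outcome: "eval T \<sigma> \<nu> M \<nu>' S \<Longrightarrow> \<exists>v. S = Res (outcome T) v"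
  by (induction rule: eval.induct) auto

lemma eval_writes: "eval T \<sigma> \<nu> M \<nu>' S \<Longrightarrow> l \<notin> writes T \<Longrightarrow> \<nu>' l = \<nu> l"
  by (induction rule: eval.induct) auto

lemma le_val_hole_l[simp]: "le_val VHole v" by (rule le_val.intros)
lemma le_exp_hole_l[simp]: "le_exp EHole e" by (rule le_exp_le_comp.intros)
lemma le_comp_hole_l[simp]: "le_comp CHole e" by (rule le_exp_le_comp.intros)

lemma eslice_hole_ex: "\<exists>\<rho> e'. eslice VHole e \<rho> e' \<and> le_env \<rho> \<sigma> \<and> le_exp e' e"
  by (rule exI[of _ hole_env], rule exI[of _ EHole]) (auto intro: eslice.intros simp: le_env_def hole_env_app)

lemma eslice_ex: "eval_exp \<sigma> e v \<Longrightarrow> le_val u v \<Longrightarrow> \<exists>\<rho> e'. eslice u e \<rho> e' \<and> le_env \<rho> \<sigma> \<and> le_exp e' e"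
proof (induction arbitrary: u rule: eval_exp.induct)
  case (1 \<rho> x)
  show ?case
  proof (cases "u = VHole")
    case True then show ?thesis using eslice_hole_ex by blast
  next
    case False then show ?thesis using 1
    proof (intro exI conjI)
      show "eslice u (EVar x) (hole_env(x:=u)) (EVar x)" using False by (rule eslice.intros)
    qed (auto simp: le_env_def hole_env_app)
  qed
next
  case (2 \<rho>)
  show ?case
  proof (cases "u = VHole")
    case True then show ?thesis using eslice_hole_ex by blast
  next
    case False then have u: "u = VUnit" using 2 by auto
    show ?thesis unfolding u
      by (intro exI[of _ hole_env] exI[of _ EUnit] conjI eslice.intros) (auto simp: le_env_def hole_env_app)
  qed
next
  case (3 \<rho> f x M)
  show ?case
  proof (cases "u = VHole")
    case True then show ?thesis using eslice_hole_ex by blast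
  next
    case False then obtain r N where u: "u = VClo r f x N" "\<forall>z. le_val (r z) (\<rho> z)" "le_comp N M" using 3 by auto
    show ?thesis unfolding u(1)
      by (intro exI[of _ r] exI[of _ "EFun f x N"] conjI eslice.intros) (use u in \<open>auto simp: le_env_def hole_env_app\<close>)
  qed
next
  case (4 \<rho> e v)
  show ?case
  proof (cases "u = VHole")
    case True then show ?thesis using eslice_hole_ex by blast
  next
    case False then obtain u' where u: "u = VInl u'" "le_val u' v" using 4 by auto
    from 4(2)[OF u(2)] obtain r a where "eslice u' e r a" "le_env r \<rho>" "le_exp a e" by blast
    then show ?thesis unfolding u(1)
      by (intro exI[of _ r] exI[of _ "EInl a"] conjI eslice.intros) (use u in auto)
  qed
next
  case (5 \<rho> e v)
  show ?case
  proof (cases "u = VHole")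
    case True then show ?thesis using eslice_hole_ex by blast
  next
    case False then obtain u' where u: "u = VInr u'" "le_val u' v" using 5 by auto
    from 5(2)[OF u(2)] obtain r a where "eslice u' e r a" "le_env r \<rho>" "le_exp a e" by blast
    then show ?thesis unfolding u(1)
      by (intro exI[of _ r] exI[of _ "EInr a"] conjI eslice.intros) (use u in auto)
  qed
next
  case (6 \<rho> e1 v1 e2 v2)
  show ?case
  proof (cases "u = VHole")
    case True then show ?thesis using eslice_hole_ex by blast
  next
    case False
    then obtain u1 u2 where u: "u = VPair u1 u2" "le_val u1 v1" "le_val u2 v2" using 6 by auto
    from 6(3)[OF u(2)] 6(4)[OF u(3)] obtain r1 a1 r2 a2 where
      "eslice u1 e1 r1 a1" "le_env r1 \<rho>" "le_exp a1 e1" "eslice u2 e2 r2 a2" "le_env r2 \<rho>" "le_exp a2 e2" by blast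
    then show ?thesis using u by (auto intro: eslice.intros ub_env)
  qed
next
  case (7 \<rho> e v1 v2)
  show ?case
  proof (cases "u = VHole")
    case True then show ?thesis using eslice_hole_ex by blast
  next
    case False
    have "le_val (VPair u VHole) (VPair v1 v2)" using 7 by auto
    from 7(2)[OF this] obtain r a where "eslice (VPair u VHole) e r a" "le_env r \<rho>" "le_exp a e" by blast
    then show ?thesis using False by (auto intro: eslice.intros)
  qed
next
  case (8 \<rho> e v1 v2)
  show ?case
  proof (cases "u = VHole")
    case True then show ?thesis using eslice_hole_ex by blast
  next
    case False
    have "le_val (VPair VHole u) (VPair v1 v2)" using 8 by auto
    from 8(2)[OF this] obtain r a where "eslice (VPair VHole u) e r a" "le_env r \<rho>" "le_exp a e" by blast
    then show ?thesis using False by (auto intro: eslice.intros)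
  qed
qed

inductive_cases es_hole: "eslice VHole e r a"
inductive_cases es_var: "eslice v (EVar x) r a"
inductive_cases es_fun: "eslice v (EFun f x M) r a"
inductive_cases es_unit: "eslice v EUnit r a"
inductive_cases es_inl: "eslice v (EInl e) r a"
inductive_cases es_inr: "eslice v (EInr e) r a"
inductive_cases es_pair: "eslice v (EPair e1 e2) r a"
inductive_cases es_fst: "eslice v (EFst e) r a"
inductive_cases es_snd: "eslice v (ESnd e) r a"

lemma eslice_det: "eslice u e r a \<Longrightarrow> eslice u e r' a' \<Longrightarrow> r' = r \<and> a' = a"
proof (induction arbitrary: r' a' rule: eslice.induct)
  case (1 e) from 1(1) show ?case by (rule es_hole) auto
next
  case (2 v x) from 2(2) show ?case by (rule es_var) (use 2 in auto)
next
  case (3 \<rho> f x M M') from 3(1) show ?case by (rule es_fun) auto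
next
  case 4 from 4(1) show ?case by (rule es_unit) auto
next
  case (5 v e \<rho> e')
  from 5(3) obtain r2 a2 where h: "eslice v e r' a2" "a' = EInl a2" by (cases rule: es_inl) auto
  from 5(2)[OF h(1)] h(2) show ?case by simp
next
  case (6 v e \<rho> e')
  from 6(3) obtain r2 a2 where h: "eslice v e r' a2" "a' = EInr a2" by (cases rule: es_inr) auto
  from 6(2)[OF h(1)] h(2) show ?case by simp
next
  case (7 v1 e1 \<rho>1 e1' v2 e2 \<rho>2 e2')
  from 7(5) obtain r1 a1 r2 a2 where h: "eslice v1 e1 r1 a1" "eslice v2 e2 r2 a2" "r' = join_env r1 r2" "a' = EPair a1 a2"
    by (cases rule: es_pair) auto
  from 7(3)[OF h(1)] 7(4)[OF h(2)] h(3,4) show ?case by simp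
next
  case (8 v e \<rho> e')
  from 8(4) obtain a2 where h: "eslice (VPair v VHole) e r' a2" "a' = EFst a2"
    by (cases rule: es_fst) (use 8 in auto)
  from 8(3)[OF h(1)] h(2) show ?case by simp
next
  case (9 v e \<rho> e')
  from 9(4) obtain a2 where h: "eslice (VPair VHole v) e r' a2" "a' = ESnd a2"
    by (cases rule: es_snd) (use 9 in auto)
  from 9(3)[OF h(1)] h(2) show ?case by simp
qed
lemma eslice_hole: "eslice VHole e r a \<Longrightarrow> r = hole_env \<and> a = EHole"
  by (erule es_hole) auto

lemma eslice_sound: "eval_exp \<sigma> e v \<Longrightarrow> le_val u v \<Longrightarrow> eslice u e r a \<Longrightarrow> le_env r \<sigma> \<and> le_exp a e"
  using eslice_ex eslice_det by metis

lemma eslice_join_holes: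
  assumes "eslice u e r a" "eslice u' e r' a'" "u = VHole \<or> u' = VHole"
  shows "eslice (join_val u u') e (join_env r r') (join_exp a a')"
  using assms(3)
proof
  assume u: "u = VHole"
  then have "r = hole_env" "a = EHole" using assms(1) eslice_hole by blast+
  then show ?thesis using u assms(2) by simp
next
  assume u: "u' = VHole"
  then have "r' = hole_env" "a' = EHole" using assms(2) eslice_hole by blast+
  then show ?thesis using u assms(1) by simp
qed

lemma eslice_join: "eval_exp \<sigma> e v \<Longrightarrow> le_val u v \<Longrightarrow> le_val u' v \<Longrightarrow> eslice u e r a \<Longrightarrow> eslice u' e r' a' \<Longrightarrow>
  eslice (join_val u u') e (join_env r r') (join_exp a a')"
proof (induction arbitrary: u u' r r' a a' rule: eval_exp.induct)
  case (1 \<rho> x)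
  show ?case
  proof (cases "u = VHole \<or> u' = VHole")
    case True then show ?thesis using 1 eslice_join_holes by blast
  next
    case False
    from 1(3) False have h: "r = hole_env(x:=u) \<and> a = EVar x" by (cases rule: es_var) auto
    from 1(4) False have h': "r' = hole_env(x:=u') \<and> a' = EVar x" by (cases rule: es_var) auto
    have e: "join_env r r' = hole_env(x := join_val u u')" using h h' join_env_upd[of hole_env x u hole_env u'] by simp
    have "join_val u u' \<noteq> VHole" using False by simp
    then have es: "eslice (join_val u u') (EVar x) (hole_env(x := join_val u u')) (EVar x)" by (rule eslice.intros)
    have ha: "a = EVar x" "a' = EVar x" using h h' by auto
    show ?thesis unfolding e ha join_exp.simps by (rule es)
  qed
next
  case (2 \<rho>)
  show ?case
  proof (cases "u = VHole \<or> u' = VHole")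
    case True then show ?thesis using 2 eslice_join_holes by blast
  next
    case False
    then have "u = VUnit" "u' = VUnit" using 2 by auto
    moreover from 2(3) this(1) have "r = hole_env \<and> a = EUnit" by (cases rule: es_unit) auto
    moreover from 2(4) calculation(2) have "r' = hole_env \<and> a' = EUnit" by (cases rule: es_unit) auto
    ultimately show ?thesis by (simp add: eslice.intros)
  qed
next
  case (3 \<rho> f x M)
  show ?case
  proof (cases "u = VHole \<or> u' = VHole")
    case True then show ?thesis using 3 eslice_join_holes by blast
  next
    case False
    then obtain r1 N1 r2 N2 where u: "u = VClo r1 f x N1" "u' = VClo r2 f x N2" using 3 by auto
    from 3(3) u(1) have h: "r = r1 \<and> a = EFun f x N1" by (cases rule: es_fun) auto
    from 3(4) u(2) have h': "r' = r2 \<and> a' = EFun f x N2" by (cases rule: es_fun) auto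
    have j: "join_val u u' = VClo (join_env r1 r2) f x (join_comp N1 N2)" using u by (simp add: join_env_def)
    have "eslice (VClo (join_env r1 r2) f x (join_comp N1 N2)) (EFun f x M) (join_env r1 r2) (EFun f x (join_comp N1 N2))"
      by (rule eslice.intros)
    then show ?thesis using h h' j by simp
  qed
next
  case (4 \<rho> e v)
  show ?case
  proof (cases "u = VHole \<or> u' = VHole")
    case True then show ?thesis using 4 eslice_join_holes by blast
  next
    case False
    then obtain w w' where u: "u = VInl w" "u' = VInl w'" "le_val w v" "le_val w' v" using 4 by auto
    from 4(5) u(1) obtain b where h: "eslice w e r b" "a = EInl b" by (cases rule: es_inl) auto
    from 4(6) u(2) obtain b' where h': "eslice w' e r' b'" "a' = EInl b'" by (cases rule: es_inl) auto
    from 4(2)[OF u(3,4) h(1) h'(1)] show ?thesis using u h h' by (auto intro: eslice.intros)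
  qed
next
  case (5 \<rho> e v)
  show ?case
  proof (cases "u = VHole \<or> u' = VHole")
    case True then show ?thesis using 5 eslice_join_holes by blast
  next
    case False
    then obtain w w' where u: "u = VInr w" "u' = VInr w'" "le_val w v" "le_val w' v" using 5 by auto
    from 5(5) u(1) obtain b where h: "eslice w e r b" "a = EInr b" by (cases rule: es_inr) auto
    from 5(6) u(2) obtain b' where h': "eslice w' e r' b'" "a' = EInr b'" by (cases rule: es_inr) auto
    from 5(2)[OF u(3,4) h(1) h'(1)] show ?thesis using u h h' by (auto intro: eslice.intros)
  qed
next
  case (6 \<rho> e1 v1 e2 v2)
  show ?case
  proof (cases "u = VHole \<or> u' = VHole")
    case True then show ?thesis using 6 eslice_join_holes by blast
  next
    case False
    then obtain w1 w2 w1' w2' where u: "u = VPair w1 w2" "u' = VPair w1' w2'"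
      "le_val w1 v1" "le_val w2 v2" "le_val w1' v1" "le_val w2' v2" using 6 by auto
    from 6(7) u(1) obtain r1 b1 r2 b2 where h: "eslice w1 e1 r1 b1" "eslice w2 e2 r2 b2" "r = join_env r1 r2" "a = EPair b1 b2"
      by (cases rule: es_pair) auto
    from 6(8) u(2) obtain r1' b1' r2' b2' where h': "eslice w1' e1 r1' b1'" "eslice w2' e2 r2' b2'" "r' = join_env r1' r2'" "a' = EPair b1' b2'"
      by (cases rule: es_pair) auto
    have s: "le_env r1 \<rho>" "le_env r2 \<rho>" "le_env r1' \<rho>" "le_env r2' \<rho>"
      using eslice_sound 6(1,2) u h h' by blast+
    have "join_env r r' = join_env (join_env r1 r1') (join_env r2 r2')"
      unfolding h h' using inter_env[OF s(1) s(2) s(3) s(4)] by simp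
    with 6(3)[OF u(3,5) h(1) h'(1)] 6(4)[OF u(4,6) h(2) h'(2)] show ?thesis using u h h'
      by (auto intro: eslice.intros)
  qed
next
  case (7 \<rho> e v1 v2)
  show ?case
  proof (cases "u = VHole \<or> u' = VHole")
    case True then show ?thesis using 7 eslice_join_holes by blast
  next
    case False
    from 7(5) False obtain b where h: "eslice (VPair u VHole) e r b" "a = EFst b" by (cases rule: es_fst) auto
    from 7(6) False obtain b' where h': "eslice (VPair u' VHole) e r' b'" "a' = EFst b'" by (cases rule: es_fst) auto
    have "le_val (VPair u VHole) (VPair v1 v2)" "le_val (VPair u' VHole) (VPair v1 v2)" using 7 by auto
    from 7(2)[OF this h(1) h'(1)] have "eslice (VPair (join_val u u') VHole) e (join_env r r') (join_exp b b')"
      using False by auto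
    then show ?thesis using h h' False by (auto intro: eslice.intros)
  qed
next
  case (8 \<rho> e v1 v2)
  show ?case
  proof (cases "u = VHole \<or> u' = VHole")
    case True then show ?thesis using 8 eslice_join_holes by blast
  next
    case False
    from 8(5) False obtain b where h: "eslice (VPair VHole u) e r b" "a = ESnd b" by (cases rule: es_snd) auto
    from 8(6) False obtain b' where h': "eslice (VPair VHole u') e r' b'" "a' = ESnd b'" by (cases rule: es_snd) auto
    have "le_val (VPair VHole u) (VPair v1 v2)" "le_val (VPair VHole u') (VPair v1 v2)" using 8 by auto
    from 8(2)[OF this h(1) h'(1)] have "eslice (VPair VHole (join_val u u')) e (join_env r r') (join_exp b b')"
      using False by auto
    then show ?thesis using h h' False by (auto intro: eslice.intros)
  qed
qed



lemma le_res_iff[simp]: "le_res R (Res k v) = (\<exists>u. R = Res k u \<and> le_val u v)"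
  by (cases R) auto

lemma erase_id: "erase \<mu> W = \<mu> \<longleftrightarrow> (\<forall>l\<in>W. \<mu> l = VHole)"
  unfolding erase_def fun_eq_iff by auto

lemma le_env_hole[simp]: "le_env hole_env s" by (simp add: le_env_def hole_env_app)
lemma le_store_hole[simp]: "le_store hole_store s" by (simp add: le_store_def hole_store_app)

lemma le_env_upd_hole: "le_env r (s(x:=v)) \<Longrightarrow> le_env (r(x:=VHole)) s"
  unfolding le_env_def by (metis fun_upd_apply le_val_hole_l)

lemma le_env_at: "le_env r s \<Longrightarrow> le_val (r x) (s x)"
  unfolding le_env_def by blast
lemma le_store_at: "le_store r s \<Longrightarrow> le_val (r x) (s x)"
  unfolding le_store_def by blast

lemma le_trace_hole_self[simp]: "le_trace (THole (outcome T) (writes T)) T"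
  by (rule le_trace.intros) auto

lemma concl_I: "bslice m Q T r mu N U \<Longrightarrow> le_env r \<sigma> \<Longrightarrow> le_store mu \<nu> \<Longrightarrow> le_comp N M \<Longrightarrow> le_trace U T \<Longrightarrow>
  \<exists>\<rho> \<mu>0 N U. bslice m Q T \<rho> \<mu>0 N U \<and> le_env \<rho> \<sigma> \<and> le_store \<mu>0 \<nu> \<and> le_comp N M \<and> le_trace U T"
  by blast

lemma box_ex:
  assumes "eval T \<sigma> \<nu> M \<nu>' S" "le_store m \<nu>'" "le_res Q S" "box_applies m Q T"
  shows "bslice m Q T hole_env m CHole (THole (outcome T) (writes T)) \<and> le_env hole_env \<sigma> \<and> le_store m \<nu>
    \<and> le_comp CHole M \<and> le_trace (THole (outcome T) (writes T)) T"
proof -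
  obtain v where S: "S = Res (outcome T) v" using eval_outcome assms(1) by blast
  then obtain u where R: "Q = Res (outcome T) u" using assms(3) by auto
  have u: "u = VHole" and er: "erase m (writes T) = m" using assms(4) R by (auto simp: box_applies_def)
  have bs: "bslice m Q T hole_env m CHole (THole (outcome T) (writes T))" unfolding R u by (rule slice_box[OF er])
  have "le_store m \<nu>" unfolding le_store_def
  proof
    fix l show "le_val (m l) (\<nu> l)"
    proof (cases "l \<in> writes T")
      case True then show ?thesis using er by (auto simp: erase_id)
    next
      case False then show ?thesis using eval_writes[OF assms(1) False] assms(2) le_store_at by metis
    qed
  qed
  then show ?thesis using bs by auto
qed

lemma bslice_ex: "eval T \<sigma> \<nu> M \<nu>' S \<Longrightarrow> le_store m \<nu>' \<Longrightarrow> le_res Q S \<Longrightarrow>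
  \<exists>\<rho> \<mu>0 N U. bslice m Q T \<rho> \<mu>0 N U \<and> le_env \<rho> \<sigma> \<and> le_store \<mu>0 \<nu> \<and> le_comp N M \<and> le_trace U T"
proof (induction arbitrary: m Q rule: eval.induct)
  case (ret \<rho> e v \<mu>s)
  have ev: "eval (TReturn e) \<rho> \<mu>s (Return e) \<mu>s (Res OVal v)" using ret.hyps by (rule eval.intros)
  show ?case
  proof (cases "box_applies m Q (TReturn e)")
    case True then show ?thesis using box_ex[OF ev ret.prems] by blast
  next
    case False
    obtain u where Q: "Q = Res OVal u" "le_val u v" using ret.prems by auto
    obtain r e' where es: "eslice u e r e'" "le_env r \<rho>" "le_exp e' e" using eslice_ex[OF ret.hyps Q(2)] by blast
    have B: "bslice m Q (TReturn e) r m (Return e') (TReturn e')" unfolding Q(1)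
      using False es(1) Q(1) by (auto intro: bslice.intros)
    then show ?thesis by (rule concl_I) (use es ret.prems in auto)
  qed
next
  case (raise \<rho> e v \<mu>s)
  have ev: "eval (TRaise e) \<rho> \<mu>s (Raise e) \<mu>s (Res OExn v)" using raise.hyps by (rule eval.intros)
  show ?case
  proof (cases "box_applies m Q (TRaise e)")
    case True then show ?thesis using box_ex[OF ev raise.prems] by blast
  next
    case False
    obtain u where Q: "Q = Res OExn u" "le_val u v" using raise.prems by auto
    obtain r e' where es: "eslice u e r e'" "le_env r \<rho>" "le_exp e' e" using eslice_ex[OF raise.hyps Q(2)] by blast
    have B: "bslice m Q (TRaise e) r m (Raise e') (TRaise e')" unfolding Q(1)
      using False es(1) Q(1) by (auto intro: bslice.intros)
    then show ?thesis by (rule concl_I) (use es raise.prems in auto)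
  qed
next
  case (ref \<rho> e v l \<mu>s)
  have ev: "eval (TRef l e) \<rho> \<mu>s (Ref e) (\<mu>s(l := v)) (Res OVal (VLoc l))" using ref.hyps by (rule eval.intros)
  show ?case
  proof (cases "box_applies m Q (TRef l e)")
    case True then show ?thesis using box_ex[OF ev ref.prems] by blast
  next
    case False
    obtain u where Q: "Q = Res OVal u" using ref.prems by auto
    have "le_val (m l) v" using le_store_at[OF ref.prems(1), of l] by simp
    then obtain r e' where es: "eslice (m l) e r e'" "le_env r \<rho>" "le_exp e' e" using eslice_ex[OF ref.hyps(1)] by blast
    have B: "bslice m Q (TRef l e) r (m(l:=VHole)) (Ref e') (TRef l e')" unfolding Q(1)
      using False es(1) Q(1) by (auto intro: bslice.intros)
    have ST: "le_store (m(l:=VHole)) \<mu>s" using ref.prems(1) unfolding le_store_def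
      by (metis fun_upd_apply le_val_hole_l)
    from B show ?thesis by (rule concl_I) (use es ST in auto)
  qed
next
  case (assign \<rho> e1 l e2 v \<mu>s)
  have ev: "eval (TAssign e1 l e2) \<rho> \<mu>s (Assign e1 e2) (\<mu>s(l := v)) (Res OVal VUnit)" using assign.hyps by (rule eval.intros)
  show ?case
  proof (cases "box_applies m Q (TAssign e1 l e2)")
    case True then show ?thesis using box_ex[OF ev assign.prems] by blast
  next
    case False
    obtain u where Q: "Q = Res OVal u" using assign.prems by auto
    have "le_val (m l) v" using le_store_at[OF assign.prems(1), of l] by simp
    then obtain r2 e2' where es2: "eslice (m l) e2 r2 e2'" "le_env r2 \<rho>" "le_exp e2' e2" using eslice_ex[OF assign.hyps(2)] by blast
    obtain r1 e1' where es1: "eslice (VLoc l) e1 r1 e1'" "le_env r1 \<rho>" "le_exp e1' e1"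
      using eslice_ex[OF assign.hyps(1), of "VLoc l"] by auto
    have B: "bslice m Q (TAssign e1 l e2) (join_env r1 r2) (m(l:=VHole)) (Assign e1' e2') (TAssign e1' l e2')" unfolding Q(1)
      using False es1(1) es2(1) Q(1) by (auto intro: bslice.intros)
    have ST: "le_store (m(l:=VHole)) \<mu>s" using assign.prems(1) unfolding le_store_def
      by (metis fun_upd_apply le_val_hole_l)
    from B show ?thesis by (rule concl_I) (use es1 es2 ST in \<open>auto intro: ub_env\<close>)
  qed
next
  case (deref \<rho> e l \<mu>s)
  have ev: "eval (TDeref l e) \<rho> \<mu>s (Deref e) \<mu>s (Res OVal (\<mu>s l))" using deref.hyps by (rule eval.intros)
  show ?case
  proof (cases "box_applies m Q (TDeref l e)")
    case True then show ?thesis using box_ex[OF ev deref.prems] by blast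
  next
    case False
    obtain u where Q: "Q = Res OVal u" "le_val u (\<mu>s l)" using deref.prems by auto
    obtain r e' where es: "eslice (VLoc l) e r e'" "le_env r \<rho>" "le_exp e' e"
      using eslice_ex[OF deref.hyps(1), of "VLoc l"] by auto
    have B: "bslice m Q (TDeref l e) r (join_store m (hole_store(l:=u))) (Deref e') (TDeref l e')" unfolding Q(1)
      using False es(1) Q(1) by (auto intro: bslice.intros)
    have ST: "le_store (hole_store(l:=u)) \<mu>s" using Q(2) unfolding le_store_def
      by (simp add: hole_store_app)
    from B show ?thesis by (rule concl_I) (use es deref.prems(1) ST in \<open>auto intro: ub_store\<close>)
  qed
next
  case (app \<rho> e1 v1 \<rho>' f x M e2 v2 T \<mu>s \<mu>s' Rs)
  have ev: "eval (TApp e1 e2 f x T) \<rho> \<mu>s (App e1 e2) \<mu>s' Rs" by (rule eval.app[OF app.hyps])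
  show ?case
  proof (cases "box_applies m Q (TApp e1 e2 f x T)")
    case True then show ?thesis using box_ex[OF ev app.prems] by blast
  next
    case False
    obtain r0 m0 N U where ih: "bslice m Q T r0 m0 N U" "le_env r0 ((\<rho>'(f := v1))(x := v2))"
      "le_store m0 \<mu>s" "le_comp N M" "le_trace U T" using app.IH[OF app.prems] by blast
    have "le_val (r0 x) v2" using le_env_at[OF ih(2), of x] by simp
    then obtain r2 e2' where es2: "eslice (r0 x) e2 r2 e2'" "le_env r2 \<rho>" "le_exp e2' e2"
      using eslice_ex[OF app.hyps(3)] by blast
    define cv where "cv = join_val ((r0(x := VHole)) f) (VClo ((r0(x := VHole))(f := VHole)) f x N)"
    have c1: "le_val ((r0(x := VHole)) f) v1"
    proof (cases "f = x")
      case False then show ?thesis using le_env_at[OF ih(2), of f] by simp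
    qed simp
    have c2: "le_val (VClo ((r0(x := VHole))(f := VHole)) f x N) v1"
      unfolding app.hyps(2)
    proof (rule le_val.intros)
      show "\<forall>z. le_val (((r0(x := VHole))(f := VHole)) z) (\<rho>' z)"
      proof
        fix z show "le_val (((r0(x := VHole))(f := VHole)) z) (\<rho>' z)"
          using le_env_at[OF ih(2), of z] by (cases "z = f"; cases "z = x") auto
      qed
    qed (rule ih(4))
    have "le_val cv v1" unfolding cv_def by (rule ub_val[OF c1 c2])
    then obtain r1 e1' where es1: "eslice cv e1 r1 e1'" "le_env r1 \<rho>" "le_exp e1' e1"
      using eslice_ex[OF app.hyps(1)] by blast
    have B: "bslice m Q (TApp e1 e2 f x T) (join_env r1 r2) m0 (App e1' e2') (TApp e1' e2' f x U)"
      using bslice.app[OF False ih(1) es2(1) es1(1)[unfolded cv_def]] .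
    then show ?thesis by (rule concl_I) (use es1 es2 ih in \<open>auto intro: ub_env\<close>)
  qed
next
  case (letS T1 \<rho> \<mu>s M1 \<mu>s' v T2 x M2 \<mu>s'' Rs)
  have ev: "eval (TLetS T1 x T2) \<rho> \<mu>s (Let x M1 M2) \<mu>s'' Rs" using letS.hyps by (auto intro: eval.intros)
  show ?case
  proof (cases "box_applies m Q (TLetS T1 x T2)")
    case True then show ?thesis using box_ex[OF ev letS.prems] by blast
  next
    case False
    obtain r0 m1 N2 U2 where ih2: "bslice m Q T2 r0 m1 N2 U2" "le_env r0 (\<rho>(x := v))"
      "le_store m1 \<mu>s'" "le_comp N2 M2" "le_trace U2 T2" using letS.IH(2)[OF letS.prems] by blast
    have "le_res (Res OVal (r0 x)) (Res OVal v)" using le_env_at[OF ih2(2), of x] by simp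
    then obtain r1 m2 N1 U1 where ih1: "bslice m1 (Res OVal (r0 x)) T1 r1 m2 N1 U1" "le_env r1 \<rho>"
      "le_store m2 \<mu>s" "le_comp N1 M1" "le_trace U1 T1" using letS.IH(1)[OF ih2(3)] by blast
    have B: "bslice m Q (TLetS T1 x T2) (join_env r1 (r0(x := VHole))) m2 (Let x N1 N2) (TLetS U1 x U2)"
      using bslice.lett[OF False ih2(1) ih1(1)] .
    then show ?thesis by (rule concl_I) (use ih1 ih2 le_env_upd_hole[OF ih2(2)] in \<open>auto intro: ub_env\<close>)
  qed
next
  case (letF T \<rho> \<mu>s M1 \<mu>s' v x M2)
  have ev: "eval (TLetF T) \<rho> \<mu>s (Let x M1 M2) \<mu>s' (Res OExn v)" using letF.hyps by (auto intro: eval.intros)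
  show ?case
  proof (cases "box_applies m Q (TLetF T)")
    case True then show ?thesis using box_ex[OF ev letF.prems] by blast
  next
    case False
    obtain u where Q: "Q = Res OExn u" using letF.prems by auto
    obtain r m1 N U where ih: "bslice m Q T r m1 N U" "le_env r \<rho>"
      "le_store m1 \<mu>s" "le_comp N M1" "le_trace U T" using letF.IH[OF letF.prems] by blast
    have B: "bslice m Q (TLetF T) r m1 (Let x N CHole) (TLetF U)"
      using bslice.letfail[OF False[unfolded Q] ih(1)[unfolded Q]] Q by simp
    then show ?thesis by (rule concl_I) (use ih in auto)
  qed
next
  case (tryF T1 \<rho> \<mu>s M1 \<mu>s' v T2 x M2 \<mu>s'' Rs)
  have ev: "eval (TTryF T1 x T2) \<rho> \<mu>s (Try M1 x M2) \<mu>s'' Rs" using tryF.hyps by (auto intro: eval.intros)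
  show ?case
  proof (cases "box_applies m Q (TTryF T1 x T2)")
    case True then show ?thesis using box_ex[OF ev tryF.prems] by blast
  next
    case False
    obtain r0 m1 N2 U2 where ih2: "bslice m Q T2 r0 m1 N2 U2" "le_env r0 (\<rho>(x := v))"
      "le_store m1 \<mu>s'" "le_comp N2 M2" "le_trace U2 T2" using tryF.IH(2)[OF tryF.prems] by blast
    have "le_res (Res OExn (r0 x)) (Res OExn v)" using le_env_at[OF ih2(2), of x] by simp
    then obtain r1 m2 N1 U1 where ih1: "bslice m1 (Res OExn (r0 x)) T1 r1 m2 N1 U1" "le_env r1 \<rho>"
      "le_store m2 \<mu>s" "le_comp N1 M1" "le_trace U1 T1" using tryF.IH(1)[OF ih2(3)] by blast
    have B: "bslice m Q (TTryF T1 x T2) (join_env (r0(x := VHole)) r1) m2 (Try N1 x N2) (TTryF U1 x U2)"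
      using bslice.tryfail[OF False ih2(1) ih1(1)] .
    then show ?thesis by (rule concl_I) (use ih1 ih2 le_env_upd_hole[OF ih2(2)] in \<open>auto intro: ub_env\<close>)
  qed
next
  case (tryS T1 \<rho> \<mu>s M1 \<mu>s' v x M2)
  have ev: "eval (TTryS T1) \<rho> \<mu>s (Try M1 x M2) \<mu>s' (Res OVal v)" using tryS.hyps by (auto intro: eval.intros)
  show ?case
  proof (cases "box_applies m Q (TTryS T1)")
    case True then show ?thesis using box_ex[OF ev tryS.prems] by blast
  next
    case False
    obtain u where Q: "Q = Res OVal u" using tryS.prems by auto
    obtain r m1 N U where ih: "bslice m Q T1 r m1 N U" "le_env r \<rho>"
      "le_store m1 \<mu>s" "le_comp N M1" "le_trace U T1" using tryS.IH[OF tryS.prems] by blast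
    have B: "bslice m Q (TTryS T1) r m1 (Try N x CHole) (TTryS U)"
      using bslice.trysucc[OF False[unfolded Q] ih(1)[unfolded Q]] Q by simp
    then show ?thesis by (rule concl_I) (use ih in auto)
  qed
next
  case (caseL \<rho> e v T x \<mu>s M1 \<mu>s' Rs y M2)
  have ev: "eval (TCaseL e x T y) \<rho> \<mu>s (Case e x M1 y M2) \<mu>s' Rs" using caseL.hyps by (auto intro: eval.intros)
  show ?case
  proof (cases "box_applies m Q (TCaseL e x T y)")
    case True then show ?thesis using box_ex[OF ev caseL.prems] by blast
  next
    case False
    obtain r0 m1 N U where ih: "bslice m Q T r0 m1 N U" "le_env r0 (\<rho>(x := v))"
      "le_store m1 \<mu>s" "le_comp N M1" "le_trace U T" using caseL.IH[OF caseL.prems] by blast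
    have "le_val (VInl (r0 x)) (VInl v)" using le_env_at[OF ih(2), of x] by simp
    then obtain r' e' where es: "eslice (VInl (r0 x)) e r' e'" "le_env r' \<rho>" "le_exp e' e"
      using eslice_ex[OF caseL.hyps(1)] by blast
    have B: "bslice m Q (TCaseL e x T y) (join_env (r0(x := VHole)) r') m1 (Case e' x N y CHole) (TCaseL e' x U y)"
      using bslice.caseL[OF False ih(1) es(1)] .
    then show ?thesis by (rule concl_I) (use ih es le_env_upd_hole[OF ih(2)] in \<open>auto intro: ub_env\<close>)
  qed
next
  case (caseR \<rho> e v T y \<mu>s M2 \<mu>s' Rs x M1)
  have ev: "eval (TCaseR e x y T) \<rho> \<mu>s (Case e x M1 y M2) \<mu>s' Rs" using caseR.hyps by (auto intro: eval.intros)
  show ?case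
  proof (cases "box_applies m Q (TCaseR e x y T)")
    case True then show ?thesis using box_ex[OF ev caseR.prems] by blast
  next
    case False
    obtain r0 m1 N U where ih: "bslice m Q T r0 m1 N U" "le_env r0 (\<rho>(y := v))"
      "le_store m1 \<mu>s" "le_comp N M2" "le_trace U T" using caseR.IH[OF caseR.prems] by blast
    have "le_val (VInr (r0 y)) (VInr v)" using le_env_at[OF ih(2), of y] by simp
    then obtain r' e' where es: "eslice (VInr (r0 y)) e r' e'" "le_env r' \<rho>" "le_exp e' e"
      using eslice_ex[OF caseR.hyps(1)] by blast
    have B: "bslice m Q (TCaseR e x y T) (join_env (r0(y := VHole)) r') m1 (Case e' x CHole y N) (TCaseR e' x y U)"
      using bslice.caseR[OF False ih(1) es(1)] .
    then show ?thesis by (rule concl_I) (use ih es le_env_upd_hole[OF ih(2)] in \<open>auto intro: ub_env\<close>)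
  qed
qed

inductive_cases bs_ret: "bslice m Q (TReturn e) r m0 N U"
inductive_cases bs_raise: "bslice m Q (TRaise e) r m0 N U"
inductive_cases bs_ref: "bslice m Q (TRef l e) r m0 N U"
inductive_cases bs_assign: "bslice m Q (TAssign e1 l e2) r m0 N U"
inductive_cases bs_deref: "bslice m Q (TDeref l e) r m0 N U"
inductive_cases bs_lets: "bslice m Q (TLetS T1 x T2) r m0 N U"
inductive_cases bs_letf: "bslice m Q (TLetF T1) r m0 N U"
inductive_cases bs_tryf: "bslice m Q (TTryF T1 x T2) r m0 N U"
inductive_cases bs_trys: "bslice m Q (TTryS T1) r m0 N U"
inductive_cases bs_app: "bslice m Q (TApp e1 e2 f x T) r m0 N U"
inductive_cases bs_casel: "bslice m Q (TCaseL e x T y) r m0 N U"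
inductive_cases bs_caser: "bslice m Q (TCaseR e x y T) r m0 N U"

lemma box_appliesI: "erase m (writes T) = m \<Longrightarrow> box_applies m (Res k VHole) T"
  by (simp add: box_applies_def)




primrec er_exp :: "exp \<Rightarrow> exp" and er_comp :: "comp \<Rightarrow> comp" where
  "er_exp (EVar x) = EVar x"
| "er_exp EUnit = EUnit"
| "er_exp (EInl a) = EInl (er_exp a)"
| "er_exp (EInr a) = EInr (er_exp a)"
| "er_exp (EPair a b) = EPair (er_exp a) (er_exp b)"
| "er_exp (EFst a) = EFst (er_exp a)"
| "er_exp (ESnd a) = ESnd (er_exp a)"
| "er_exp (EFun f x M) = EFun f x (er_comp M)"
| "er_exp EHole = EHole"
| "er_comp (Return a) = Return (er_exp a)"
| "er_comp (Let x M1 M2) = Let [] (er_comp M1) (er_comp M2)"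
| "er_comp (App a b) = App (er_exp a) (er_exp b)"
| "er_comp (Case a x M1 y M2) = Case (er_exp a) x (er_comp M1) y (er_comp M2)"
| "er_comp (Raise a) = Raise (er_exp a)"
| "er_comp (Try M1 x M2) = Try (er_comp M1) [] (er_comp M2)"
| "er_comp (Ref a) = Ref (er_exp a)"
| "er_comp (Assign a b) = Assign (er_exp a) (er_exp b)"
| "er_comp (Deref a) = Deref (er_exp a)"
| "er_comp CHole = CHole"

primrec er_val :: "val \<Rightarrow> val" where
  "er_val VUnit = VUnit"
| "er_val (VInl a) = VInl (er_val a)"
| "er_val (VInr a) = VInr (er_val a)"
| "er_val (VPair a b) = VPair (er_val a) (er_val b)"
| "er_val (VClo r f x M) = VClo (\<lambda>z. er_val (r z)) f x (er_comp M)"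
| "er_val (VLoc l) = VLoc l"
| "er_val VHole = VHole"

definition erf :: "('a \<Rightarrow> val) \<Rightarrow> ('a \<Rightarrow> val)" where "erf r = (\<lambda>z. er_val (r z))"

primrec er_trace :: "trace \<Rightarrow> trace" where
  "er_trace (TReturn a) = TReturn (er_exp a)"
| "er_trace (TLetF T) = TLetF (er_trace T)"
| "er_trace (TLetS T1 x T2) = TLetS (er_trace T1) x (er_trace T2)"
| "er_trace (TApp a b f x T) = TApp (er_exp a) (er_exp b) f x (er_trace T)"
| "er_trace (TCaseL a x T y) = TCaseL (er_exp a) x (er_trace T) y"
| "er_trace (TCaseR a x y T) = TCaseR (er_exp a) x y (er_trace T)"
| "er_trace (TRaise a) = TRaise (er_exp a)"
| "er_trace (TTryS T) = TTryS (er_trace T)"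
| "er_trace (TTryF T1 x T2) = TTryF (er_trace T1) x (er_trace T2)"
| "er_trace (TRef l a) = TRef l (er_exp a)"
| "er_trace (TAssign a l b) = TAssign (er_exp a) l (er_exp b)"
| "er_trace (TDeref l a) = TDeref l (er_exp a)"
| "er_trace (THole k L) = THole k L"

fun er_res :: "result \<Rightarrow> result" where "er_res (Res k v) = Res k (er_val v)"

lemma er_join_ec: "er_exp (join_exp a b) = join_exp (er_exp a) (er_exp b)"
   "er_comp (join_comp M N) = join_comp (er_comp M) (er_comp N)"
proof (induction a and M arbitrary: b and N)
qed (auto split: exp.split comp.split)

lemma er_join_val: "er_val (join_val a b) = join_val (er_val a) (er_val b)"
proof (induction a arbitrary: b)
  case (VClo r f x M)
  then show ?case by (cases b) (auto simp: er_join_ec)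
qed (auto split: val.split)

lemma erf_app: "erf r z = er_val (r z)" by (simp add: erf_def)
lemma erf_join_env: "erf (join_env a b) = join_env (erf a) (erf b)"
  by (rule ext) (simp add: join_env_app er_join_val erf_app)
lemma erf_join_store: "erf (join_store a b) = join_store (erf a) (erf b)"
  by (rule ext) (simp add: join_store_app er_join_val erf_app)
lemma erf_upd: "erf (r(x:=v)) = (erf r)(x := er_val v)"
  by (rule ext) (simp add: erf_app)

lemma er_val_hole[simp]: "er_val v = VHole \<longleftrightarrow> v = VHole" by (cases v) auto
lemma er_exp_hole[simp]: "er_exp e = EHole \<longleftrightarrow> e = EHole" by (cases e) auto
lemma er_comp_hole[simp]: "er_comp e = CHole \<longleftrightarrow> e = CHole" by (cases e) auto
lemma er_trace_hole[simp]: "er_trace T = THole k L \<longleftrightarrow> T = THole k L" by (cases T) auto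
lemma er_val_hole'[simp]: "VHole = er_val v \<longleftrightarrow> v = VHole" by (cases v) auto
lemma er_exp_hole'[simp]: "EHole = er_exp e \<longleftrightarrow> e = EHole" by (cases e) auto
lemma er_comp_hole'[simp]: "CHole = er_comp e \<longleftrightarrow> e = CHole" by (cases e) auto
lemma erf_hole_env[simp]: "erf hole_env = hole_env" by (rule ext) (simp add: hole_env_app erf_app)
lemma erf_hole_store[simp]: "erf hole_store = hole_store" by (rule ext) (simp add: hole_store_app erf_app)

lemma le_er_ec:
  "le_exp a c \<Longrightarrow> le_exp b c \<Longrightarrow> er_exp b = er_exp a \<Longrightarrow> b = a"
  "le_comp M P \<Longrightarrow> le_comp N P \<Longrightarrow> er_comp N = er_comp M \<Longrightarrow> N = M"
proof (induction a c and M P arbitrary: b and N rule: le_exp_le_comp.inducts)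
qed auto
lemma le_er_val: "le_val a c \<Longrightarrow> le_val b c \<Longrightarrow> er_val b = er_val a \<Longrightarrow> b = a"
proof (induction a c arbitrary: b rule: le_val.induct)
  case (6 \<rho> \<rho>' M M' f x)
  show ?case
  proof (cases "b = VHole")
    case True then show ?thesis using 6(4) by simp
  next
    case False
    with 6(3) obtain \<rho>2 M2 where b: "b = VClo \<rho>2 f x M2" "\<forall>z. le_val (\<rho>2 z) (\<rho>' z)" "le_comp M2 M'" by auto
    from 6(4) b(1) have e: "\<And>z. er_val (\<rho>2 z) = er_val (\<rho> z)" "er_comp M2 = er_comp M"
      by (auto dest: fun_cong)
    have "\<rho>2 = \<rho>" using 6(1) b(2) e(1) by (auto intro!: ext)
    moreover have "M2 = M" using le_er_ec(2)[OF 6(2) b(3) e(2)] .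
    ultimately show ?thesis using b(1) by simp
  qed
qed auto

lemma le_er_trace: "le_trace a c \<Longrightarrow> le_trace b c \<Longrightarrow> er_trace b = er_trace a \<Longrightarrow> b = a"
proof (induction a c arbitrary: b rule: le_trace.induct)
qed (auto dest: le_er_ec)

lemma le_er_env: "le_env a c \<Longrightarrow> le_env b c \<Longrightarrow> erf b = erf a \<Longrightarrow> b = a"
  unfolding le_env_def by (rule ext) (metis erf_app le_er_val)
lemma le_er_store: "le_store a c \<Longrightarrow> le_store b c \<Longrightarrow> erf b = erf a \<Longrightarrow> b = a"
  unfolding le_store_def by (rule ext) (metis erf_app le_er_val)

lemma eslice_er: "eslice u e r a \<Longrightarrow> eslice u' e r' a' \<Longrightarrow> er_val u' = er_val u \<Longrightarrow> erf r' = erf r \<and> er_exp a' = er_exp a"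
proof (induction arbitrary: u' r' a' rule: eslice.induct)
  case (1 e)
  then have "u' = VHole" by simp
  with 1(1) show ?case using eslice_hole by blast
next
  case (2 v x)
  have nh: "u' \<noteq> VHole" using 2 by auto
  from 2(2) have h: "r' = hole_env(x:=u') \<and> a' = EVar x" by (rule es_var) (use nh in auto)
  show ?case using h 2(3) by (simp only: erf_upd erf_hole_env)
next
  case (3 \<rho> f x M M')
  from 3(1) show ?case by (rule es_fun) (use 3 in \<open>auto simp: erf_def\<close>)
next
  case 4
  from 4(1) show ?case by (rule es_unit) (use 4 in auto)
next
  case (5 v e \<rho> e')
  from 5(3) obtain w b where h: "u' = VInl w" "eslice w e r' b" "a' = EInl b"
    by (rule es_inl) (use 5(4) in auto)
  have "er_val w = er_val v" using 5(4) h(1) by simp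
  from 5(2)[OF h(2) this] show ?case using h by simp
next
  case (6 v e \<rho> e')
  from 6(3) obtain w b where h: "u' = VInr w" "eslice w e r' b" "a' = EInr b"
    by (rule es_inr) (use 6(4) in auto)
  have "er_val w = er_val v" using 6(4) h(1) by simp
  from 6(2)[OF h(2) this] show ?case using h by simp
next
  case (7 v1 e1 \<rho>1 e1' v2 e2 \<rho>2 e2')
  from 7(5) obtain w1 w2 r1 b1 r2 b2 where h: "u' = VPair w1 w2" "eslice w1 e1 r1 b1" "eslice w2 e2 r2 b2"
     "r' = join_env r1 r2" "a' = EPair b1 b2"
    by (rule es_pair) (use 7(6) in auto)
  have "er_val w1 = er_val v1" "er_val w2 = er_val v2" using 7(6) h(1) by simp_all
  from 7(3)[OF h(2) this(1)] 7(4)[OF h(3) this(2)] show ?case using h by (simp add: erf_join_env)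
next
  case (8 v e \<rho> e')
  have nh: "u' \<noteq> VHole" using 8 by auto
  from 8(4) obtain b where h: "eslice (VPair u' VHole) e r' b" "a' = EFst b"
    by (rule es_fst) (use nh in auto)
  have "er_val (VPair u' VHole) = er_val (VPair v VHole)" using 8(5) by simp
  from 8(3)[OF h(1) this] show ?case using h by simp
next
  case (9 v e \<rho> e')
  have nh: "u' \<noteq> VHole" using 9 by auto
  from 9(4) obtain b where h: "eslice (VPair VHole u') e r' b" "a' = ESnd b"
    by (rule es_snd) (use nh in auto)
  have "er_val (VPair VHole u') = er_val (VPair VHole v)" using 9(5) by simp
  from 9(3)[OF h(1) this] show ?case using h by simp
qed
lemma er_res_eq[simp]: "er_res Q' = Res k w \<longleftrightarrow> (\<exists>v'. Q' = Res k v' \<and> er_val v' = w)"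
  by (cases Q') auto

lemma er_val_clo: "er_val (VClo r f x M) = VClo (erf r) f x (er_comp M)" by (simp add: erf_def)

lemma erf_eqD: "erf a = erf b \<Longrightarrow> er_val (a z) = er_val (b z)"
  by (metis erf_app)

lemma box_er: "erf m' = erf m \<Longrightarrow> er_res Q' = er_res Q \<Longrightarrow> box_applies m' Q' T = box_applies m Q T"
proof -
  assume a: "erf m' = erf m" "er_res Q' = er_res Q"
  obtain k v where Q: "Q = Res k v" by (cases Q)
  obtain v' where Q': "Q' = Res k v'" "er_val v' = er_val v" using a(2) Q by auto
  have "(v' = VHole) = (v = VHole)" using Q'(2) by (metis er_val_hole)
  moreover have "(\<forall>l\<in>writes T. m' l = VHole) = (\<forall>l\<in>writes T. m l = VHole)"
    using erf_eqD[OF a(1)] by (metis er_val_hole)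
  ultimately show ?thesis unfolding box_applies_def erase_id Q Q' by simp
qed

lemma bs_ret_nb: "bslice m Q (TReturn e) r m0 N U \<Longrightarrow> \<not> box_applies m Q (TReturn e) \<Longrightarrow>
  \<exists>v a. Q = Res OVal v \<and> eslice v e r a \<and> m0 = m \<and> N = Return a \<and> U = TReturn a"
  by (erule bs_ret) (auto simp: box_applies_def)
lemma bs_raise_nb: "bslice m Q (TRaise e) r m0 N U \<Longrightarrow> \<not> box_applies m Q (TRaise e) \<Longrightarrow>
  \<exists>v a. Q = Res OExn v \<and> eslice v e r a \<and> m0 = m \<and> N = Raise a \<and> U = TRaise a"
  by (erule bs_raise) (auto simp: box_applies_def)
lemma bs_ref_nb: "bslice m Q (TRef l e) r m0 N U \<Longrightarrow> \<not> box_applies m Q (TRef l e) \<Longrightarrow>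
  \<exists>v a. Q = Res OVal v \<and> eslice (m l) e r a \<and> m0 = m(l:=VHole) \<and> N = Ref a \<and> U = TRef l a"
  by (erule bs_ref) (auto simp: box_applies_def)
lemma bs_assign_nb: "bslice m Q (TAssign e1 l e2) r m0 N U \<Longrightarrow> \<not> box_applies m Q (TAssign e1 l e2) \<Longrightarrow>
  \<exists>v r2 a2 r1 a1. Q = Res OVal v \<and> eslice (m l) e2 r2 a2 \<and> eslice (VLoc l) e1 r1 a1 \<and> r = join_env r1 r2
     \<and> m0 = m(l:=VHole) \<and> N = Assign a1 a2 \<and> U = TAssign a1 l a2"
  by (erule bs_assign) (auto simp: box_applies_def)
lemma bs_deref_nb: "bslice m Q (TDeref l e) r m0 N U \<Longrightarrow> \<not> box_applies m Q (TDeref l e) \<Longrightarrow>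
  \<exists>v a. Q = Res OVal v \<and> eslice (VLoc l) e r a \<and> m0 = join_store m (hole_store(l:=v)) \<and> N = Deref a \<and> U = TDeref l a"
  by (erule bs_deref) (auto simp: box_applies_def)
lemma bs_lets_nb: "bslice m Q (TLetS T1 x T2) r m0 N U \<Longrightarrow> \<not> box_applies m Q (TLetS T1 x T2) \<Longrightarrow>
  \<exists>\<rho>0 \<mu>1 M2 U2 \<rho>1 M1 U1. bslice m Q T2 \<rho>0 \<mu>1 M2 U2 \<and> bslice \<mu>1 (Res OVal (\<rho>0 x)) T1 \<rho>1 m0 M1 U1
     \<and> r = join_env \<rho>1 (\<rho>0(x:=VHole)) \<and> N = Let x M1 M2 \<and> U = TLetS U1 x U2"
  apply (erule bs_lets) apply (auto simp: box_applies_def)[1] by (intro exI conjI; assumption)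
lemma bs_tryf_nb: "bslice m Q (TTryF T1 x T2) r m0 N U \<Longrightarrow> \<not> box_applies m Q (TTryF T1 x T2) \<Longrightarrow>
  \<exists>\<rho>0 \<mu>1 M2 U2 \<rho>2 M1 U1. bslice m Q T2 \<rho>0 \<mu>1 M2 U2 \<and> bslice \<mu>1 (Res OExn (\<rho>0 x)) T1 \<rho>2 m0 M1 U1
     \<and> r = join_env (\<rho>0(x:=VHole)) \<rho>2 \<and> N = Try M1 x M2 \<and> U = TTryF U1 x U2"
  apply (erule bs_tryf) apply (auto simp: box_applies_def)[1] by (intro exI conjI; assumption)
lemma bs_letf_nb: "bslice m Q (TLetF T1) r m0 N U \<Longrightarrow> \<not> box_applies m Q (TLetF T1) \<Longrightarrow>
  \<exists>v M1 U1 xa. Q = Res OExn v \<and> bslice m Q T1 r m0 M1 U1 \<and> N = Let xa M1 CHole \<and> U = TLetF U1"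
  apply (erule bs_letf) apply (auto simp: box_applies_def)[1] by (hypsubst, blast)
lemma bs_trys_nb: "bslice m Q (TTryS T1) r m0 N U \<Longrightarrow> \<not> box_applies m Q (TTryS T1) \<Longrightarrow>
  \<exists>v M1 U1 xa. Q = Res OVal v \<and> bslice m Q T1 r m0 M1 U1 \<and> N = Try M1 xa CHole \<and> U = TTryS U1"
  apply (erule bs_trys) apply (auto simp: box_applies_def)[1] by (hypsubst, blast)
lemma bs_app_nb: "bslice m Q (TApp e1 e2 f x T) r m0 N U \<Longrightarrow> \<not> box_applies m Q (TApp e1 e2 f x T) \<Longrightarrow>
  \<exists>\<rho>0 M U0 \<rho>2 a2 \<rho>1 a1. bslice m Q T \<rho>0 m0 M U0 \<and> eslice (\<rho>0 x) e2 \<rho>2 a2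
    \<and> eslice (join_val (if f = x then VHole else \<rho>0 f) (VClo ((\<rho>0(x := VHole))(f := VHole)) f x M)) e1 \<rho>1 a1
    \<and> r = join_env \<rho>1 \<rho>2 \<and> N = App a1 a2 \<and> U = TApp a1 a2 f x U0"
  apply (erule bs_app) apply (auto simp: box_applies_def)[1] by (intro exI conjI; assumption)
lemma bs_casel_nb: "bslice m Q (TCaseL e x T y) r m0 N U \<Longrightarrow> \<not> box_applies m Q (TCaseL e x T y) \<Longrightarrow>
  \<exists>\<rho>0 M1 U0 \<rho>' e'. bslice m Q T \<rho>0 m0 M1 U0 \<and> eslice (VInl (\<rho>0 x)) e \<rho>' e'
    \<and> r = join_env (\<rho>0(x := VHole)) \<rho>' \<and> N = Case e' x M1 y CHole \<and> U = TCaseL e' x U0 y"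
  apply (erule bs_casel) apply (auto simp: box_applies_def)[1] by (intro exI conjI; assumption)
lemma bs_caser_nb: "bslice m Q (TCaseR e x y T) r m0 N U \<Longrightarrow> \<not> box_applies m Q (TCaseR e x y T) \<Longrightarrow>
  \<exists>\<rho>0 M2 U0 \<rho>' e'. bslice m Q T \<rho>0 m0 M2 U0 \<and> eslice (VInr (\<rho>0 y)) e \<rho>' e'
    \<and> r = join_env (\<rho>0(y := VHole)) \<rho>' \<and> N = Case e' x CHole y M2 \<and> U = TCaseR e' x y U0"
  apply (erule bs_caser) apply (auto simp: box_applies_def)[1] by (intro exI conjI; assumption)

lemma bslice_er: "bslice m Q T r m0 N U \<Longrightarrow> bslice m' Q' T r' m0' N' U' \<Longrightarrow> erf m' = erf m \<Longrightarrow> er_res Q' = er_res Q \<Longrightarrow>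
  erf r' = erf r \<and> erf m0' = erf m0 \<and> er_comp N' = er_comp N \<and> er_trace U' = er_trace U"
proof (induction arbitrary: m' Q' r' m0' N' U' rule: bslice.induct)
  case (slice_box \<mu> T k)
  obtain v' where Q': "Q' = Res k v'" "v' = VHole" using slice_box.prems(3) by auto
  have bx: "box_applies m' Q' T" using box_er[OF slice_box.prems(2,3)] box_appliesI[OF slice_box.hyps] by simp
  from slice_box.prems(1) show ?case
    by (cases rule: bslice.cases) (use bx Q' slice_box.prems(2) in auto)
next
  case (ret \<mu> v e \<rho> e')
  have nb: "\<not> box_applies m' Q' (TReturn e)" using box_er[OF ret.prems(2,3)] ret.hyps(1) by simp
  obtain v' a where h: "Q' = Res OVal v'" "eslice v' e r' a" "m0' = m'" "N' = Return a" "U' = TReturn a"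
    using bs_ret_nb[OF ret.prems(1) nb] by blast
  have "er_val v' = er_val v" using ret.prems(3) h(1) by simp
  from eslice_er[OF ret.hyps(2) h(2) this] show ?case unfolding h(3-5) using ret.prems(2) by simp
next
  case (raise \<mu> v e \<rho> e')
  have nb: "\<not> box_applies m' Q' (TRaise e)" using box_er[OF raise.prems(2,3)] raise.hyps(1) by simp
  obtain v' a where h: "Q' = Res OExn v'" "eslice v' e r' a" "m0' = m'" "N' = Raise a" "U' = TRaise a"
    using bs_raise_nb[OF raise.prems(1) nb] by blast
  have "er_val v' = er_val v" using raise.prems(3) h(1) by simp
  from eslice_er[OF raise.hyps(2) h(2) this] show ?case unfolding h(3-5) using raise.prems(2) by simp
next
  case (ref \<mu> v l e \<rho> e')
  have nb: "\<not> box_applies m' Q' (TRef l e)" using box_er[OF ref.prems(2,3)] ref.hyps(1) by simp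
  obtain v' a where h: "Q' = Res OVal v'" "eslice (m' l) e r' a" "m0' = m'(l:=VHole)" "N' = Ref a" "U' = TRef l a"
    using bs_ref_nb[OF ref.prems(1) nb] by blast
  have ml: "er_val (m' l) = er_val (\<mu> l)" by (rule erf_eqD[OF ref.prems(2)])
  have st: "erf m0' = erf (\<mu>(l:=VHole))" unfolding h(3) erf_upd using ref.prems(2) by simp
  from eslice_er[OF ref.hyps(2) h(2) ml] show ?case unfolding h(4,5) using st by (simp add: fun_upd_def)
next
  case (assign \<mu> v e1 l e2 \<rho>2 e2' \<rho>1 e1')
  have nb: "\<not> box_applies m' Q' (TAssign e1 l e2)" using box_er[OF assign.prems(2,3)] assign.hyps(1) by simp
  obtain v' r2 a2 r1 a1 where h: "Q' = Res OVal v'" "eslice (m' l) e2 r2 a2" "eslice (VLoc l) e1 r1 a1"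
     "r' = join_env r1 r2" "m0' = m'(l:=VHole)" "N' = Assign a1 a2" "U' = TAssign a1 l a2"
    using bs_assign_nb[OF assign.prems(1) nb] by blast
  have ml: "er_val (m' l) = er_val (\<mu> l)" by (rule erf_eqD[OF assign.prems(2)])
  have st: "erf m0' = erf (\<mu>(l:=VHole))" unfolding h(5) erf_upd using assign.prems(2) by simp
  have es2: "erf r2 = erf \<rho>2 \<and> er_exp a2 = er_exp e2'" by (rule eslice_er[OF assign.hyps(2) h(2) ml])
  have es1: "erf r1 = erf \<rho>1 \<and> er_exp a1 = er_exp e1'" by (rule eslice_er[OF assign.hyps(3) h(3)]) simp
  show ?case unfolding h(4,6,7) using es1 es2 st by (simp add: erf_join_env fun_upd_def)
next
  case (deref \<mu> v l e \<rho> e')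
  have nb: "\<not> box_applies m' Q' (TDeref l e)" using box_er[OF deref.prems(2,3)] deref.hyps(1) by simp
  obtain v' a where h: "Q' = Res OVal v'" "eslice (VLoc l) e r' a" "m0' = join_store m' (hole_store(l:=v'))" "N' = Deref a" "U' = TDeref l a"
    using bs_deref_nb[OF deref.prems(1) nb] by blast
  have v': "er_val v' = er_val v" using deref.prems(3) h(1) by simp
  have st: "erf m0' = erf (join_store \<mu> (hole_store(l:=v)))"
    unfolding h(3) erf_join_store erf_upd using deref.prems(2) v' by simp
  have es: "erf r' = erf \<rho> \<and> er_exp a = er_exp e'" by (rule eslice_er[OF deref.hyps(2) h(2)]) simp
  show ?case unfolding h(4,5) using es st by simp
next
  case (lett \<mu> R T1 x T2 \<rho>0 \<mu>' M2 U2 \<rho>1 \<mu>'' M1 U1)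
  have nb: "\<not> box_applies m' Q' (TLetS T1 x T2)" using box_er[OF lett.prems(2,3)] lett.hyps(1) by simp
  obtain \<rho>0' \<mu>1' M2' U2' \<rho>1' M1' U1' where
    h: "bslice m' Q' T2 \<rho>0' \<mu>1' M2' U2'" "bslice \<mu>1' (Res OVal (\<rho>0' x)) T1 \<rho>1' m0' M1' U1'"
       "r' = join_env \<rho>1' (\<rho>0'(x := VHole))" "N' = Let x M1' M2'" "U' = TLetS U1' x U2'"
    using bs_lets_nb[OF lett.prems(1) nb] by blast
  have i2: "erf \<rho>0' = erf \<rho>0 \<and> erf \<mu>1' = erf \<mu>' \<and> er_comp M2' = er_comp M2 \<and> er_trace U2' = er_trace U2"
    by (rule lett.IH(1)[OF h(1) lett.prems(2,3)])
  have "er_res (Res OVal (\<rho>0' x)) = er_res (Res OVal (\<rho>0 x))" using erf_eqD[of \<rho>0' \<rho>0 x] i2 by simp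
  then have i1: "erf \<rho>1' = erf \<rho>1 \<and> erf m0' = erf \<mu>'' \<and> er_comp M1' = er_comp M1 \<and> er_trace U1' = er_trace U1"
    using lett.IH(2)[OF h(2)] i2 by blast
  show ?case unfolding h(3-5) using i1 i2 by (simp add: erf_join_env erf_upd)
next
  case (letfail \<mu> v T1 \<rho> \<mu>' M1 U1 x)
  have nb: "\<not> box_applies m' Q' (TLetF T1)" using box_er[OF letfail.prems(2,3)] letfail.hyps(1) by simp
  obtain v' M1' U1' xa where h: "Q' = Res OExn v'" "bslice m' Q' T1 r' m0' M1' U1'" "N' = Let xa M1' CHole" "U' = TLetF U1'"
    using bs_letf_nb[OF letfail.prems(1) nb] by blast
  show ?case using letfail.IH[OF h(2) letfail.prems(2,3)] unfolding h(3,4) by simp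
next
  case (trysucc \<mu> v T1 \<rho> \<mu>' M1 U1 x)
  have nb: "\<not> box_applies m' Q' (TTryS T1)" using box_er[OF trysucc.prems(2,3)] trysucc.hyps(1) by simp
  obtain v' M1' U1' xa where h: "Q' = Res OVal v'" "bslice m' Q' T1 r' m0' M1' U1'" "N' = Try M1' xa CHole" "U' = TTryS U1'"
    using bs_trys_nb[OF trysucc.prems(1) nb] by blast
  show ?case using trysucc.IH[OF h(2) trysucc.prems(2,3)] unfolding h(3,4) by simp
next
  case (tryfail \<mu> R T1 x T2 \<rho>0 \<mu>' M2 U2 \<rho>2 \<mu>'' M1 U1)
  have nb: "\<not> box_applies m' Q' (TTryF T1 x T2)" using box_er[OF tryfail.prems(2,3)] tryfail.hyps(1) by simp
  obtain \<rho>0' \<mu>1' M2' U2' \<rho>2' M1' U1' where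
    h: "bslice m' Q' T2 \<rho>0' \<mu>1' M2' U2'" "bslice \<mu>1' (Res OExn (\<rho>0' x)) T1 \<rho>2' m0' M1' U1'"
       "r' = join_env (\<rho>0'(x := VHole)) \<rho>2'" "N' = Try M1' x M2'" "U' = TTryF U1' x U2'"
    using bs_tryf_nb[OF tryfail.prems(1) nb] by blast
  have i2: "erf \<rho>0' = erf \<rho>0 \<and> erf \<mu>1' = erf \<mu>' \<and> er_comp M2' = er_comp M2 \<and> er_trace U2' = er_trace U2"
    by (rule tryfail.IH(1)[OF h(1) tryfail.prems(2,3)])
  have "er_res (Res OExn (\<rho>0' x)) = er_res (Res OExn (\<rho>0 x))" using erf_eqD[of \<rho>0' \<rho>0 x] i2 by simp
  then have i1: "erf \<rho>2' = erf \<rho>2 \<and> erf m0' = erf \<mu>'' \<and> er_comp M1' = er_comp M1 \<and> er_trace U1' = er_trace U1"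
    using tryfail.IH(2)[OF h(2)] i2 by blast
  show ?case unfolding h(3-5) using i1 i2 by (simp add: erf_join_env erf_upd)
next
  case (caseL \<mu> R e x T y \<rho>0 \<mu>' M1 U \<rho>' e')
  have nb: "\<not> box_applies m' Q' (TCaseL e x T y)" using box_er[OF caseL.prems(2,3)] caseL.hyps(1) by simp
  obtain \<rho>0' M1' U'' \<rho>'' e'' where
    h: "bslice m' Q' T \<rho>0' m0' M1' U''" "eslice (VInl (\<rho>0' x)) e \<rho>'' e''"
       "r' = join_env (\<rho>0'(x := VHole)) \<rho>''" "N' = Case e'' x M1' y CHole" "U' = TCaseL e'' x U'' y"
    using bs_casel_nb[OF caseL.prems(1) nb] by blast
  have i: "erf \<rho>0' = erf \<rho>0 \<and> erf m0' = erf \<mu>' \<and> er_comp M1' = er_comp M1 \<and> er_trace U'' = er_trace U"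
    by (rule caseL.IH[OF h(1) caseL.prems(2,3)])
  have "er_val (VInl (\<rho>0' x)) = er_val (VInl (\<rho>0 x))" using erf_eqD[of \<rho>0' \<rho>0 x] i by simp
  from eslice_er[OF caseL.hyps(3) h(2) this] have es: "erf \<rho>'' = erf \<rho>' \<and> er_exp e'' = er_exp e'" .
  show ?case unfolding h(3-5) using i es by (simp add: erf_join_env erf_upd)
next
  case (caseR \<mu> R e x y T \<rho>0 \<mu>' M2 U \<rho>' e')
  have nb: "\<not> box_applies m' Q' (TCaseR e x y T)" using box_er[OF caseR.prems(2,3)] caseR.hyps(1) by simp
  obtain \<rho>0' M2' U'' \<rho>'' e'' where
    h: "bslice m' Q' T \<rho>0' m0' M2' U''" "eslice (VInr (\<rho>0' y)) e \<rho>'' e''"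
       "r' = join_env (\<rho>0'(y := VHole)) \<rho>''" "N' = Case e'' x CHole y M2'" "U' = TCaseR e'' x y U''"
    using bs_caser_nb[OF caseR.prems(1) nb] by blast
  have i: "erf \<rho>0' = erf \<rho>0 \<and> erf m0' = erf \<mu>' \<and> er_comp M2' = er_comp M2 \<and> er_trace U'' = er_trace U"
    by (rule caseR.IH[OF h(1) caseR.prems(2,3)])
  have "er_val (VInr (\<rho>0' y)) = er_val (VInr (\<rho>0 y))" using erf_eqD[of \<rho>0' \<rho>0 y] i by simp
  from eslice_er[OF caseR.hyps(3) h(2) this] have es: "erf \<rho>'' = erf \<rho>' \<and> er_exp e'' = er_exp e'" .
  show ?case unfolding h(3-5) using i es by (simp add: erf_join_env erf_upd)
next
  case (app \<mu> R e1 e2 f x T \<rho>0 \<mu>' M U \<rho>2 e2' \<rho>1 e1')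
  have nb: "\<not> box_applies m' Q' (TApp e1 e2 f x T)" using box_er[OF app.prems(2,3)] app.hyps(1) by simp
  obtain \<rho>0' M' U'' \<rho>2' a2 \<rho>1' a1 where
    h: "bslice m' Q' T \<rho>0' m0' M' U''" "eslice (\<rho>0' x) e2 \<rho>2' a2"
       "eslice (join_val (if f = x then VHole else \<rho>0' f) (VClo ((\<rho>0'(x := VHole))(f := VHole)) f x M')) e1 \<rho>1' a1"
       "r' = join_env \<rho>1' \<rho>2'" "N' = App a1 a2" "U' = TApp a1 a2 f x U''"
    using bs_app_nb[OF app.prems(1) nb] by blast
  have i: "erf \<rho>0' = erf \<rho>0 \<and> erf m0' = erf \<mu>' \<and> er_comp M' = er_comp M \<and> er_trace U'' = er_trace U"
    by (rule app.IH[OF h(1) app.prems(2,3)])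
  have "er_val (\<rho>0' x) = er_val (\<rho>0 x)" using erf_eqD[of \<rho>0' \<rho>0 x] i by simp
  from eslice_er[OF app.hyps(3) h(2) this] have es2: "erf \<rho>2' = erf \<rho>2 \<and> er_exp a2 = er_exp e2'" .
  have E1: "er_val (if f = x then VHole else \<rho>0' f) = er_val ((\<rho>0(x := VHole)) f)"
    using erf_eqD[of \<rho>0' \<rho>0 f] i by simp
  have E2: "erf ((\<rho>0'(x := VHole))(f := VHole)) = erf ((\<rho>0(x := VHole))(f := VHole))" using i by (simp add: erf_upd)
  have "er_val (join_val (if f = x then VHole else \<rho>0' f) (VClo ((\<rho>0'(x := VHole))(f := VHole)) f x M'))
      = er_val (join_val ((\<rho>0(x := VHole)) f) (VClo ((\<rho>0(x := VHole))(f := VHole)) f x M))"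
    unfolding er_join_val er_val_clo E1 E2 using i by simp
  from eslice_er[OF app.hyps(4) h(3) this] have es1: "erf \<rho>1' = erf \<rho>1 \<and> er_exp a1 = er_exp e1'" .
  show ?case unfolding h(4-6) using i es1 es2 by (simp add: erf_join_env)
qed

lemma bslice_det_pre:
  assumes "bslice m Q T r m0 N U" "bslice m Q T r' m0' N' U'"
    "le_env r \<sigma>" "le_store m0 \<nu>" "le_comp N M" "le_trace U T"
    "le_env r' \<sigma>" "le_store m0' \<nu>" "le_comp N' M" "le_trace U' T"
  shows "r' = r \<and> m0' = m0 \<and> N' = N \<and> U' = U"
proof -
  have e: "erf r' = erf r \<and> erf m0' = erf m0 \<and> er_comp N' = er_comp N \<and> er_trace U' = er_trace U"
    using bslice_er[OF assms(1,2)] by simp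
  show ?thesis using e assms(3-10) le_er_env le_er_store le_er_ec(2) le_er_trace by metis
qed




lemma box_join_back: "box_applies (join_store \<mu> \<mu>') R T \<Longrightarrow> box_applies \<mu>' R T"
  unfolding box_applies_def erase_id by (simp add: join_store_app)

lemma box_join: "erase \<mu> (writes T) = \<mu> \<Longrightarrow> box_applies \<mu>' R T \<Longrightarrow> box_applies (join_store \<mu> \<mu>') R T"
  unfolding box_applies_def erase_id by (simp add: join_store_app)

lemma erase_sub: "erase \<mu> W = \<mu> \<Longrightarrow> W' \<subseteq> W \<Longrightarrow> erase \<mu> W' = \<mu>"
  unfolding erase_id by blast

lemma erased_le: "eval T \<sigma> \<nu> M \<nu>' S \<Longrightarrow> le_store \<mu> \<nu>' \<Longrightarrow> erase \<mu> (writes T) = \<mu> \<Longrightarrow> le_store \<mu> \<nu>"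
  unfolding le_store_def
proof
  fix l assume a: "eval T \<sigma> \<nu> M \<nu>' S" "\<forall>l. le_val (\<mu> l) (\<nu>' l)" "erase \<mu> (writes T) = \<mu>"
  show "le_val (\<mu> l) (\<nu> l)"
  proof (cases "l \<in> writes T")
    case True then show ?thesis using a(3) by (auto simp: erase_id)
  next
    case False then show ?thesis using eval_writes[OF a(1) False] a(2) by metis
  qed
qed

lemma erased_at: "erase \<mu> W = \<mu> \<Longrightarrow> l \<in> W \<Longrightarrow> \<mu> l = VHole"
  unfolding erase_id by blast

lemma absorb_box:
  assumes "eval T \<sigma> \<nu> M \<nu>' S" "le_store \<mu> \<nu>'" "erase \<mu> (writes T) = \<mu>" "le_store \<mu>' \<nu>'" "le_res R' S"
    "box_applies \<mu>' R' T"
  shows "\<exists>r m0 N U. bslice \<mu>' R' T r m0 N U \<and> le_env r \<sigma> \<and> le_store m0 \<nu> \<and> le_comp N M \<and> le_trace U T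
      \<and> bslice (join_store \<mu> \<mu>') R' T r (join_store \<mu> m0) N U"
proof -
  have b1: "bslice \<mu>' R' T hole_env \<mu>' CHole (THole (outcome T) (writes T)) \<and> le_env hole_env \<sigma> \<and> le_store \<mu>' \<nu>
    \<and> le_comp CHole M \<and> le_trace (THole (outcome T) (writes T)) T" by (rule box_ex[OF assms(1,4,5,6)])
  have b2: "bslice (join_store \<mu> \<mu>') R' T hole_env (join_store \<mu> \<mu>') CHole (THole (outcome T) (writes T))"
    using box_ex[OF assms(1) ub_store[OF assms(2,4)] assms(5) box_join[OF assms(3,6)]] by blast
  show ?thesis using b1 b2 by blast
qed

lemma concl_A: "bslice \<mu>' R' T r m0 N U \<Longrightarrow> le_env r \<sigma> \<Longrightarrow> le_store m0 \<nu> \<Longrightarrow> le_comp N M \<Longrightarrow> le_trace U T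
   \<Longrightarrow> bslice (join_store \<mu> \<mu>') R' T r (join_store \<mu> m0) N U \<Longrightarrow>
  \<exists>r m0 N U. bslice \<mu>' R' T r m0 N U \<and> le_env r \<sigma> \<and> le_store m0 \<nu> \<and> le_comp N M \<and> le_trace U T
      \<and> bslice (join_store \<mu> \<mu>') R' T r (join_store \<mu> m0) N U"
  by blast

lemma absorb: "eval T \<sigma> \<nu> M \<nu>' S \<Longrightarrow> le_store \<mu> \<nu>' \<Longrightarrow> erase \<mu> (writes T) = \<mu> \<Longrightarrow> le_store \<mu>' \<nu>' \<Longrightarrow> le_res R' S \<Longrightarrow>
  \<exists>r m0 N U. bslice \<mu>' R' T r m0 N U \<and> le_env r \<sigma> \<and> le_store m0 \<nu> \<and> le_comp N M \<and> le_trace U T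
      \<and> bslice (join_store \<mu> \<mu>') R' T r (join_store \<mu> m0) N U"
proof (induction arbitrary: \<mu> \<mu>' R' rule: eval.induct)
  case (ret \<rho> e v \<mu>s)
  have ev: "eval (TReturn e) \<rho> \<mu>s (Return e) \<mu>s (Res OVal v)" using ret.hyps by (rule eval.intros)
  show ?case
  proof (cases "box_applies \<mu>' R' (TReturn e)")
    case True then show ?thesis using absorb_box[OF ev ret.prems] by blast
  next
    case False
    have nbj: "\<not> box_applies (join_store \<mu> \<mu>') R' (TReturn e)" using False box_join_back by blast
    obtain u where Q: "R' = Res OVal u" "le_val u v" using ret.prems by auto
    obtain r e' where es: "eslice u e r e'" "le_env r \<rho>" "le_exp e' e" using eslice_ex[OF ret.hyps Q(2)] by blast
    have B1: "bslice \<mu>' R' (TReturn e) r \<mu>' (Return e') (TReturn e')"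
      using bslice.ret[OF False[unfolded Q(1)] es(1)] Q(1) by simp
    have B2: "bslice (join_store \<mu> \<mu>') R' (TReturn e) r (join_store \<mu> \<mu>') (Return e') (TReturn e')"
      using bslice.ret[OF nbj[unfolded Q(1)] es(1)] Q(1) by simp
    show ?thesis by (rule concl_A[OF B1 _ _ _ _ B2]) (use es ret.prems in auto)
  qed
next
  case (raise \<rho> e v \<mu>s)
  have ev: "eval (TRaise e) \<rho> \<mu>s (Raise e) \<mu>s (Res OExn v)" using raise.hyps by (rule eval.intros)
  show ?case
  proof (cases "box_applies \<mu>' R' (TRaise e)")
    case True then show ?thesis using absorb_box[OF ev raise.prems] by blast
  next
    case False
    have nbj: "\<not> box_applies (join_store \<mu> \<mu>') R' (TRaise e)" using False box_join_back by blast
    obtain u where Q: "R' = Res OExn u" "le_val u v" using raise.prems by auto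
    obtain r e' where es: "eslice u e r e'" "le_env r \<rho>" "le_exp e' e" using eslice_ex[OF raise.hyps Q(2)] by blast
    have B1: "bslice \<mu>' R' (TRaise e) r \<mu>' (Raise e') (TRaise e')"
      using bslice.raise[OF False[unfolded Q(1)] es(1)] Q(1) by simp
    have B2: "bslice (join_store \<mu> \<mu>') R' (TRaise e) r (join_store \<mu> \<mu>') (Raise e') (TRaise e')"
      using bslice.raise[OF nbj[unfolded Q(1)] es(1)] Q(1) by simp
    show ?thesis by (rule concl_A[OF B1 _ _ _ _ B2]) (use es raise.prems in auto)
  qed
next
  case (ref \<rho> e v l \<mu>s)
  have ev: "eval (TRef l e) \<rho> \<mu>s (Ref e) (\<mu>s(l := v)) (Res OVal (VLoc l))" using ref.hyps by (rule eval.intros)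
  show ?case
  proof (cases "box_applies \<mu>' R' (TRef l e)")
    case True then show ?thesis using absorb_box[OF ev ref.prems] by blast
  next
    case False
    have nbj: "\<not> box_applies (join_store \<mu> \<mu>') R' (TRef l e)" using False box_join_back by blast
    obtain u where Q: "R' = Res OVal u" using ref.prems by auto
    have ml: "\<mu> l = VHole" using erased_at[OF ref.prems(2)] by simp
    have jl: "join_store \<mu> \<mu>' l = \<mu>' l" using ml by (simp add: join_store_app)
    have "le_val (\<mu>' l) v" using le_store_at[OF ref.prems(3), of l] by simp
    then obtain r e' where es: "eslice (\<mu>' l) e r e'" "le_env r \<rho>" "le_exp e' e" using eslice_ex[OF ref.hyps(1)] by blast
    have B1: "bslice \<mu>' R' (TRef l e) r (\<mu>'(l:=VHole)) (Ref e') (TRef l e')"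
      using bslice.ref[OF False[unfolded Q(1)] es(1)] Q(1) by simp
    have B2: "bslice (join_store \<mu> \<mu>') R' (TRef l e) r ((join_store \<mu> \<mu>')(l:=VHole)) (Ref e') (TRef l e')"
      using bslice.ref[OF nbj[unfolded Q(1)], of r e'] es(1) jl Q(1) by simp
    have st: "(join_store \<mu> \<mu>')(l:=VHole) = join_store \<mu> (\<mu>'(l:=VHole))"
      by (rule ext) (simp add: join_store_app ml)
    have le: "le_store (\<mu>'(l:=VHole)) \<mu>s" using ref.prems(3) unfolding le_store_def
      by (metis fun_upd_apply le_val_hole_l)
    show ?thesis by (rule concl_A[OF B1 _ _ _ _ B2[unfolded st]]) (use es le in auto)
  qed
next
  case (assign \<rho> e1 l e2 v \<mu>s)
  have ev: "eval (TAssign e1 l e2) \<rho> \<mu>s (Assign e1 e2) (\<mu>s(l := v)) (Res OVal VUnit)" using assign.hyps by (rule eval.intros)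
  show ?case
  proof (cases "box_applies \<mu>' R' (TAssign e1 l e2)")
    case True then show ?thesis using absorb_box[OF ev assign.prems] by blast
  next
    case False
    have nbj: "\<not> box_applies (join_store \<mu> \<mu>') R' (TAssign e1 l e2)" using False box_join_back by blast
    obtain u where Q: "R' = Res OVal u" using assign.prems by auto
    have ml: "\<mu> l = VHole" using erased_at[OF assign.prems(2)] by simp
    have jl: "join_store \<mu> \<mu>' l = \<mu>' l" using ml by (simp add: join_store_app)
    have "le_val (\<mu>' l) v" using le_store_at[OF assign.prems(3), of l] by simp
    then obtain r2 e2' where es2: "eslice (\<mu>' l) e2 r2 e2'" "le_env r2 \<rho>" "le_exp e2' e2" using eslice_ex[OF assign.hyps(2)] by blast
    obtain r1 e1' where es1: "eslice (VLoc l) e1 r1 e1'" "le_env r1 \<rho>" "le_exp e1' e1"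
      using eslice_ex[OF assign.hyps(1), of "VLoc l"] by auto
    have B1: "bslice \<mu>' R' (TAssign e1 l e2) (join_env r1 r2) (\<mu>'(l:=VHole)) (Assign e1' e2') (TAssign e1' l e2')"
      using bslice.assign[OF False[unfolded Q(1)] es2(1) es1(1)] Q(1) by simp
    have B2: "bslice (join_store \<mu> \<mu>') R' (TAssign e1 l e2) (join_env r1 r2) ((join_store \<mu> \<mu>')(l:=VHole)) (Assign e1' e2') (TAssign e1' l e2')"
      using bslice.assign[OF nbj[unfolded Q(1)], of r2 e2' r1 e1'] es2(1) es1(1) jl Q(1) by simp
    have st: "(join_store \<mu> \<mu>')(l:=VHole) = join_store \<mu> (\<mu>'(l:=VHole))"
      by (rule ext) (simp add: join_store_app ml)
    have le: "le_store (\<mu>'(l:=VHole)) \<mu>s" using assign.prems(3) unfolding le_store_def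
      by (metis fun_upd_apply le_val_hole_l)
    show ?thesis by (rule concl_A[OF B1 _ _ _ _ B2[unfolded st]]) (use es1 es2 le in \<open>auto intro: ub_env\<close>)
  qed
next
  case (deref \<rho> e l \<mu>s)
  have ev: "eval (TDeref l e) \<rho> \<mu>s (Deref e) \<mu>s (Res OVal (\<mu>s l))" using deref.hyps by (rule eval.intros)
  show ?case
  proof (cases "box_applies \<mu>' R' (TDeref l e)")
    case True then show ?thesis using absorb_box[OF ev deref.prems] by blast
  next
    case False
    have nbj: "\<not> box_applies (join_store \<mu> \<mu>') R' (TDeref l e)" using False box_join_back by blast
    obtain u where Q: "R' = Res OVal u" "le_val u (\<mu>s l)" using deref.prems by auto
    obtain r e' where es: "eslice (VLoc l) e r e'" "le_env r \<rho>" "le_exp e' e"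
      using eslice_ex[OF deref.hyps(1), of "VLoc l"] by auto
    have B1: "bslice \<mu>' R' (TDeref l e) r (join_store \<mu>' (hole_store(l:=u))) (Deref e') (TDeref l e')"
      using bslice.deref[OF False[unfolded Q(1)] es(1)] Q(1) by simp
    have B2: "bslice (join_store \<mu> \<mu>') R' (TDeref l e) r (join_store (join_store \<mu> \<mu>') (hole_store(l:=u))) (Deref e') (TDeref l e')"
      using bslice.deref[OF nbj[unfolded Q(1)] es(1)] Q(1) by simp
    have hs: "le_store (hole_store(l:=u)) \<mu>s" using Q(2) unfolding le_store_def by (simp add: hole_store_app)
    have st: "join_store (join_store \<mu> \<mu>') (hole_store(l:=u)) = join_store \<mu> (join_store \<mu>' (hole_store(l:=u)))"
      by (rule assoc_store[OF deref.prems(1) deref.prems(3) hs])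
    show ?thesis by (rule concl_A[OF B1 _ _ _ _ B2[unfolded st]]) (use es hs deref.prems(3) in \<open>auto intro: ub_store\<close>)
  qed
next
  case (app \<rho> e1 v1 \<rho>' f x M e2 v2 T \<mu>s \<mu>s' Rs)
  have ev: "eval (TApp e1 e2 f x T) \<rho> \<mu>s (App e1 e2) \<mu>s' Rs" by (rule eval.app[OF app.hyps])
  show ?case
  proof (cases "box_applies \<mu>' R' (TApp e1 e2 f x T)")
    case True then show ?thesis using absorb_box[OF ev app.prems] by blast
  next
    case False
    have nbj: "\<not> box_applies (join_store \<mu> \<mu>') R' (TApp e1 e2 f x T)" using False box_join_back by blast
    obtain r0 m0 N U where ih: "bslice \<mu>' R' T r0 m0 N U" "le_env r0 ((\<rho>'(f := v1))(x := v2))"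
      "le_store m0 \<mu>s" "le_comp N M" "le_trace U T" "bslice (join_store \<mu> \<mu>') R' T r0 (join_store \<mu> m0) N U"
      using app.IH[OF app.prems(1) app.prems(2)[simplified] app.prems(3,4)] by blast
    have "le_val (r0 x) v2" using le_env_at[OF ih(2), of x] by simp
    then obtain r2 e2' where es2: "eslice (r0 x) e2 r2 e2'" "le_env r2 \<rho>" "le_exp e2' e2"
      using eslice_ex[OF app.hyps(3)] by blast
    define cv where "cv = join_val ((r0(x := VHole)) f) (VClo ((r0(x := VHole))(f := VHole)) f x N)"
    have c1: "le_val ((r0(x := VHole)) f) v1"
    proof (cases "f = x")
      case False then show ?thesis using le_env_at[OF ih(2), of f] by simp
    qed simp
    have c2: "le_val (VClo ((r0(x := VHole))(f := VHole)) f x N) v1"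
      unfolding app.hyps(2)
    proof (rule le_val.intros)
      show "\<forall>z. le_val (((r0(x := VHole))(f := VHole)) z) (\<rho>' z)"
      proof
        fix z show "le_val (((r0(x := VHole))(f := VHole)) z) (\<rho>' z)"
          using le_env_at[OF ih(2), of z] by (cases "z = f"; cases "z = x") auto
      qed
    qed (rule ih(4))
    have "le_val cv v1" unfolding cv_def by (rule ub_val[OF c1 c2])
    then obtain r1 e1' where es1: "eslice cv e1 r1 e1'" "le_env r1 \<rho>" "le_exp e1' e1"
      using eslice_ex[OF app.hyps(1)] by blast
    have B1: "bslice \<mu>' R' (TApp e1 e2 f x T) (join_env r1 r2) m0 (App e1' e2') (TApp e1' e2' f x U)"
      using bslice.app[OF False ih(1) es2(1) es1(1)[unfolded cv_def]] .
    have B2: "bslice (join_store \<mu> \<mu>') R' (TApp e1 e2 f x T) (join_env r1 r2) (join_store \<mu> m0) (App e1' e2') (TApp e1' e2' f x U)"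
      using bslice.app[OF nbj ih(6) es2(1) es1(1)[unfolded cv_def]] .
    show ?thesis by (rule concl_A[OF B1 _ _ _ _ B2]) (use es1 es2 ih in \<open>auto intro: ub_env\<close>)
  qed
next
  case (letS T1 \<rho> \<mu>s M1 \<mu>s' v T2 x M2 \<mu>s'' Rs)
  have ev: "eval (TLetS T1 x T2) \<rho> \<mu>s (Let x M1 M2) \<mu>s'' Rs" by (rule eval.letS[OF letS.hyps])
  show ?case
  proof (cases "box_applies \<mu>' R' (TLetS T1 x T2)")
    case True then show ?thesis using absorb_box[OF ev letS.prems] by blast
  next
    case False
    have nbj: "\<not> box_applies (join_store \<mu> \<mu>') R' (TLetS T1 x T2)" using False box_join_back by blast
    have er2: "erase \<mu> (writes T2) = \<mu>" and er1: "erase \<mu> (writes T1) = \<mu>" using erase_sub[OF letS.prems(2)] by auto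
    obtain r0 m1 N2 U2 where ih2: "bslice \<mu>' R' T2 r0 m1 N2 U2" "le_env r0 (\<rho>(x := v))"
      "le_store m1 \<mu>s'" "le_comp N2 M2" "le_trace U2 T2" "bslice (join_store \<mu> \<mu>') R' T2 r0 (join_store \<mu> m1) N2 U2"
      using letS.IH(2)[OF letS.prems(1) er2 letS.prems(3,4)] by blast
    have mu1: "le_store \<mu> \<mu>s'" by (rule erased_le[OF letS.hyps(2) letS.prems(1) er2])
    have "le_res (Res OVal (r0 x)) (Res OVal v)" using le_env_at[OF ih2(2), of x] by simp
    then obtain r1 m2 N1 U1 where ih1: "bslice m1 (Res OVal (r0 x)) T1 r1 m2 N1 U1" "le_env r1 \<rho>"
      "le_store m2 \<mu>s" "le_comp N1 M1" "le_trace U1 T1" "bslice (join_store \<mu> m1) (Res OVal (r0 x)) T1 r1 (join_store \<mu> m2) N1 U1"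
      using letS.IH(1)[OF mu1 er1 ih2(3)] by blast
    have B1: "bslice \<mu>' R' (TLetS T1 x T2) (join_env r1 (r0(x := VHole))) m2 (Let x N1 N2) (TLetS U1 x U2)"
      using bslice.lett[OF False ih2(1) ih1(1)] .
    have B2: "bslice (join_store \<mu> \<mu>') R' (TLetS T1 x T2) (join_env r1 (r0(x := VHole))) (join_store \<mu> m2) (Let x N1 N2) (TLetS U1 x U2)"
      using bslice.lett[OF nbj ih2(6) ih1(6)] .
    show ?thesis by (rule concl_A[OF B1 _ _ _ _ B2]) (use ih1 ih2 le_env_upd_hole[OF ih2(2)] in \<open>auto intro: ub_env\<close>)
  qed
next
  case (tryF T1 \<rho> \<mu>s M1 \<mu>s' v T2 x M2 \<mu>s'' Rs)
  have ev: "eval (TTryF T1 x T2) \<rho> \<mu>s (Try M1 x M2) \<mu>s'' Rs" by (rule eval.tryF[OF tryF.hyps])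
  show ?case
  proof (cases "box_applies \<mu>' R' (TTryF T1 x T2)")
    case True then show ?thesis using absorb_box[OF ev tryF.prems] by blast
  next
    case False
    have nbj: "\<not> box_applies (join_store \<mu> \<mu>') R' (TTryF T1 x T2)" using False box_join_back by blast
    have er2: "erase \<mu> (writes T2) = \<mu>" and er1: "erase \<mu> (writes T1) = \<mu>" using erase_sub[OF tryF.prems(2)] by auto
    obtain r0 m1 N2 U2 where ih2: "bslice \<mu>' R' T2 r0 m1 N2 U2" "le_env r0 (\<rho>(x := v))"
      "le_store m1 \<mu>s'" "le_comp N2 M2" "le_trace U2 T2" "bslice (join_store \<mu> \<mu>') R' T2 r0 (join_store \<mu> m1) N2 U2"
      using tryF.IH(2)[OF tryF.prems(1) er2 tryF.prems(3,4)] by blast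
    have mu1: "le_store \<mu> \<mu>s'" by (rule erased_le[OF tryF.hyps(2) tryF.prems(1) er2])
    have "le_res (Res OExn (r0 x)) (Res OExn v)" using le_env_at[OF ih2(2), of x] by simp
    then obtain r1 m2 N1 U1 where ih1: "bslice m1 (Res OExn (r0 x)) T1 r1 m2 N1 U1" "le_env r1 \<rho>"
      "le_store m2 \<mu>s" "le_comp N1 M1" "le_trace U1 T1" "bslice (join_store \<mu> m1) (Res OExn (r0 x)) T1 r1 (join_store \<mu> m2) N1 U1"
      using tryF.IH(1)[OF mu1 er1 ih2(3)] by blast
    have B1: "bslice \<mu>' R' (TTryF T1 x T2) (join_env (r0(x := VHole)) r1) m2 (Try N1 x N2) (TTryF U1 x U2)"
      using bslice.tryfail[OF False ih2(1) ih1(1)] .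
    have B2: "bslice (join_store \<mu> \<mu>') R' (TTryF T1 x T2) (join_env (r0(x := VHole)) r1) (join_store \<mu> m2) (Try N1 x N2) (TTryF U1 x U2)"
      using bslice.tryfail[OF nbj ih2(6) ih1(6)] .
    show ?thesis by (rule concl_A[OF B1 _ _ _ _ B2]) (use ih1 ih2 le_env_upd_hole[OF ih2(2)] in \<open>auto intro: ub_env\<close>)
  qed
next
  case (letF T \<rho> \<mu>s M1 \<mu>s' v x M2)
  have ev: "eval (TLetF T) \<rho> \<mu>s (Let x M1 M2) \<mu>s' (Res OExn v)" by (rule eval.letF[OF letF.hyps])
  show ?case
  proof (cases "box_applies \<mu>' R' (TLetF T)")
    case True then show ?thesis using absorb_box[OF ev letF.prems] by blast
  next
    case False
    have nbj: "\<not> box_applies (join_store \<mu> \<mu>') R' (TLetF T)" using False box_join_back by blast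
    obtain u where Q: "R' = Res OExn u" using letF.prems by auto
    obtain r m1 N U where ih: "bslice \<mu>' R' T r m1 N U" "le_env r \<rho>"
      "le_store m1 \<mu>s" "le_comp N M1" "le_trace U T" "bslice (join_store \<mu> \<mu>') R' T r (join_store \<mu> m1) N U"
      using letF.IH[OF letF.prems(1) letF.prems(2)[simplified] letF.prems(3,4)] by blast
    have B1: "bslice \<mu>' R' (TLetF T) r m1 (Let x N CHole) (TLetF U)"
      unfolding Q(1) by (rule bslice.letfail[OF False[unfolded Q(1)] ih(1)[unfolded Q(1)]])
    have B2: "bslice (join_store \<mu> \<mu>') R' (TLetF T) r (join_store \<mu> m1) (Let x N CHole) (TLetF U)"
      unfolding Q(1) by (rule bslice.letfail[OF nbj[unfolded Q(1)] ih(6)[unfolded Q(1)]])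
    show ?thesis by (rule concl_A[OF B1 _ _ _ _ B2]) (use ih in auto)
  qed
next
  case (tryS T1 \<rho> \<mu>s M1 \<mu>s' v x M2)
  have ev: "eval (TTryS T1) \<rho> \<mu>s (Try M1 x M2) \<mu>s' (Res OVal v)" by (rule eval.tryS[OF tryS.hyps])
  show ?case
  proof (cases "box_applies \<mu>' R' (TTryS T1)")
    case True then show ?thesis using absorb_box[OF ev tryS.prems] by blast
  next
    case False
    have nbj: "\<not> box_applies (join_store \<mu> \<mu>') R' (TTryS T1)" using False box_join_back by blast
    obtain u where Q: "R' = Res OVal u" using tryS.prems by auto
    obtain r m1 N U where ih: "bslice \<mu>' R' T1 r m1 N U" "le_env r \<rho>"
      "le_store m1 \<mu>s" "le_comp N M1" "le_trace U T1" "bslice (join_store \<mu> \<mu>') R' T1 r (join_store \<mu> m1) N U"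
      using tryS.IH[OF tryS.prems(1) tryS.prems(2)[simplified] tryS.prems(3,4)] by blast
    have B1: "bslice \<mu>' R' (TTryS T1) r m1 (Try N x CHole) (TTryS U)"
      unfolding Q(1) by (rule bslice.trysucc[OF False[unfolded Q(1)] ih(1)[unfolded Q(1)]])
    have B2: "bslice (join_store \<mu> \<mu>') R' (TTryS T1) r (join_store \<mu> m1) (Try N x CHole) (TTryS U)"
      unfolding Q(1) by (rule bslice.trysucc[OF nbj[unfolded Q(1)] ih(6)[unfolded Q(1)]])
    show ?thesis by (rule concl_A[OF B1 _ _ _ _ B2]) (use ih in auto)
  qed
next
  case (caseL \<rho> e v T x \<mu>s M1 \<mu>s' Rs y M2)
  have ev: "eval (TCaseL e x T y) \<rho> \<mu>s (Case e x M1 y M2) \<mu>s' Rs" by (rule eval.caseL[OF caseL.hyps])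
  show ?case
  proof (cases "box_applies \<mu>' R' (TCaseL e x T y)")
    case True then show ?thesis using absorb_box[OF ev caseL.prems] by blast
  next
    case False
    have nbj: "\<not> box_applies (join_store \<mu> \<mu>') R' (TCaseL e x T y)" using False box_join_back by blast
    obtain r0 m1 N U where ih: "bslice \<mu>' R' T r0 m1 N U" "le_env r0 (\<rho>(x := v))"
      "le_store m1 \<mu>s" "le_comp N M1" "le_trace U T" "bslice (join_store \<mu> \<mu>') R' T r0 (join_store \<mu> m1) N U"
      using caseL.IH[OF caseL.prems(1) caseL.prems(2)[simplified] caseL.prems(3,4)] by blast
    have "le_val (VInl (r0 x)) (VInl v)" using le_env_at[OF ih(2), of x] by simp
    then obtain r' e' where es: "eslice (VInl (r0 x)) e r' e'" "le_env r' \<rho>" "le_exp e' e"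
      using eslice_ex[OF caseL.hyps(1)] by blast
    have B1: "bslice \<mu>' R' (TCaseL e x T y) (join_env (r0(x := VHole)) r') m1 (Case e' x N y CHole) (TCaseL e' x U y)"
      using bslice.caseL[OF False ih(1) es(1)] .
    have B2: "bslice (join_store \<mu> \<mu>') R' (TCaseL e x T y) (join_env (r0(x := VHole)) r') (join_store \<mu> m1) (Case e' x N y CHole) (TCaseL e' x U y)"
      using bslice.caseL[OF nbj ih(6) es(1)] .
    show ?thesis by (rule concl_A[OF B1 _ _ _ _ B2]) (use ih es le_env_upd_hole[OF ih(2)] in \<open>auto intro: ub_env\<close>)
  qed
next
  case (caseR \<rho> e v T y \<mu>s M2 \<mu>s' Rs x M1)
  have ev: "eval (TCaseR e x y T) \<rho> \<mu>s (Case e x M1 y M2) \<mu>s' Rs" by (rule eval.caseR[OF caseR.hyps])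
  show ?case
  proof (cases "box_applies \<mu>' R' (TCaseR e x y T)")
    case True then show ?thesis using absorb_box[OF ev caseR.prems] by blast
  next
    case False
    have nbj: "\<not> box_applies (join_store \<mu> \<mu>') R' (TCaseR e x y T)" using False box_join_back by blast
    obtain r0 m1 N U where ih: "bslice \<mu>' R' T r0 m1 N U" "le_env r0 (\<rho>(y := v))"
      "le_store m1 \<mu>s" "le_comp N M2" "le_trace U T" "bslice (join_store \<mu> \<mu>') R' T r0 (join_store \<mu> m1) N U"
      using caseR.IH[OF caseR.prems(1) caseR.prems(2)[simplified] caseR.prems(3,4)] by blast
    have "le_val (VInr (r0 y)) (VInr v)" using le_env_at[OF ih(2), of y] by simp
    then obtain r' e' where es: "eslice (VInr (r0 y)) e r' e'" "le_env r' \<rho>" "le_exp e' e"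
      using eslice_ex[OF caseR.hyps(1)] by blast
    have B1: "bslice \<mu>' R' (TCaseR e x y T) (join_env (r0(y := VHole)) r') m1 (Case e' x CHole y N) (TCaseR e' x y U)"
      using bslice.caseR[OF False ih(1) es(1)] .
    have B2: "bslice (join_store \<mu> \<mu>') R' (TCaseR e x y T) (join_env (r0(y := VHole)) r') (join_store \<mu> m1) (Case e' x CHole y N) (TCaseR e' x y U)"
      using bslice.caseR[OF nbj ih(6) es(1)] .
    show ?thesis by (rule concl_A[OF B1 _ _ _ _ B2]) (use ih es le_env_upd_hole[OF ih(2)] in \<open>auto intro: ub_env\<close>)
  qed
qed

lemma concl_J:
  "bslice \<mu> R T r m0 N U \<Longrightarrow> le_env r \<sigma> \<Longrightarrow> le_store m0 \<nu> \<Longrightarrow> le_comp N M \<Longrightarrow> le_trace U T \<Longrightarrow>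
   bslice \<mu>' R' T r' m0' N' U' \<Longrightarrow> le_env r' \<sigma> \<Longrightarrow> le_store m0' \<nu> \<Longrightarrow> le_comp N' M \<Longrightarrow> le_trace U' T \<Longrightarrow>
   bslice (join_store \<mu> \<mu>') (join_res R R') T (join_env r r') (join_store m0 m0') (join_comp N N') (join_trace U U') \<Longrightarrow>
   \<exists>r m0 N U r' m0' N' U'. bslice \<mu> R T r m0 N U \<and> le_env r \<sigma> \<and> le_store m0 \<nu> \<and> le_comp N M \<and> le_trace U T
   \<and> bslice \<mu>' R' T r' m0' N' U' \<and> le_env r' \<sigma> \<and> le_store m0' \<nu> \<and> le_comp N' M \<and> le_trace U' T
   \<and> bslice (join_store \<mu> \<mu>') (join_res R R') T (join_env r r') (join_store m0 m0') (join_comp N N') (join_trace U U')"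
  by blast

lemma join_left_box:
  assumes ev: "eval T \<sigma> \<nu> M \<nu>' S" and p: "le_store \<mu> \<nu>'" "le_res R S" "le_store \<mu>' \<nu>'" "le_res R' S"
    and bx: "box_applies \<mu> R T"
  shows "\<exists>r m0 N U r' m0' N' U'. bslice \<mu> R T r m0 N U \<and> le_env r \<sigma> \<and> le_store m0 \<nu> \<and> le_comp N M \<and> le_trace U T
   \<and> bslice \<mu>' R' T r' m0' N' U' \<and> le_env r' \<sigma> \<and> le_store m0' \<nu> \<and> le_comp N' M \<and> le_trace U' T
   \<and> bslice (join_store \<mu> \<mu>') (join_res R R') T (join_env r r') (join_store m0 m0') (join_comp N N') (join_trace U U')"
proof -
  have b: "bslice \<mu> R T hole_env \<mu> CHole (THole (outcome T) (writes T)) \<and> le_env hole_env \<sigma> \<and> le_store \<mu> \<nu>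
    \<and> le_comp CHole M \<and> le_trace (THole (outcome T) (writes T)) T" by (rule box_ex[OF ev p(1,2) bx])
  have er: "erase \<mu> (writes T) = \<mu>" using bx by (simp add: box_applies_def)
  obtain r' m0' N' U' where a: "bslice \<mu>' R' T r' m0' N' U'" "le_env r' \<sigma>" "le_store m0' \<nu>" "le_comp N' M" "le_trace U' T"
    "bslice (join_store \<mu> \<mu>') R' T r' (join_store \<mu> m0') N' U'"
    using absorb[OF ev p(1) er p(3,4)] by blast
  obtain v where S: "S = Res (outcome T) v" using eval_outcome[OF ev] by blast
  obtain u where R: "R = Res (outcome T) u" using p(2) S by auto
  obtain u' where R': "R' = Res (outcome T) u'" using p(4) S by auto
  have u: "u = VHole" using bx R by (simp add: box_applies_def)
  have jr: "join_res R R' = R'" using R R' u by simp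
  have BJ: "bslice (join_store \<mu> \<mu>') (join_res R R') T (join_env hole_env r') (join_store \<mu> m0') (join_comp CHole N') (join_trace (THole (outcome T) (writes T)) U')"
    using a(6) jr by simp
  show ?thesis by (rule concl_J[OF _ _ _ _ _ a(1-5) BJ]) (use b in auto)
qed

lemma join_right_box:
  assumes ev: "eval T \<sigma> \<nu> M \<nu>' S" and p: "le_store \<mu> \<nu>'" "le_res R S" "le_store \<mu>' \<nu>'" "le_res R' S"
    and bx: "box_applies \<mu>' R' T"
  shows "\<exists>r m0 N U r' m0' N' U'. bslice \<mu> R T r m0 N U \<and> le_env r \<sigma> \<and> le_store m0 \<nu> \<and> le_comp N M \<and> le_trace U T
   \<and> bslice \<mu>' R' T r' m0' N' U' \<and> le_env r' \<sigma> \<and> le_store m0' \<nu> \<and> le_comp N' M \<and> le_trace U' T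
   \<and> bslice (join_store \<mu> \<mu>') (join_res R R') T (join_env r r') (join_store m0 m0') (join_comp N N') (join_trace U U')"
proof -
  have b: "bslice \<mu>' R' T hole_env \<mu>' CHole (THole (outcome T) (writes T)) \<and> le_env hole_env \<sigma> \<and> le_store \<mu>' \<nu>
    \<and> le_comp CHole M \<and> le_trace (THole (outcome T) (writes T)) T" by (rule box_ex[OF ev p(3,4) bx])
  have er: "erase \<mu>' (writes T) = \<mu>'" using bx by (simp add: box_applies_def)
  obtain r m0 N U where a: "bslice \<mu> R T r m0 N U" "le_env r \<sigma>" "le_store m0 \<nu>" "le_comp N M" "le_trace U T"
    "bslice (join_store \<mu>' \<mu>) R T r (join_store \<mu>' m0) N U"
    using absorb[OF ev p(3) er p(1,2)] by blast
  obtain v where S: "S = Res (outcome T) v" using eval_outcome[OF ev] by blast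
  obtain u where R: "R = Res (outcome T) u" using p(2) S by auto
  obtain u' where R': "R' = Res (outcome T) u'" using p(4) S by auto
  have u: "u' = VHole" using bx R' by (simp add: box_applies_def)
  have jr: "join_res R R' = R" using R R' u by simp
  have c1: "join_store \<mu>' \<mu> = join_store \<mu> \<mu>'" by (rule comm_store[OF p(3,1)])
  have mn: "le_store \<mu>' \<nu>" using b by blast
  have c2: "join_store \<mu>' m0 = join_store m0 \<mu>'" by (rule comm_store[OF mn a(3)])
  have jt: "join_trace U (THole (outcome T) (writes T)) = U" by (rule join_trace_hole_r[OF a(5)])
  have BJ: "bslice (join_store \<mu> \<mu>') (join_res R R') T (join_env r hole_env) (join_store m0 \<mu>') (join_comp N CHole) (join_trace U (THole (outcome T) (writes T)))"
    using a(6) jr c1 c2 jt by simp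
  show ?thesis by (rule concl_J[OF a(1-5) _ _ _ _ _ BJ]) (use b in auto)
qed

lemma nb_join: "\<not> box_applies \<mu> R T \<Longrightarrow> \<not> box_applies (join_store \<mu> \<mu>') (join_res R R') T"
proof -
  assume nb: "\<not> box_applies \<mu> R T"
  obtain k v where R: "R = Res k v" by (cases R)
  obtain k' v' where R': "R' = Res k' v'" by (cases R')
  show ?thesis using nb unfolding box_applies_def erase_id R R' by (auto simp: join_store_app)
qed




definition cvf :: "env \<Rightarrow> var \<Rightarrow> var \<Rightarrow> comp \<Rightarrow> val" where
  "cvf r0 f x N = join_val ((r0(x := VHole)) f) (VClo ((r0(x := VHole))(f := VHole)) f x N)"

lemma cvf_le: "le_env r0 ((\<rho>'(f := VClo \<rho>' f x M))(x := v2)) \<Longrightarrow> le_comp N M \<Longrightarrow> le_val (cvf r0 f x N) (VClo \<rho>' f x M)"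
proof -
  assume h: "le_env r0 ((\<rho>'(f := VClo \<rho>' f x M))(x := v2))" "le_comp N M"
  have c1: "le_val ((r0(x := VHole)) f) (VClo \<rho>' f x M)"
  proof (cases "f = x")
    case False then show ?thesis using le_env_at[OF h(1), of f] by simp
  qed simp
  have c2: "le_val (VClo ((r0(x := VHole))(f := VHole)) f x N) (VClo \<rho>' f x M)"
  proof (rule le_val.intros)
    show "\<forall>z. le_val (((r0(x := VHole))(f := VHole)) z) (\<rho>' z)"
    proof
      fix z show "le_val (((r0(x := VHole))(f := VHole)) z) (\<rho>' z)"
        using le_env_at[OF h(1), of z] by (cases "z = f"; cases "z = x") auto
    qed
  qed (rule h(2))
  show ?thesis unfolding cvf_def by (rule ub_val[OF c1 c2])
qed

lemma cvf_join:
  assumes "le_env r0 ((\<rho>'(f := VClo \<rho>' f x M))(x := v2))" "le_comp N M"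
    "le_env r0' ((\<rho>'(f := VClo \<rho>' f x M))(x := v2))" "le_comp N' M"
  shows "join_val (cvf r0 f x N) (cvf r0' f x N') = cvf (join_env r0 r0') f x (join_comp N N')"
proof -
  have A: "le_val ((r0(x := VHole)) f) (VClo \<rho>' f x M)" "le_val ((r0'(x := VHole)) f) (VClo \<rho>' f x M)"
    using le_env_at[OF assms(1), of f] le_env_at[OF assms(3), of f] by (cases "f = x"; simp)+
  have Bs: "le_val (VClo ((r0(x := VHole))(f := VHole)) f x N) (VClo \<rho>' f x M)"
    "le_val (VClo ((r0'(x := VHole))(f := VHole)) f x N') (VClo \<rho>' f x M)"
  proof -
    show "le_val (VClo ((r0(x := VHole))(f := VHole)) f x N) (VClo \<rho>' f x M)"
    proof (rule le_val.intros)
      show "\<forall>z. le_val (((r0(x := VHole))(f := VHole)) z) (\<rho>' z)"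
      proof
        fix z show "le_val (((r0(x := VHole))(f := VHole)) z) (\<rho>' z)"
          using le_env_at[OF assms(1), of z] by (cases "z = f"; cases "z = x") auto
      qed
    qed (rule assms(2))
    show "le_val (VClo ((r0'(x := VHole))(f := VHole)) f x N') (VClo \<rho>' f x M)"
    proof (rule le_val.intros)
      show "\<forall>z. le_val (((r0'(x := VHole))(f := VHole)) z) (\<rho>' z)"
      proof
        fix z show "le_val (((r0'(x := VHole))(f := VHole)) z) (\<rho>' z)"
          using le_env_at[OF assms(3), of z] by (cases "z = f"; cases "z = x") auto
      qed
    qed (rule assms(4))
  qed
  have i: "join_val (cvf r0 f x N) (cvf r0' f x N') =
     join_val (join_val ((r0(x := VHole)) f) ((r0'(x := VHole)) f))
              (join_val (VClo ((r0(x := VHole))(f := VHole)) f x N) (VClo ((r0'(x := VHole))(f := VHole)) f x N'))"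
    unfolding cvf_def by (rule inter_val[OF A(1) Bs(1) A(2) Bs(2)])
  have e1: "join_val ((r0(x := VHole)) f) ((r0'(x := VHole)) f) = ((join_env r0 r0')(x := VHole)) f"
    by (simp add: join_env_app)
  have e2: "(\<lambda>z. join_val (((r0(x := VHole))(f := VHole)) z) (((r0'(x := VHole))(f := VHole)) z))
      = ((join_env r0 r0')(x := VHole))(f := VHole)"
    by (rule ext) (simp add: join_env_app)
  have "join_val (cvf r0 f x N) (cvf r0' f x N') = join_val (((join_env r0 r0')(x := VHole)) f)
     (VClo (((join_env r0 r0')(x := VHole))(f := VHole)) f x (join_comp N N'))"
    by (simp only: i e1 join_val.simps val.case e2)
  also have "\<dots> = cvf (join_env r0 r0') f x (join_comp N N')" by (simp only: cvf_def)
  finally show ?thesis .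
qed


lemma join_main: "eval T \<sigma> \<nu> M \<nu>' S \<Longrightarrow> le_store \<mu> \<nu>' \<Longrightarrow> le_res R S \<Longrightarrow> le_store \<mu>' \<nu>' \<Longrightarrow> le_res R' S \<Longrightarrow>
  \<exists>r m0 N U r' m0' N' U'. bslice \<mu> R T r m0 N U \<and> le_env r \<sigma> \<and> le_store m0 \<nu> \<and> le_comp N M \<and> le_trace U T
   \<and> bslice \<mu>' R' T r' m0' N' U' \<and> le_env r' \<sigma> \<and> le_store m0' \<nu> \<and> le_comp N' M \<and> le_trace U' T
   \<and> bslice (join_store \<mu> \<mu>') (join_res R R') T (join_env r r') (join_store m0 m0') (join_comp N N') (join_trace U U')"
proof (induction arbitrary: \<mu> R \<mu>' R' rule: eval.induct)
  case (ret \<rho> e v \<mu>s)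
  have ev: "eval (TReturn e) \<rho> \<mu>s (Return e) \<mu>s (Res OVal v)" using ret.hyps by (rule eval.intros)
  show ?case
  proof (cases "box_applies \<mu> R (TReturn e) \<or> box_applies \<mu>' R' (TReturn e)")
    case True then show ?thesis using join_left_box[OF ev ret.prems] join_right_box[OF ev ret.prems] by blast
  next
    case False
    then have nb: "\<not> box_applies \<mu> R (TReturn e)" "\<not> box_applies \<mu>' R' (TReturn e)" by auto
    have nbj: "\<not> box_applies (join_store \<mu> \<mu>') (join_res R R') (TReturn e)" by (rule nb_join[OF nb(1)])
    obtain u where Q: "R = Res OVal u" "le_val u v" using ret.prems by auto
    obtain u' where Q': "R' = Res OVal u'" "le_val u' v" using ret.prems by auto
    obtain r a where es: "eslice u e r a" "le_env r \<rho>" "le_exp a e" using eslice_ex[OF ret.hyps Q(2)] by blast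
    obtain r' a' where es': "eslice u' e r' a'" "le_env r' \<rho>" "le_exp a' e" using eslice_ex[OF ret.hyps Q'(2)] by blast
    have esj: "eslice (join_val u u') e (join_env r r') (join_exp a a')" by (rule eslice_join[OF ret.hyps Q(2) Q'(2) es(1) es'(1)])
    have B1: "bslice \<mu> R (TReturn e) r \<mu> (Return a) (TReturn a)" unfolding Q(1) by (rule bslice.ret[OF nb(1)[unfolded Q(1)] es(1)])
    have B2: "bslice \<mu>' R' (TReturn e) r' \<mu>' (Return a') (TReturn a')" unfolding Q'(1) by (rule bslice.ret[OF nb(2)[unfolded Q'(1)] es'(1)])
    have jr: "join_res R R' = Res OVal (join_val u u')" using Q Q' by simp
    have BJ: "bslice (join_store \<mu> \<mu>') (join_res R R') (TReturn e) (join_env r r') (join_store \<mu> \<mu>') (join_comp (Return a) (Return a')) (join_trace (TReturn a) (TReturn a'))"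
      unfolding jr by (simp, rule bslice.ret[OF nbj[unfolded jr] esj])
    show ?thesis by (rule concl_J[OF B1 _ _ _ _ B2 _ _ _ _ BJ]) (use es es' ret.prems in auto)
  qed
next
  case (raise \<rho> e v \<mu>s)
  have ev: "eval (TRaise e) \<rho> \<mu>s (Raise e) \<mu>s (Res OExn v)" using raise.hyps by (rule eval.intros)
  show ?case
  proof (cases "box_applies \<mu> R (TRaise e) \<or> box_applies \<mu>' R' (TRaise e)")
    case True then show ?thesis using join_left_box[OF ev raise.prems] join_right_box[OF ev raise.prems] by blast
  next
    case False
    then have nb: "\<not> box_applies \<mu> R (TRaise e)" "\<not> box_applies \<mu>' R' (TRaise e)" by auto
    have nbj: "\<not> box_applies (join_store \<mu> \<mu>') (join_res R R') (TRaise e)" by (rule nb_join[OF nb(1)])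
    obtain u where Q: "R = Res OExn u" "le_val u v" using raise.prems by auto
    obtain u' where Q': "R' = Res OExn u'" "le_val u' v" using raise.prems by auto
    obtain r a where es: "eslice u e r a" "le_env r \<rho>" "le_exp a e" using eslice_ex[OF raise.hyps Q(2)] by blast
    obtain r' a' where es': "eslice u' e r' a'" "le_env r' \<rho>" "le_exp a' e" using eslice_ex[OF raise.hyps Q'(2)] by blast
    have esj: "eslice (join_val u u') e (join_env r r') (join_exp a a')" by (rule eslice_join[OF raise.hyps Q(2) Q'(2) es(1) es'(1)])
    have B1: "bslice \<mu> R (TRaise e) r \<mu> (Raise a) (TRaise a)" unfolding Q(1) by (rule bslice.raise[OF nb(1)[unfolded Q(1)] es(1)])
    have B2: "bslice \<mu>' R' (TRaise e) r' \<mu>' (Raise a') (TRaise a')" unfolding Q'(1) by (rule bslice.raise[OF nb(2)[unfolded Q'(1)] es'(1)])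
    have jr: "join_res R R' = Res OExn (join_val u u')" using Q Q' by simp
    have BJ: "bslice (join_store \<mu> \<mu>') (join_res R R') (TRaise e) (join_env r r') (join_store \<mu> \<mu>') (join_comp (Raise a) (Raise a')) (join_trace (TRaise a) (TRaise a'))"
      unfolding jr by (simp, rule bslice.raise[OF nbj[unfolded jr] esj])
    show ?thesis by (rule concl_J[OF B1 _ _ _ _ B2 _ _ _ _ BJ]) (use es es' raise.prems in auto)
  qed
next
  case (ref \<rho> e v l \<mu>s)
  have ev: "eval (TRef l e) \<rho> \<mu>s (Ref e) (\<mu>s(l := v)) (Res OVal (VLoc l))" using ref.hyps by (rule eval.intros)
  show ?case
  proof (cases "box_applies \<mu> R (TRef l e) \<or> box_applies \<mu>' R' (TRef l e)")
    case True then show ?thesis using join_left_box[OF ev ref.prems] join_right_box[OF ev ref.prems] by blast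
  next
    case False
    then have nb: "\<not> box_applies \<mu> R (TRef l e)" "\<not> box_applies \<mu>' R' (TRef l e)" by auto
    have nbj: "\<not> box_applies (join_store \<mu> \<mu>') (join_res R R') (TRef l e)" by (rule nb_join[OF nb(1)])
    obtain u where Q: "R = Res OVal u" using ref.prems by auto
    obtain u' where Q': "R' = Res OVal u'" using ref.prems by auto
    have l1: "le_val (\<mu> l) v" using le_store_at[OF ref.prems(1), of l] by simp
    have l2: "le_val (\<mu>' l) v" using le_store_at[OF ref.prems(3), of l] by simp
    obtain r a where es: "eslice (\<mu> l) e r a" "le_env r \<rho>" "le_exp a e" using eslice_ex[OF ref.hyps(1) l1] by blast
    obtain r' a' where es': "eslice (\<mu>' l) e r' a'" "le_env r' \<rho>" "le_exp a' e" using eslice_ex[OF ref.hyps(1) l2] by blast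
    have esj: "eslice (join_store \<mu> \<mu>' l) e (join_env r r') (join_exp a a')"
      using eslice_join[OF ref.hyps(1) l1 l2 es(1) es'(1)] by (simp add: join_store_app)
    have B1: "bslice \<mu> R (TRef l e) r (\<mu>(l:=VHole)) (Ref a) (TRef l a)" unfolding Q(1) by (rule bslice.ref[OF nb(1)[unfolded Q(1)] es(1)])
    have B2: "bslice \<mu>' R' (TRef l e) r' (\<mu>'(l:=VHole)) (Ref a') (TRef l a')" unfolding Q'(1) by (rule bslice.ref[OF nb(2)[unfolded Q'(1)] es'(1)])
    have jr: "join_res R R' = Res OVal (join_val u u')" using Q Q' by simp
    have st: "join_store (\<mu>(l:=VHole)) (\<mu>'(l:=VHole)) = (join_store \<mu> \<mu>')(l:=VHole)" by (simp add: join_store_upd)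
    have BJ: "bslice (join_store \<mu> \<mu>') (join_res R R') (TRef l e) (join_env r r') (join_store (\<mu>(l:=VHole)) (\<mu>'(l:=VHole))) (join_comp (Ref a) (Ref a')) (join_trace (TRef l a) (TRef l a'))"
      unfolding jr st by (simp, rule bslice.ref[OF nbj[unfolded jr] esj])
    have s1: "le_store (\<mu>(l:=VHole)) \<mu>s" using ref.prems(1) unfolding le_store_def by (metis fun_upd_apply le_val_hole_l)
    have s2: "le_store (\<mu>'(l:=VHole)) \<mu>s" using ref.prems(3) unfolding le_store_def by (metis fun_upd_apply le_val_hole_l)
    show ?thesis by (rule concl_J[OF B1 _ _ _ _ B2 _ _ _ _ BJ]) (use es es' s1 s2 in auto)
  qed
next
  case (assign \<rho> e1 l e2 v \<mu>s)
  have ev: "eval (TAssign e1 l e2) \<rho> \<mu>s (Assign e1 e2) (\<mu>s(l := v)) (Res OVal VUnit)" using assign.hyps by (rule eval.intros)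
  show ?case
  proof (cases "box_applies \<mu> R (TAssign e1 l e2) \<or> box_applies \<mu>' R' (TAssign e1 l e2)")
    case True then show ?thesis using join_left_box[OF ev assign.prems] join_right_box[OF ev assign.prems] by blast
  next
    case False
    then have nb: "\<not> box_applies \<mu> R (TAssign e1 l e2)" "\<not> box_applies \<mu>' R' (TAssign e1 l e2)" by auto
    have nbj: "\<not> box_applies (join_store \<mu> \<mu>') (join_res R R') (TAssign e1 l e2)" by (rule nb_join[OF nb(1)])
    obtain u where Q: "R = Res OVal u" using assign.prems by auto
    obtain u' where Q': "R' = Res OVal u'" using assign.prems by auto
    have l1: "le_val (\<mu> l) v" using le_store_at[OF assign.prems(1), of l] by simp
    have l2: "le_val (\<mu>' l) v" using le_store_at[OF assign.prems(3), of l] by simp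
    have ll: "le_val (VLoc l) (VLoc l)" by simp
    obtain r2 a2 where es2: "eslice (\<mu> l) e2 r2 a2" "le_env r2 \<rho>" "le_exp a2 e2" using eslice_ex[OF assign.hyps(2) l1] by blast
    obtain r2' a2' where es2': "eslice (\<mu>' l) e2 r2' a2'" "le_env r2' \<rho>" "le_exp a2' e2" using eslice_ex[OF assign.hyps(2) l2] by blast
    obtain r1 a1 where es1: "eslice (VLoc l) e1 r1 a1" "le_env r1 \<rho>" "le_exp a1 e1" using eslice_ex[OF assign.hyps(1) ll] by blast
    obtain r1' a1' where es1': "eslice (VLoc l) e1 r1' a1'" "le_env r1' \<rho>" "le_exp a1' e1" using eslice_ex[OF assign.hyps(1) ll] by blast
    have esj2: "eslice (join_store \<mu> \<mu>' l) e2 (join_env r2 r2') (join_exp a2 a2')"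
      using eslice_join[OF assign.hyps(2) l1 l2 es2(1) es2'(1)] by (simp add: join_store_app)
    have esj1: "eslice (VLoc l) e1 (join_env r1 r1') (join_exp a1 a1')"
      using eslice_join[OF assign.hyps(1) ll ll es1(1) es1'(1)] by simp
    have B1: "bslice \<mu> R (TAssign e1 l e2) (join_env r1 r2) (\<mu>(l:=VHole)) (Assign a1 a2) (TAssign a1 l a2)"
      unfolding Q(1) by (rule bslice.assign[OF nb(1)[unfolded Q(1)] es2(1) es1(1)])
    have B2: "bslice \<mu>' R' (TAssign e1 l e2) (join_env r1' r2') (\<mu>'(l:=VHole)) (Assign a1' a2') (TAssign a1' l a2')"
      unfolding Q'(1) by (rule bslice.assign[OF nb(2)[unfolded Q'(1)] es2'(1) es1'(1)])
    have jr: "join_res R R' = Res OVal (join_val u u')" using Q Q' by simp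
    have st: "join_store (\<mu>(l:=VHole)) (\<mu>'(l:=VHole)) = (join_store \<mu> \<mu>')(l:=VHole)" by (simp add: join_store_upd)
    have en: "join_env (join_env r1 r2) (join_env r1' r2') = join_env (join_env r1 r1') (join_env r2 r2')"
      by (rule inter_env[OF es1(2) es2(2) es1'(2) es2'(2)])
    have BJ: "bslice (join_store \<mu> \<mu>') (join_res R R') (TAssign e1 l e2) (join_env (join_env r1 r2) (join_env r1' r2')) (join_store (\<mu>(l:=VHole)) (\<mu>'(l:=VHole))) (join_comp (Assign a1 a2) (Assign a1' a2')) (join_trace (TAssign a1 l a2) (TAssign a1' l a2'))"
      unfolding jr st en by (simp, rule bslice.assign[OF nbj[unfolded jr] esj2 esj1])
    have s1: "le_store (\<mu>(l:=VHole)) \<mu>s" using assign.prems(1) unfolding le_store_def by (metis fun_upd_apply le_val_hole_l)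
    have s2: "le_store (\<mu>'(l:=VHole)) \<mu>s" using assign.prems(3) unfolding le_store_def by (metis fun_upd_apply le_val_hole_l)
    show ?thesis by (rule concl_J[OF B1 _ _ _ _ B2 _ _ _ _ BJ]) (use es1 es1' es2 es2' s1 s2 in \<open>auto intro: ub_env\<close>)
  qed
next
  case (deref \<rho> e l \<mu>s)
  have ev: "eval (TDeref l e) \<rho> \<mu>s (Deref e) \<mu>s (Res OVal (\<mu>s l))" using deref.hyps by (rule eval.intros)
  show ?case
  proof (cases "box_applies \<mu> R (TDeref l e) \<or> box_applies \<mu>' R' (TDeref l e)")
    case True then show ?thesis using join_left_box[OF ev deref.prems] join_right_box[OF ev deref.prems] by blast
  next
    case False
    then have nb: "\<not> box_applies \<mu> R (TDeref l e)" "\<not> box_applies \<mu>' R' (TDeref l e)" by auto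
    have nbj: "\<not> box_applies (join_store \<mu> \<mu>') (join_res R R') (TDeref l e)" by (rule nb_join[OF nb(1)])
    obtain u where Q: "R = Res OVal u" "le_val u (\<mu>s l)" using deref.prems by auto
    obtain u' where Q': "R' = Res OVal u'" "le_val u' (\<mu>s l)" using deref.prems by auto
    have ll: "le_val (VLoc l) (VLoc l)" by simp
    obtain r a where es: "eslice (VLoc l) e r a" "le_env r \<rho>" "le_exp a e" using eslice_ex[OF deref.hyps(1) ll] by blast
    obtain r' a' where es': "eslice (VLoc l) e r' a'" "le_env r' \<rho>" "le_exp a' e" using eslice_ex[OF deref.hyps(1) ll] by blast
    have esj: "eslice (VLoc l) e (join_env r r') (join_exp a a')"
      using eslice_join[OF deref.hyps(1) ll ll es(1) es'(1)] by simp
    have B1: "bslice \<mu> R (TDeref l e) r (join_store \<mu> (hole_store(l:=u))) (Deref a) (TDeref l a)"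
      unfolding Q(1) by (rule bslice.deref[OF nb(1)[unfolded Q(1)] es(1)])
    have B2: "bslice \<mu>' R' (TDeref l e) r' (join_store \<mu>' (hole_store(l:=u'))) (Deref a') (TDeref l a')"
      unfolding Q'(1) by (rule bslice.deref[OF nb(2)[unfolded Q'(1)] es'(1)])
    have jr: "join_res R R' = Res OVal (join_val u u')" using Q Q' by simp
    have h1: "le_store (hole_store(l:=u)) \<mu>s" using Q(2) unfolding le_store_def by (simp add: hole_store_app)
    have h2: "le_store (hole_store(l:=u')) \<mu>s" using Q'(2) unfolding le_store_def by (simp add: hole_store_app)
    have st: "join_store (join_store \<mu> (hole_store(l:=u))) (join_store \<mu>' (hole_store(l:=u'))) =
       join_store (join_store \<mu> \<mu>') (hole_store(l:=join_val u u'))"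
      using inter_store[OF deref.prems(1) h1 deref.prems(3) h2] by (simp add: join_store_upd)
    have BJ: "bslice (join_store \<mu> \<mu>') (join_res R R') (TDeref l e) (join_env r r') (join_store (join_store \<mu> (hole_store(l:=u))) (join_store \<mu>' (hole_store(l:=u')))) (join_comp (Deref a) (Deref a')) (join_trace (TDeref l a) (TDeref l a'))"
      unfolding jr st by (simp, rule bslice.deref[OF nbj[unfolded jr] esj])
    show ?thesis by (rule concl_J[OF B1 _ _ _ _ B2 _ _ _ _ BJ]) (use es es' h1 h2 deref.prems(1,3) in \<open>auto intro: ub_store\<close>)
  qed
next
  case (app \<rho> e1 v1 \<rho>' f x M e2 v2 T \<mu>s \<mu>s' Rs)
  have ev: "eval (TApp e1 e2 f x T) \<rho> \<mu>s (App e1 e2) \<mu>s' Rs" by (rule eval.app[OF app.hyps])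
  show ?case
  proof (cases "box_applies \<mu> R (TApp e1 e2 f x T) \<or> box_applies \<mu>' R' (TApp e1 e2 f x T)")
    case True then show ?thesis using join_left_box[OF ev app.prems] join_right_box[OF ev app.prems] by blast
  next
    case False
    then have nb: "\<not> box_applies \<mu> R (TApp e1 e2 f x T)" "\<not> box_applies \<mu>' R' (TApp e1 e2 f x T)" by auto
    have nbj: "\<not> box_applies (join_store \<mu> \<mu>') (join_res R R') (TApp e1 e2 f x T)" by (rule nb_join[OF nb(1)])
    obtain r0 m0 N U r0' m0' N' U' where ih:
      "bslice \<mu> R T r0 m0 N U" "le_env r0 ((\<rho>'(f := v1))(x := v2))" "le_store m0 \<mu>s" "le_comp N M" "le_trace U T"
      "bslice \<mu>' R' T r0' m0' N' U'" "le_env r0' ((\<rho>'(f := v1))(x := v2))" "le_store m0' \<mu>s" "le_comp N' M" "le_trace U' T"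
      "bslice (join_store \<mu> \<mu>') (join_res R R') T (join_env r0 r0') (join_store m0 m0') (join_comp N N') (join_trace U U')"
      using app.IH[OF app.prems] by blast
    have x1: "le_val (r0 x) v2" using le_env_at[OF ih(2), of x] by simp
    have x2: "le_val (r0' x) v2" using le_env_at[OF ih(7), of x] by simp
    obtain r2 a2 where es2: "eslice (r0 x) e2 r2 a2" "le_env r2 \<rho>" "le_exp a2 e2" using eslice_ex[OF app.hyps(3) x1] by blast
    obtain r2' a2' where es2': "eslice (r0' x) e2 r2' a2'" "le_env r2' \<rho>" "le_exp a2' e2" using eslice_ex[OF app.hyps(3) x2] by blast
    have esj2: "eslice (join_env r0 r0' x) e2 (join_env r2 r2') (join_exp a2 a2')"
      using eslice_join[OF app.hyps(3) x1 x2 es2(1) es2'(1)] by (simp add: join_env_app)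
    have c1: "le_val (cvf r0 f x N) v1" using cvf_le[OF ih(2)[unfolded app.hyps(2)] ih(4)] app.hyps(2) by simp
    have c2: "le_val (cvf r0' f x N') v1" using cvf_le[OF ih(7)[unfolded app.hyps(2)] ih(9)] app.hyps(2) by simp
    obtain r1 a1 where es1: "eslice (cvf r0 f x N) e1 r1 a1" "le_env r1 \<rho>" "le_exp a1 e1" using eslice_ex[OF app.hyps(1) c1] by blast
    obtain r1' a1' where es1': "eslice (cvf r0' f x N') e1 r1' a1'" "le_env r1' \<rho>" "le_exp a1' e1" using eslice_ex[OF app.hyps(1) c2] by blast
    have cj: "join_val (cvf r0 f x N) (cvf r0' f x N') = cvf (join_env r0 r0') f x (join_comp N N')"
      by (rule cvf_join[OF ih(2)[unfolded app.hyps(2)] ih(4) ih(7)[unfolded app.hyps(2)] ih(9)])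
    have esj1: "eslice (cvf (join_env r0 r0') f x (join_comp N N')) e1 (join_env r1 r1') (join_exp a1 a1')"
      using eslice_join[OF app.hyps(1) c1 c2 es1(1) es1'(1)] cj by simp
    have B1: "bslice \<mu> R (TApp e1 e2 f x T) (join_env r1 r2) m0 (App a1 a2) (TApp a1 a2 f x U)"
      by (rule bslice.app[OF nb(1) ih(1) es2(1) es1(1)[unfolded cvf_def]])
    have B2: "bslice \<mu>' R' (TApp e1 e2 f x T) (join_env r1' r2') m0' (App a1' a2') (TApp a1' a2' f x U')"
      by (rule bslice.app[OF nb(2) ih(6) es2'(1) es1'(1)[unfolded cvf_def]])
    have en: "join_env (join_env r1 r2) (join_env r1' r2') = join_env (join_env r1 r1') (join_env r2 r2')"
      by (rule inter_env[OF es1(2) es2(2) es1'(2) es2'(2)])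
    have BJ: "bslice (join_store \<mu> \<mu>') (join_res R R') (TApp e1 e2 f x T) (join_env (join_env r1 r2) (join_env r1' r2')) (join_store m0 m0') (join_comp (App a1 a2) (App a1' a2')) (join_trace (TApp a1 a2 f x U) (TApp a1' a2' f x U'))"
      unfolding en by (simp, rule bslice.app[OF nbj ih(11) esj2 esj1[unfolded cvf_def]])
    show ?thesis by (rule concl_J[OF B1 _ _ _ _ B2 _ _ _ _ BJ]) (use es1 es1' es2 es2' ih in \<open>auto intro: ub_env\<close>)
  qed
next
  case (letS T1 \<rho> \<mu>s M1 \<mu>s' v T2 x M2 \<mu>s'' Rs)
  have ev: "eval (TLetS T1 x T2) \<rho> \<mu>s (Let x M1 M2) \<mu>s'' Rs" by (rule eval.letS[OF letS.hyps])
  show ?case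
  proof (cases "box_applies \<mu> R (TLetS T1 x T2) \<or> box_applies \<mu>' R' (TLetS T1 x T2)")
    case True then show ?thesis using join_left_box[OF ev letS.prems] join_right_box[OF ev letS.prems] by blast
  next
    case False
    then have nb: "\<not> box_applies \<mu> R (TLetS T1 x T2)" "\<not> box_applies \<mu>' R' (TLetS T1 x T2)" by auto
    have nbj: "\<not> box_applies (join_store \<mu> \<mu>') (join_res R R') (TLetS T1 x T2)" by (rule nb_join[OF nb(1)])
    obtain r0 m1 N2 U2 r0' m1' N2' U2' where ih2:
      "bslice \<mu> R T2 r0 m1 N2 U2" "le_env r0 (\<rho>(x := v))" "le_store m1 \<mu>s'" "le_comp N2 M2" "le_trace U2 T2"
      "bslice \<mu>' R' T2 r0' m1' N2' U2'" "le_env r0' (\<rho>(x := v))" "le_store m1' \<mu>s'" "le_comp N2' M2" "le_trace U2' T2"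
      "bslice (join_store \<mu> \<mu>') (join_res R R') T2 (join_env r0 r0') (join_store m1 m1') (join_comp N2 N2') (join_trace U2 U2')"
      using letS.IH(2)[OF letS.prems] by blast
    have x1: "le_res (Res OVal (r0 x)) (Res OVal v)" using le_env_at[OF ih2(2), of x] by simp
    have x2: "le_res (Res OVal (r0' x)) (Res OVal v)" using le_env_at[OF ih2(7), of x] by simp
    obtain r1 m2 N1 U1 r1' m2' N1' U1' where ih1:
      "bslice m1 (Res OVal (r0 x)) T1 r1 m2 N1 U1" "le_env r1 \<rho>" "le_store m2 \<mu>s" "le_comp N1 M1" "le_trace U1 T1"
      "bslice m1' (Res OVal (r0' x)) T1 r1' m2' N1' U1'" "le_env r1' \<rho>" "le_store m2' \<mu>s" "le_comp N1' M1" "le_trace U1' T1"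
      "bslice (join_store m1 m1') (join_res (Res OVal (r0 x)) (Res OVal (r0' x))) T1 (join_env r1 r1') (join_store m2 m2') (join_comp N1 N1') (join_trace U1 U1')"
      using letS.IH(1)[OF ih2(3) x1 ih2(8) x2] by blast
    have jx: "join_res (Res OVal (r0 x)) (Res OVal (r0' x)) = Res OVal (join_env r0 r0' x)" by (simp add: join_env_app)
    have B1: "bslice \<mu> R (TLetS T1 x T2) (join_env r1 (r0(x := VHole))) m2 (Let x N1 N2) (TLetS U1 x U2)"
      by (rule bslice.lett[OF nb(1) ih2(1) ih1(1)])
    have B2: "bslice \<mu>' R' (TLetS T1 x T2) (join_env r1' (r0'(x := VHole))) m2' (Let x N1' N2') (TLetS U1' x U2')"
      by (rule bslice.lett[OF nb(2) ih2(6) ih1(6)])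
    have u1: "le_env (r0(x := VHole)) \<rho>" "le_env (r0'(x := VHole)) \<rho>" using le_env_upd_hole ih2(2,7) by blast+
    have en: "join_env (join_env r1 (r0(x := VHole))) (join_env r1' (r0'(x := VHole))) = join_env (join_env r1 r1') ((join_env r0 r0')(x := VHole))"
      using inter_env[OF ih1(2) u1(1) ih1(7) u1(2)] by (simp add: join_env_upd)
    have BJ: "bslice (join_store \<mu> \<mu>') (join_res R R') (TLetS T1 x T2) (join_env (join_env r1 (r0(x := VHole))) (join_env r1' (r0'(x := VHole)))) (join_store m2 m2') (join_comp (Let x N1 N2) (Let x N1' N2')) (join_trace (TLetS U1 x U2) (TLetS U1' x U2'))"
      unfolding en by (simp, rule bslice.lett[OF nbj ih2(11) ih1(11)[unfolded jx]])
    show ?thesis by (rule concl_J[OF B1 _ _ _ _ B2 _ _ _ _ BJ]) (use ih1 ih2 u1 in \<open>auto intro: ub_env\<close>)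
  qed
next
  case (tryF T1 \<rho> \<mu>s M1 \<mu>s' v T2 x M2 \<mu>s'' Rs)
  have ev: "eval (TTryF T1 x T2) \<rho> \<mu>s (Try M1 x M2) \<mu>s'' Rs" by (rule eval.tryF[OF tryF.hyps])
  show ?case
  proof (cases "box_applies \<mu> R (TTryF T1 x T2) \<or> box_applies \<mu>' R' (TTryF T1 x T2)")
    case True then show ?thesis using join_left_box[OF ev tryF.prems] join_right_box[OF ev tryF.prems] by blast
  next
    case False
    then have nb: "\<not> box_applies \<mu> R (TTryF T1 x T2)" "\<not> box_applies \<mu>' R' (TTryF T1 x T2)" by auto
    have nbj: "\<not> box_applies (join_store \<mu> \<mu>') (join_res R R') (TTryF T1 x T2)" by (rule nb_join[OF nb(1)])
    obtain r0 m1 N2 U2 r0' m1' N2' U2' where ih2: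
      "bslice \<mu> R T2 r0 m1 N2 U2" "le_env r0 (\<rho>(x := v))" "le_store m1 \<mu>s'" "le_comp N2 M2" "le_trace U2 T2"
      "bslice \<mu>' R' T2 r0' m1' N2' U2'" "le_env r0' (\<rho>(x := v))" "le_store m1' \<mu>s'" "le_comp N2' M2" "le_trace U2' T2"
      "bslice (join_store \<mu> \<mu>') (join_res R R') T2 (join_env r0 r0') (join_store m1 m1') (join_comp N2 N2') (join_trace U2 U2')"
      using tryF.IH(2)[OF tryF.prems] by blast
    have x1: "le_res (Res OExn (r0 x)) (Res OExn v)" using le_env_at[OF ih2(2), of x] by simp
    have x2: "le_res (Res OExn (r0' x)) (Res OExn v)" using le_env_at[OF ih2(7), of x] by simp
    obtain r1 m2 N1 U1 r1' m2' N1' U1' where ih1: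
      "bslice m1 (Res OExn (r0 x)) T1 r1 m2 N1 U1" "le_env r1 \<rho>" "le_store m2 \<mu>s" "le_comp N1 M1" "le_trace U1 T1"
      "bslice m1' (Res OExn (r0' x)) T1 r1' m2' N1' U1'" "le_env r1' \<rho>" "le_store m2' \<mu>s" "le_comp N1' M1" "le_trace U1' T1"
      "bslice (join_store m1 m1') (join_res (Res OExn (r0 x)) (Res OExn (r0' x))) T1 (join_env r1 r1') (join_store m2 m2') (join_comp N1 N1') (join_trace U1 U1')"
      using tryF.IH(1)[OF ih2(3) x1 ih2(8) x2] by blast
    have jx: "join_res (Res OExn (r0 x)) (Res OExn (r0' x)) = Res OExn (join_env r0 r0' x)" by (simp add: join_env_app)
    have B1: "bslice \<mu> R (TTryF T1 x T2) (join_env (r0(x := VHole)) r1) m2 (Try N1 x N2) (TTryF U1 x U2)"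
      by (rule bslice.tryfail[OF nb(1) ih2(1) ih1(1)])
    have B2: "bslice \<mu>' R' (TTryF T1 x T2) (join_env (r0'(x := VHole)) r1') m2' (Try N1' x N2') (TTryF U1' x U2')"
      by (rule bslice.tryfail[OF nb(2) ih2(6) ih1(6)])
    have u1: "le_env (r0(x := VHole)) \<rho>" "le_env (r0'(x := VHole)) \<rho>" using le_env_upd_hole ih2(2,7) by blast+
    have en: "join_env (join_env (r0(x := VHole)) r1) (join_env (r0'(x := VHole)) r1') = join_env ((join_env r0 r0')(x := VHole)) (join_env r1 r1')"
      using inter_env[OF u1(1) ih1(2) u1(2) ih1(7)] by (simp add: join_env_upd)
    have BJ: "bslice (join_store \<mu> \<mu>') (join_res R R') (TTryF T1 x T2) (join_env (join_env (r0(x := VHole)) r1) (join_env (r0'(x := VHole)) r1')) (join_store m2 m2') (join_comp (Try N1 x N2) (Try N1' x N2')) (join_trace (TTryF U1 x U2) (TTryF U1' x U2'))"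
      unfolding en by (simp, rule bslice.tryfail[OF nbj ih2(11) ih1(11)[unfolded jx]])
    show ?thesis by (rule concl_J[OF B1 _ _ _ _ B2 _ _ _ _ BJ]) (use ih1 ih2 u1 in \<open>auto intro: ub_env\<close>)
  qed
next
  case (letF T \<rho> \<mu>s M1 \<mu>s' v x M2)
  have ev: "eval (TLetF T) \<rho> \<mu>s (Let x M1 M2) \<mu>s' (Res OExn v)" by (rule eval.letF[OF letF.hyps])
  show ?case
  proof (cases "box_applies \<mu> R (TLetF T) \<or> box_applies \<mu>' R' (TLetF T)")
    case True then show ?thesis using join_left_box[OF ev letF.prems] join_right_box[OF ev letF.prems] by blast
  next
    case False
    then have nb: "\<not> box_applies \<mu> R (TLetF T)" "\<not> box_applies \<mu>' R' (TLetF T)" by auto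
    have nbj: "\<not> box_applies (join_store \<mu> \<mu>') (join_res R R') (TLetF T)" by (rule nb_join[OF nb(1)])
    obtain u where Q: "R = Res OExn u" using letF.prems by auto
    obtain u' where Q': "R' = Res OExn u'" using letF.prems by auto
    have jr: "join_res R R' = Res OExn (join_val u u')" using Q Q' by simp
    obtain r m1 N U r' m1' N' U' where ih:
      "bslice \<mu> R T r m1 N U" "le_env r \<rho>" "le_store m1 \<mu>s" "le_comp N M1" "le_trace U T"
      "bslice \<mu>' R' T r' m1' N' U'" "le_env r' \<rho>" "le_store m1' \<mu>s" "le_comp N' M1" "le_trace U' T"
      "bslice (join_store \<mu> \<mu>') (join_res R R') T (join_env r r') (join_store m1 m1') (join_comp N N') (join_trace U U')"
      using letF.IH[OF letF.prems] by blast
    have B1: "bslice \<mu> R (TLetF T) r m1 (Let x N CHole) (TLetF U)"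
      unfolding Q(1) by (rule bslice.letfail[OF nb(1)[unfolded Q(1)] ih(1)[unfolded Q(1)]])
    have B2: "bslice \<mu>' R' (TLetF T) r' m1' (Let x N' CHole) (TLetF U')"
      unfolding Q'(1) by (rule bslice.letfail[OF nb(2)[unfolded Q'(1)] ih(6)[unfolded Q'(1)]])
    have BJ: "bslice (join_store \<mu> \<mu>') (join_res R R') (TLetF T) (join_env r r') (join_store m1 m1') (join_comp (Let x N CHole) (Let x N' CHole)) (join_trace (TLetF U) (TLetF U'))"
      unfolding jr by (simp, rule bslice.letfail[OF nbj[unfolded jr] ih(11)[unfolded jr]])
    show ?thesis by (rule concl_J[OF B1 _ _ _ _ B2 _ _ _ _ BJ]) (use ih in auto)
  qed
next
  case (tryS T1 \<rho> \<mu>s M1 \<mu>s' v x M2)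
  have ev: "eval (TTryS T1) \<rho> \<mu>s (Try M1 x M2) \<mu>s' (Res OVal v)" by (rule eval.tryS[OF tryS.hyps])
  show ?case
  proof (cases "box_applies \<mu> R (TTryS T1) \<or> box_applies \<mu>' R' (TTryS T1)")
    case True then show ?thesis using join_left_box[OF ev tryS.prems] join_right_box[OF ev tryS.prems] by blast
  next
    case False
    then have nb: "\<not> box_applies \<mu> R (TTryS T1)" "\<not> box_applies \<mu>' R' (TTryS T1)" by auto
    have nbj: "\<not> box_applies (join_store \<mu> \<mu>') (join_res R R') (TTryS T1)" by (rule nb_join[OF nb(1)])
    obtain u where Q: "R = Res OVal u" using tryS.prems by auto
    obtain u' where Q': "R' = Res OVal u'" using tryS.prems by auto
    have jr: "join_res R R' = Res OVal (join_val u u')" using Q Q' by simp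
    obtain r m1 N U r' m1' N' U' where ih:
      "bslice \<mu> R T1 r m1 N U" "le_env r \<rho>" "le_store m1 \<mu>s" "le_comp N M1" "le_trace U T1"
      "bslice \<mu>' R' T1 r' m1' N' U'" "le_env r' \<rho>" "le_store m1' \<mu>s" "le_comp N' M1" "le_trace U' T1"
      "bslice (join_store \<mu> \<mu>') (join_res R R') T1 (join_env r r') (join_store m1 m1') (join_comp N N') (join_trace U U')"
      using tryS.IH[OF tryS.prems] by blast
    have B1: "bslice \<mu> R (TTryS T1) r m1 (Try N x CHole) (TTryS U)"
      unfolding Q(1) by (rule bslice.trysucc[OF nb(1)[unfolded Q(1)] ih(1)[unfolded Q(1)]])
    have B2: "bslice \<mu>' R' (TTryS T1) r' m1' (Try N' x CHole) (TTryS U')"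
      unfolding Q'(1) by (rule bslice.trysucc[OF nb(2)[unfolded Q'(1)] ih(6)[unfolded Q'(1)]])
    have BJ: "bslice (join_store \<mu> \<mu>') (join_res R R') (TTryS T1) (join_env r r') (join_store m1 m1') (join_comp (Try N x CHole) (Try N' x CHole)) (join_trace (TTryS U) (TTryS U'))"
      unfolding jr by (simp, rule bslice.trysucc[OF nbj[unfolded jr] ih(11)[unfolded jr]])
    show ?thesis by (rule concl_J[OF B1 _ _ _ _ B2 _ _ _ _ BJ]) (use ih in auto)
  qed
next
  case (caseL \<rho> e v T x \<mu>s M1 \<mu>s' Rs y M2)
  have ev: "eval (TCaseL e x T y) \<rho> \<mu>s (Case e x M1 y M2) \<mu>s' Rs" by (rule eval.caseL[OF caseL.hyps])
  show ?case
  proof (cases "box_applies \<mu> R (TCaseL e x T y) \<or> box_applies \<mu>' R' (TCaseL e x T y)")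
    case True then show ?thesis using join_left_box[OF ev caseL.prems] join_right_box[OF ev caseL.prems] by blast
  next
    case False
    then have nb: "\<not> box_applies \<mu> R (TCaseL e x T y)" "\<not> box_applies \<mu>' R' (TCaseL e x T y)" by auto
    have nbj: "\<not> box_applies (join_store \<mu> \<mu>') (join_res R R') (TCaseL e x T y)" by (rule nb_join[OF nb(1)])
    obtain r0 m1 N U r0' m1' N' U' where ih:
      "bslice \<mu> R T r0 m1 N U" "le_env r0 (\<rho>(x := v))" "le_store m1 \<mu>s" "le_comp N M1" "le_trace U T"
      "bslice \<mu>' R' T r0' m1' N' U'" "le_env r0' (\<rho>(x := v))" "le_store m1' \<mu>s" "le_comp N' M1" "le_trace U' T"
      "bslice (join_store \<mu> \<mu>') (join_res R R') T (join_env r0 r0') (join_store m1 m1') (join_comp N N') (join_trace U U')"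
      using caseL.IH[OF caseL.prems] by blast
    have x1: "le_val (VInl (r0 x)) (VInl v)" using le_env_at[OF ih(2), of x] by simp
    have x2: "le_val (VInl (r0' x)) (VInl v)" using le_env_at[OF ih(7), of x] by simp
    obtain r a where es: "eslice (VInl (r0 x)) e r a" "le_env r \<rho>" "le_exp a e" using eslice_ex[OF caseL.hyps(1) x1] by blast
    obtain r' a' where es': "eslice (VInl (r0' x)) e r' a'" "le_env r' \<rho>" "le_exp a' e" using eslice_ex[OF caseL.hyps(1) x2] by blast
    have esj: "eslice (VInl (join_env r0 r0' x)) e (join_env r r') (join_exp a a')"
      using eslice_join[OF caseL.hyps(1) x1 x2 es(1) es'(1)] by (simp add: join_env_app)
    have B1: "bslice \<mu> R (TCaseL e x T y) (join_env (r0(x := VHole)) r) m1 (Case a x N y CHole) (TCaseL a x U y)"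
      by (rule bslice.caseL[OF nb(1) ih(1) es(1)])
    have B2: "bslice \<mu>' R' (TCaseL e x T y) (join_env (r0'(x := VHole)) r') m1' (Case a' x N' y CHole) (TCaseL a' x U' y)"
      by (rule bslice.caseL[OF nb(2) ih(6) es'(1)])
    have u1: "le_env (r0(x := VHole)) \<rho>" "le_env (r0'(x := VHole)) \<rho>" using le_env_upd_hole ih(2,7) by blast+
    have en: "join_env (join_env (r0(x := VHole)) r) (join_env (r0'(x := VHole)) r') = join_env ((join_env r0 r0')(x := VHole)) (join_env r r')"
      using inter_env[OF u1(1) es(2) u1(2) es'(2)] by (simp add: join_env_upd)
    have BJ: "bslice (join_store \<mu> \<mu>') (join_res R R') (TCaseL e x T y) (join_env (join_env (r0(x := VHole)) r) (join_env (r0'(x := VHole)) r')) (join_store m1 m1') (join_comp (Case a x N y CHole) (Case a' x N' y CHole)) (join_trace (TCaseL a x U y) (TCaseL a' x U' y))"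
      unfolding en by (simp, rule bslice.caseL[OF nbj ih(11) esj])
    show ?thesis by (rule concl_J[OF B1 _ _ _ _ B2 _ _ _ _ BJ]) (use ih es es' u1 in \<open>auto intro: ub_env\<close>)
  qed
next
  case (caseR \<rho> e v T y \<mu>s M2 \<mu>s' Rs x M1)
  have ev: "eval (TCaseR e x y T) \<rho> \<mu>s (Case e x M1 y M2) \<mu>s' Rs" by (rule eval.caseR[OF caseR.hyps])
  show ?case
  proof (cases "box_applies \<mu> R (TCaseR e x y T) \<or> box_applies \<mu>' R' (TCaseR e x y T)")
    case True then show ?thesis using join_left_box[OF ev caseR.prems] join_right_box[OF ev caseR.prems] by blast
  next
    case False
    then have nb: "\<not> box_applies \<mu> R (TCaseR e x y T)" "\<not> box_applies \<mu>' R' (TCaseR e x y T)" by auto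
    have nbj: "\<not> box_applies (join_store \<mu> \<mu>') (join_res R R') (TCaseR e x y T)" by (rule nb_join[OF nb(1)])
    obtain r0 m1 N U r0' m1' N' U' where ih:
      "bslice \<mu> R T r0 m1 N U" "le_env r0 (\<rho>(y := v))" "le_store m1 \<mu>s" "le_comp N M2" "le_trace U T"
      "bslice \<mu>' R' T r0' m1' N' U'" "le_env r0' (\<rho>(y := v))" "le_store m1' \<mu>s" "le_comp N' M2" "le_trace U' T"
      "bslice (join_store \<mu> \<mu>') (join_res R R') T (join_env r0 r0') (join_store m1 m1') (join_comp N N') (join_trace U U')"
      using caseR.IH[OF caseR.prems] by blast
    have x1: "le_val (VInr (r0 y)) (VInr v)" using le_env_at[OF ih(2), of y] by simp
    have x2: "le_val (VInr (r0' y)) (VInr v)" using le_env_at[OF ih(7), of y] by simp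
    obtain r a where es: "eslice (VInr (r0 y)) e r a" "le_env r \<rho>" "le_exp a e" using eslice_ex[OF caseR.hyps(1) x1] by blast
    obtain r' a' where es': "eslice (VInr (r0' y)) e r' a'" "le_env r' \<rho>" "le_exp a' e" using eslice_ex[OF caseR.hyps(1) x2] by blast
    have esj: "eslice (VInr (join_env r0 r0' y)) e (join_env r r') (join_exp a a')"
      using eslice_join[OF caseR.hyps(1) x1 x2 es(1) es'(1)] by (simp add: join_env_app)
    have B1: "bslice \<mu> R (TCaseR e x y T) (join_env (r0(y := VHole)) r) m1 (Case a x CHole y N) (TCaseR a x y U)"
      by (rule bslice.caseR[OF nb(1) ih(1) es(1)])
    have B2: "bslice \<mu>' R' (TCaseR e x y T) (join_env (r0'(y := VHole)) r') m1' (Case a' x CHole y N') (TCaseR a' x y U')"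
      by (rule bslice.caseR[OF nb(2) ih(6) es'(1)])
    have u1: "le_env (r0(y := VHole)) \<rho>" "le_env (r0'(y := VHole)) \<rho>" using le_env_upd_hole ih(2,7) by blast+
    have en: "join_env (join_env (r0(y := VHole)) r) (join_env (r0'(y := VHole)) r') = join_env ((join_env r0 r0')(y := VHole)) (join_env r r')"
      using inter_env[OF u1(1) es(2) u1(2) es'(2)] by (simp add: join_env_upd)
    have BJ: "bslice (join_store \<mu> \<mu>') (join_res R R') (TCaseR e x y T) (join_env (join_env (r0(y := VHole)) r) (join_env (r0'(y := VHole)) r')) (join_store m1 m1') (join_comp (Case a x CHole y N) (Case a' x CHole y N')) (join_trace (TCaseR a x y U) (TCaseR a' x y U'))"
      unfolding en by (simp, rule bslice.caseR[OF nbj ih(11) esj])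
    show ?thesis by (rule concl_J[OF B1 _ _ _ _ B2 _ _ _ _ BJ]) (use ih es es' u1 in \<open>auto intro: ub_env\<close>)
  qed
qed

lemma bwd_eq:
  assumes "bslice m Q T r m0 N U" "le_env r \<sigma>" "le_store m0 \<nu>" "le_comp N M" "le_trace U T"
  shows "bwd \<sigma> \<nu> M T (m, Q) = (r, m0, N, U)"
  unfolding bwd_def
proof (rule the_equality)
  show "(r, m0, N, U) \<in> Prefix_cfg (\<sigma>, \<nu>, M, T) \<and>
    (case (m, Q) of (\<mu>1, R1) \<Rightarrow> case (r, m0, N, U) of (\<rho>, \<mu>0, N, U) \<Rightarrow> bslice \<mu>1 R1 T \<rho> \<mu>0 N U)"
    using assms by (simp add: Prefix_cfg_def le_cfg_def)
next
  fix q assume q: "q \<in> Prefix_cfg (\<sigma>, \<nu>, M, T) \<and>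
    (case (m, Q) of (\<mu>1, R1) \<Rightarrow> case q of (\<rho>, \<mu>0, N, U) \<Rightarrow> bslice \<mu>1 R1 T \<rho> \<mu>0 N U)"
  obtain r' m0' N' U' where qq: "q = (r', m0', N', U')" by (cases q) auto
  have h: "bslice m Q T r' m0' N' U'" "le_env r' \<sigma>" "le_store m0' \<nu>" "le_comp N' M" "le_trace U' T"
    using q unfolding qq by (auto simp: Prefix_cfg_def le_cfg_def)
  show "q = (r, m0, N, U)" using bslice_det_pre[OF assms(1) h(1) assms(2-5) h(2-5)] qq by simp
qed

theorem lemma4p7:
  assumes "eval T \<sigma> \<nu> M \<nu>' S"
    and "(\<mu>, R) \<in> Prefix_sr (\<nu>', S)"
    and "(\<mu>', R') \<in> Prefix_sr (\<nu>', S)"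
  shows "bwd \<sigma> \<nu> M T (join_sr (\<mu>, R) (\<mu>', R')) =
         join_cfg (bwd \<sigma> \<nu> M T (\<mu>, R)) (bwd \<sigma> \<nu> M T (\<mu>', R'))"
proof -
  have p: "le_store \<mu> \<nu>'" "le_res R S" "le_store \<mu>' \<nu>'" "le_res R' S"
    using assms(2,3) by (auto simp: Prefix_sr_def le_sr_def)
  obtain r m0 N U r' m0' N' U' where j:
    "bslice \<mu> R T r m0 N U" "le_env r \<sigma>" "le_store m0 \<nu>" "le_comp N M" "le_trace U T"
    "bslice \<mu>' R' T r' m0' N' U'" "le_env r' \<sigma>" "le_store m0' \<nu>" "le_comp N' M" "le_trace U' T"
    "bslice (join_store \<mu> \<mu>') (join_res R R') T (join_env r r') (join_store m0 m0') (join_comp N N') (join_trace U U')"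
    using join_main[OF assms(1) p] by blast
  have b1: "bwd \<sigma> \<nu> M T (\<mu>, R) = (r, m0, N, U)" by (rule bwd_eq[OF j(1-5)])
  have b2: "bwd \<sigma> \<nu> M T (\<mu>', R') = (r', m0', N', U')" by (rule bwd_eq[OF j(6-10)])
  have b3: "bwd \<sigma> \<nu> M T (join_store \<mu> \<mu>', join_res R R') = (join_env r r', join_store m0 m0', join_comp N N', join_trace U U')"
    by (rule bwd_eq[OF j(11) ub_env[OF j(2,7)] ub_store[OF j(3,8)] ub_ec(2)[OF j(4,9)] ub_trace[OF j(5,10)]])
  show ?thesis unfolding b1 b2 join_sr_def join_cfg_def using b3 by simp
qed


end
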